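(* Let $\sharp\in\{cy,ra\}$ and assume (ER$\sharp$). Then for all $\boldsymbol\zeta,\alpha\in\mathbb R^M$ the map $\mathcal L^{[\alpha]*}_{\sharp,\boldsymbol\zeta}$ is a primitive completely positive map; in particular its spectral radius $r^\sharp_{\boldsymbol\zeta}(\alpha)$ is positive.
   Context: Finite-dimensional $\mathcal H_{\mathcal S},\mathcal H_{\mathcal E_j}$ ($j=1..M$), self-adjoint $H_{\mathcal S},H_{\mathcal E_j}$, self-adjoint $V_j$, $\tau_j>0$, $U_j=e^{-i\tau_j(H_{\mathcal S}\otimes\mathrm{Id}+\mathrm{Id}\otimes H_{\mathcal E_j}+V_j)}$; $\beta_{\rm ref}>0$; for $\boldsymbol\zeta\in\mathbb R^M$, $\rho_{\mathcal E_j}$ Gibbs state of $H_{\mathcal E_j}$ at $\beta_{\rm ref}-\zeta_j$; $\mathcal L_j(\rho)=\mathrm{Tr}_{\mathcal H_{\mathcal E_j}}(U_j(\rho\otimes\rho_{\mathcal E_j})U_j^* )$, $\mathcal L_{cy}=\mathcal L_M\circ\cdots\circ\mathcal L_1$, $\mathcal L_{ra}=\frac1M\sum\mathcal L_j$. Deformed maps $\mathcal L_j^{[\alpha]*}(X)=\mathrm{Tr}_{\mathcal H_{\mathcal E_j}}((\mathrm{Id}\otimes\rho_{\mathcal E_j}^{1-\alpha_j})U_j^*(X\otimes\rho_{\mathcal E_j}^{\alpha_j})U_j)$, $\mathcal L_{cy}^{[\alpha]*}=\mathcal L_1^{[\alpha]*}\circ\cdots\circ\mathcal L_M^{[\alpha]*}$,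 $\mathcal L_{ra}^{[\alpha]*}=\frac1M\sum\mathcal L_j^{[\alpha]*}$. A CP map with Kraus operators $V_i$ is primitive if for some $n$ the products $V_{i_1}\cdots V_{i_n}$ span all operators. (ER$\sharp$): $\mathcal L_{\sharp,\boldsymbol\zeta}$ is primitive for some $\boldsymbol\zeta$. *)

theory Defs
  imports "Jordan_Normal_Form.Spectral_Radius" "Jordan_Normal_Form.Schur_Decomposition"
begin

definition mexp :: "complex mat \<Rightarrow> complex mat" where
  "mexp A = mat (dim_row A) (dim_col A)
     (\<lambda>ij. (\<Sum>k. (A ^\<^sub>m k) $$ ij / of_nat (fact k)))"

text \<open>Kronecker (tensor) product; index (i,k) of H_S \<otimes> H_E is i * dim H_E + k.\<close>
definition kron :: "complex mat \<Rightarrow> complex mat \<Rightarrow> complex mat" where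
  "kron A B = mat (dim_row A * dim_row B) (dim_col A * dim_col B)
     (\<lambda>(i,j). A $$ (i div dim_row B, j div dim_col B) * B $$ (i mod dim_row B, j mod dim_col B))"

definition mtrace :: "complex mat \<Rightarrow> complex" where
  "mtrace A = (\<Sum>i<dim_row A. A $$ (i,i))"

definition ptrace2 :: "nat \<Rightarrow> nat \<Rightarrow> complex mat \<Rightarrow> complex mat" where
  "ptrace2 dS dE A = mat dS dS (\<lambda>(i,j). \<Sum>k<dE. A $$ (i * dE + k, j * dE + k))"

definition self_adjoint :: "nat \<Rightarrow> complex mat \<Rightarrow> bool" where
  "self_adjoint n A \<longleftrightarrow> A \<in> carrier_mat n n \<and> mat_adjoint A = A"

text \<open>Real powers of the Gibbs state rho = exp(-b H) / Tr exp(-b H):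
  rho^s = exp(-s b H) / Z^s with Z = Tr exp(-b H) > 0.  In particular gibbs_pow H b 1 = rho.\<close>
definition gibbs_pow :: "complex mat \<Rightarrow> real \<Rightarrow> real \<Rightarrow> complex mat" where
  "gibbs_pow H b s = complex_of_real (1 / (Re (mtrace (mexp ((- complex_of_real b) \<cdot>\<^sub>m H)))) powr s)
       \<cdot>\<^sub>m mexp ((- complex_of_real (s * b)) \<cdot>\<^sub>m H)"

definition gibbs :: "complex mat \<Rightarrow> real \<Rightarrow> complex mat" where
  "gibbs H b = gibbs_pow H b 1"

definition msum :: "nat \<Rightarrow> ('i \<Rightarrow> complex mat) \<Rightarrow> 'i set \<Rightarrow> complex mat" where
  "msum n f S = mat n n (\<lambda>ij. \<Sum>x\<in>S. f x $$ ij)"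

definition word_prod :: "nat \<Rightarrow> complex mat list \<Rightarrow> nat list \<Rightarrow> complex mat" where
  "word_prod n Ks w = foldr (\<lambda>i B. Ks ! i * B) w (1\<^sub>m n)"

definition words :: "nat \<Rightarrow> nat \<Rightarrow> nat list set" where
  "words k m = {w. length w = m \<and> set w \<subseteq> {..<k}}"

definition primitive_cp :: "nat \<Rightarrow> (complex mat \<Rightarrow> complex mat) \<Rightarrow> bool" where
  "primitive_cp n L \<longleftrightarrow>
     (\<exists>Ks. (\<forall>K\<in>set Ks. K \<in> carrier_mat n n) \<and>
           (\<forall>X\<in>carrier_mat n n. L X = msum n (\<lambda>i. Ks ! i * X * mat_adjoint (Ks ! i)) {..<length Ks}) \<and>
           (\<exists>m. \<forall>A\<in>carrier_mat n n. \<exists>c. A = msum n (\<lambda>w. c w \<cdot>\<^sub>m word_prod n Ks w) (words (length Ks) m)))"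

text \<open>Matrix of a linear map on n x n matrices w.r.t. the basis of matrix units E_(a,b),
  indexed by a * n + b; its spectral radius is the spectral radius of the map.\<close>
definition unit_mat :: "nat \<Rightarrow> nat \<Rightarrow> complex mat" where
  "unit_mat n q = mat n n (\<lambda>ij. if ij = (q div n, q mod n) then 1 else 0)"

definition superop_mat :: "nat \<Rightarrow> (complex mat \<Rightarrow> complex mat) \<Rightarrow> complex mat" where
  "superop_mat n L = mat (n * n) (n * n) (\<lambda>(p,q). L (unit_mat n q) $$ (p div n, p mod n))"

definition map_spectral_radius :: "nat \<Rightarrow> (complex mat \<Rightarrow> complex mat) \<Rightarrow> real" where
  "map_spectral_radius n L = spectral_radius (superop_mat n L)"

text \<open>Indices j = 0..M-1 correspond to j = 1..M of the paper.\<close>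

definition Uint :: "nat \<Rightarrow> nat \<Rightarrow> complex mat \<Rightarrow> complex mat \<Rightarrow> complex mat \<Rightarrow> real \<Rightarrow> complex mat" where
  "Uint dS dE HS HE V \<tau> =
     mexp ((- \<i> * complex_of_real \<tau>) \<cdot>\<^sub>m (kron HS (1\<^sub>m dE) + kron (1\<^sub>m dS) HE + V))"

definition Lj :: "nat \<Rightarrow> (nat \<Rightarrow> nat) \<Rightarrow> complex mat \<Rightarrow> (nat \<Rightarrow> complex mat) \<Rightarrow> (nat \<Rightarrow> complex mat)
   \<Rightarrow> (nat \<Rightarrow> real) \<Rightarrow> real \<Rightarrow> (nat \<Rightarrow> real) \<Rightarrow> nat \<Rightarrow> complex mat \<Rightarrow> complex mat" where
  "Lj dS dE HS HE V \<tau> \<beta> \<zeta> j X =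
     (let U = Uint dS (dE j) HS (HE j) (V j) (\<tau> j)
      in ptrace2 dS (dE j) (U * kron X (gibbs (HE j) (\<beta> - \<zeta> j)) * mat_adjoint U))"

definition Ljd :: "nat \<Rightarrow> (nat \<Rightarrow> nat) \<Rightarrow> complex mat \<Rightarrow> (nat \<Rightarrow> complex mat) \<Rightarrow> (nat \<Rightarrow> complex mat)
   \<Rightarrow> (nat \<Rightarrow> real) \<Rightarrow> real \<Rightarrow> (nat \<Rightarrow> real) \<Rightarrow> (nat \<Rightarrow> real) \<Rightarrow> nat \<Rightarrow> complex mat \<Rightarrow> complex mat" where
  "Ljd dS dE HS HE V \<tau> \<beta> \<zeta> \<alpha> j X =
     (let U = Uint dS (dE j) HS (HE j) (V j) (\<tau> j)
      in ptrace2 dS (dE j)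
           (kron (1\<^sub>m dS) (gibbs_pow (HE j) (\<beta> - \<zeta> j) (1 - \<alpha> j))
            * (mat_adjoint U * kron X (gibbs_pow (HE j) (\<beta> - \<zeta> j) (\<alpha> j)) * U)))"

fun comp_up :: "(nat \<Rightarrow> 'a \<Rightarrow> 'a) \<Rightarrow> nat \<Rightarrow> 'a \<Rightarrow> 'a" where
  "comp_up f 0 = id"
| "comp_up f (Suc m) = f m \<circ> comp_up f m"

fun comp_down :: "(nat \<Rightarrow> 'a \<Rightarrow> 'a) \<Rightarrow> nat \<Rightarrow> 'a \<Rightarrow> 'a" where
  "comp_down f 0 = id"
| "comp_down f (Suc m) = comp_down f m \<circ> f m"

definition avg_map :: "nat \<Rightarrow> nat \<Rightarrow> (nat \<Rightarrow> complex mat \<Rightarrow> complex mat) \<Rightarrow> complex mat \<Rightarrow> complex mat" where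
  "avg_map n M f X = (1 / of_nat M) \<cdot>\<^sub>m msum n (\<lambda>j. f j X) {..<M}"

datatype scheme = Cy | Ra

definition Lsh :: "scheme \<Rightarrow> nat \<Rightarrow> nat \<Rightarrow> (nat \<Rightarrow> nat) \<Rightarrow> complex mat \<Rightarrow> (nat \<Rightarrow> complex mat)
   \<Rightarrow> (nat \<Rightarrow> complex mat) \<Rightarrow> (nat \<Rightarrow> real) \<Rightarrow> real \<Rightarrow> (nat \<Rightarrow> real) \<Rightarrow> complex mat \<Rightarrow> complex mat" where
  "Lsh sh M dS dE HS HE V \<tau> \<beta> \<zeta> =
     (case sh of Cy \<Rightarrow> comp_up (Lj dS dE HS HE V \<tau> \<beta> \<zeta>) M
               | Ra \<Rightarrow> avg_map dS M (Lj dS dE HS HE V \<tau> \<beta> \<zeta>))"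

definition Lshd :: "scheme \<Rightarrow> nat \<Rightarrow> nat \<Rightarrow> (nat \<Rightarrow> nat) \<Rightarrow> complex mat \<Rightarrow> (nat \<Rightarrow> complex mat)
   \<Rightarrow> (nat \<Rightarrow> complex mat) \<Rightarrow> (nat \<Rightarrow> real) \<Rightarrow> real \<Rightarrow> (nat \<Rightarrow> real) \<Rightarrow> (nat \<Rightarrow> real)
   \<Rightarrow> complex mat \<Rightarrow> complex mat" where
  "Lshd sh M dS dE HS HE V \<tau> \<beta> \<zeta> \<alpha> =
     (case sh of Cy \<Rightarrow> comp_down (Ljd dS dE HS HE V \<tau> \<beta> \<zeta> \<alpha>) M
               | Ra \<Rightarrow> avg_map dS M (Ljd dS dE HS HE V \<tau> \<beta> \<zeta> \<alpha>))"

end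

theory Submission
  imports Defs
begin


lemma adj_eq: "mat_adjoint (A::complex mat) = mat (dim_col A) (dim_row A) (\<lambda>(i,j). cnj (A $$ (j,i)))"
  unfolding mat_adjoint_def mat_of_rows_def
  by (rule eq_matI, auto simp: cols_def conjugate_vec_def)

lemma adj_index[simp]: "i < dim_col A \<Longrightarrow> j < dim_row A \<Longrightarrow> mat_adjoint (A::complex mat) $$ (i,j) = cnj (A $$ (j,i))"
  "dim_row (mat_adjoint A) = dim_col A" "dim_col (mat_adjoint A) = dim_row A"
  by (auto simp: adj_eq)

lemma adj_carrier[simp]: "A \<in> carrier_mat n m \<Longrightarrow> mat_adjoint (A::complex mat) \<in> carrier_mat m n"
  unfolding carrier_mat_def by simp

lemma adj_adj[simp]: "mat_adjoint (mat_adjoint (A::complex mat)) = A"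
  by (rule eq_matI, auto)

lemma mult_index: assumes "A \<in> carrier_mat n m" "B \<in> carrier_mat m k" "i < n" "j < k"
  shows "(A * B) $$ (i,j) = (\<Sum>l<m. A $$ (i,l) * B $$ (l,j))"
proof -
  have d: "dim_row A = n" "dim_col A = m" "dim_row B = m" "dim_col B = k" using assms(1,2) by auto
  have "(A * B) $$ (i,j) = row A i \<bullet> col B j" using assms(3,4) d by (simp only: index_mult_mat)
  also have "\<dots> = (\<Sum>l\<in>{0..<m}. row A i $ l * col B j $ l)" unfolding scalar_prod_def using d by simp
  also have "\<dots> = (\<Sum>l<m. A $$ (i,l) * B $$ (l,j))" using assms(3,4) d
    by (intro sum.cong) auto
  finally show ?thesis .
qed

lemma mult_index_sq: "A \<in> carrier_mat n n \<Longrightarrow> B \<in> carrier_mat n n \<Longrightarrow> i < n \<Longrightarrow> j < n \<Longrightarrow>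
   (A * B) $$ (i,j) = (\<Sum>l<n. A $$ (i,l) * B $$ (l,j))"
  by (rule mult_index)

lemma adj_mult: assumes A: "A \<in> carrier_mat n m" and B: "B \<in> carrier_mat m k"
  shows "mat_adjoint ((A::complex mat) * B) = mat_adjoint B * mat_adjoint A"
proof (rule eq_matI)
  fix i j assume "i < dim_row (mat_adjoint B * mat_adjoint A)" "j < dim_col (mat_adjoint B * mat_adjoint A)"
  hence ij: "i < k" "j < n" using A B by simp_all
  have d: "dim_row A = n" "dim_col A = m" "dim_row B = m" "dim_col B = k" using A B by auto
  have "mat_adjoint (A * B) $$ (i,j) = cnj ((A * B) $$ (j,i))" using ij d by simp
  also have "\<dots> = cnj (\<Sum>l<m. A $$ (j,l) * B $$ (l,i))" using ij by (simp add: mult_index[OF A B])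
  also have "\<dots> = (\<Sum>l<m. mat_adjoint B $$ (i,l) * mat_adjoint A $$ (l,j))"
    unfolding cnj_sum using ij d by (intro sum.cong) (simp_all add: mult.commute)
  also have "\<dots> = (mat_adjoint B * mat_adjoint A) $$ (i,j)"
    using ij by (simp add: mult_index[OF adj_carrier[OF B] adj_carrier[OF A]])
  finally show "mat_adjoint (A * B) $$ (i,j) = (mat_adjoint B * mat_adjoint A) $$ (i,j)" .
qed (insert A B, simp_all)

lemma adj_smult: "mat_adjoint (c \<cdot>\<^sub>m (A::complex mat)) = cnj c \<cdot>\<^sub>m mat_adjoint A"
  by (rule eq_matI, auto)

lemma adj_one[simp]: "mat_adjoint (1\<^sub>m n :: complex mat) = 1\<^sub>m n"
  by (rule eq_matI, auto)

lemma adj_zero[simp]: "mat_adjoint (0\<^sub>m n m :: complex mat) = 0\<^sub>m m n"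
  by (rule eq_matI, auto)

lemma msum_carrier[simp]: "msum n f S \<in> carrier_mat n n"
  "dim_row (msum n f S) = n" "dim_col (msum n f S) = n"
  by (auto simp: msum_def)

lemma msum_index[simp]: "i < n \<Longrightarrow> j < n \<Longrightarrow> msum n f S $$ (i,j) = (\<Sum>x\<in>S. f x $$ (i,j))"
  by (simp add: msum_def)

lemma msum_cong: assumes "\<And>x i j. x \<in> S \<Longrightarrow> i < n \<Longrightarrow> j < n \<Longrightarrow> f x $$ (i,j) = g x $$ (i,j)"
  shows "msum n f S = msum n g S"
proof (rule eq_matI)
  fix i j assume "i < dim_row (msum n g S)" "j < dim_col (msum n g S)"
  thus "msum n f S $$ (i, j) = msum n g S $$ (i, j)"
    using assms by (simp add: msum_def)
qed (simp_all)

lemma msum_mult_left: assumes A: "A \<in> carrier_mat n n" and f: "\<And>x. x \<in> S \<Longrightarrow> f x \<in> carrier_mat n n"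
  shows "A * msum n f S = msum n (\<lambda>x. A * f x) S"
proof (rule eq_matI)
  fix i j assume ij: "i < dim_row (msum n (\<lambda>x. A * f x) S)" "j < dim_col (msum n (\<lambda>x. A * f x) S)"
  hence ij: "i < n" "j < n" by auto
  have "(A * msum n f S) $$ (i,j) = (\<Sum>l<n. A $$ (i,l) * (msum n f S) $$ (l,j))"
    by (rule mult_index_sq[OF A msum_carrier(1) ij])
  also have "\<dots> = (\<Sum>l<n. A $$ (i,l) * (\<Sum>x\<in>S. f x $$ (l,j)))"
    using ij by simp
  also have "\<dots> = (\<Sum>x\<in>S. \<Sum>l<n. A $$ (i,l) * f x $$ (l,j))"
    by (simp add: sum_distrib_left sum.swap[of _ S])
  also have "\<dots> = (\<Sum>x\<in>S. (A * f x) $$ (i,j))"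
    by (rule sum.cong[OF refl], rule mult_index_sq[OF A f ij, symmetric])
  also have "\<dots> = msum n (\<lambda>x. A * f x) S $$ (i,j)"
    using ij by simp
  finally show "(A * msum n f S) $$ (i,j) = msum n (\<lambda>x. A * f x) S $$ (i,j)" .
qed (insert A, auto)

lemma msum_mult_right: assumes A: "A \<in> carrier_mat n n" and f: "\<And>x. x \<in> S \<Longrightarrow> f x \<in> carrier_mat n n"
  shows "msum n f S * A = msum n (\<lambda>x. f x * A) S"
proof (rule eq_matI)
  fix i j assume ij: "i < dim_row (msum n (\<lambda>x. f x * A) S)" "j < dim_col (msum n (\<lambda>x. f x * A) S)"
  hence ij: "i < n" "j < n" by auto
  have "(msum n f S * A) $$ (i,j) = (\<Sum>l<n. (msum n f S) $$ (i,l) * A $$ (l,j))"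
    by (rule mult_index_sq[OF msum_carrier(1) A ij])
  also have "\<dots> = (\<Sum>l<n. (\<Sum>x\<in>S. f x $$ (i,l)) * A $$ (l,j))"
    using ij by simp
  also have "\<dots> = (\<Sum>x\<in>S. \<Sum>l<n. f x $$ (i,l) * A $$ (l,j))"
    by (simp add: sum_distrib_right sum.swap[of _ S])
  also have "\<dots> = (\<Sum>x\<in>S. (f x * A) $$ (i,j))"
    by (rule sum.cong[OF refl], rule mult_index_sq[OF f A ij, symmetric])
  also have "\<dots> = msum n (\<lambda>x. f x * A) S $$ (i,j)"
    using ij by simp
  finally show "(msum n f S * A) $$ (i,j) = msum n (\<lambda>x. f x * A) S $$ (i,j)" .
qed (insert A, auto)

lemma msum_adj: assumes "\<And>x. x \<in> S \<Longrightarrow> f x \<in> carrier_mat n n"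
  shows "mat_adjoint (msum n f S) = msum n (\<lambda>x. mat_adjoint (f x)) S"
proof (rule eq_matI)
  fix i j assume "i < dim_row (msum n (\<lambda>x. mat_adjoint (f x)) S)" "j < dim_col (msum n (\<lambda>x. mat_adjoint (f x)) S)"
  hence ij: "i < n" "j < n" by simp_all
  have "mat_adjoint (msum n f S) $$ (i,j) = cnj (\<Sum>x\<in>S. f x $$ (j,i))" using ij by simp
  also have "\<dots> = (\<Sum>x\<in>S. mat_adjoint (f x) $$ (i,j))" unfolding cnj_sum
  proof (rule sum.cong[OF refl])
    fix x assume "x \<in> S"
    from assms[OF this] have "dim_row (f x) = n" "dim_col (f x) = n" by auto
    thus "cnj (f x $$ (j, i)) = mat_adjoint (f x) $$ (i, j)" using ij by simp
  qed
  finally show "mat_adjoint (msum n f S) $$ (i,j) = msum n (\<lambda>x. mat_adjoint (f x)) S $$ (i,j)" using ij by simp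
qed simp_all

lemma msum_msum: "finite S \<Longrightarrow> finite T \<Longrightarrow> msum n (\<lambda>x. msum n (g x) T) S = msum n (\<lambda>p. g (fst p) (snd p)) (S \<times> T)"
  by (rule eq_matI, simp_all add: sum.cartesian_product case_prod_beta)

lemma msum_reindex: "inj_on h A \<Longrightarrow> msum n f (h ` A) = msum n (\<lambda>x. f (h x)) A"
  by (rule eq_matI, simp_all add: sum.reindex)

definition lc :: "nat \<Rightarrow> ('i \<Rightarrow> complex) \<Rightarrow> ('i \<Rightarrow> complex mat) \<Rightarrow> 'i set \<Rightarrow> complex mat" where
  "lc n c f S = mat n n (\<lambda>ij. \<Sum>x\<in>S. c x * f x $$ ij)"

lemma lc_carrier[simp]: "lc n c f S \<in> carrier_mat n n" "dim_row (lc n c f S) = n" "dim_col (lc n c f S) = n"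
  by (auto simp: lc_def)

lemma lc_index[simp]: "i < n \<Longrightarrow> j < n \<Longrightarrow> lc n c f S $$ (i,j) = (\<Sum>x\<in>S. c x * f x $$ (i,j))"
  by (simp add: lc_def)

definition lspan :: "nat \<Rightarrow> ('i \<Rightarrow> complex mat) \<Rightarrow> 'i set \<Rightarrow> complex mat set" where
  "lspan n f S = {A. \<exists>c. A = lc n c f S}"

lemma lspan_carrier: "A \<in> lspan n f S \<Longrightarrow> A \<in> carrier_mat n n"
  by (auto simp: lspan_def)

lemma lspan_trans: assumes fin: "finite S" "finite T"
  and sub: "\<And>x. x \<in> S \<Longrightarrow> f x \<in> lspan n g T"
  and A: "A \<in> lspan n f S"
shows "A \<in> lspan n g T"
proof -
  from A obtain c where Ac: "A = lc n c f S" by (auto simp: lspan_def)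
  from sub have "\<forall>x\<in>S. \<exists>d. f x = lc n d g T" by (auto simp: lspan_def)
  then obtain D where D: "\<And>x. x \<in> S \<Longrightarrow> f x = lc n (D x) g T" by metis
  define e where "e y = (\<Sum>x\<in>S. c x * D x y)" for y
  have "A = lc n e g T"
  proof (rule eq_matI)
    fix i j assume "i < dim_row (lc n e g T)" "j < dim_col (lc n e g T)"
    hence ij: "i < n" "j < n" by auto
    have "A $$ (i,j) = (\<Sum>x\<in>S. c x * f x $$ (i,j))" using ij by (simp add: Ac)
    also have "\<dots> = (\<Sum>x\<in>S. c x * (\<Sum>y\<in>T. D x y * g y $$ (i,j)))"
      by (rule sum.cong, simp_all add: D ij)
    also have "\<dots> = (\<Sum>y\<in>T. e y * g y $$ (i,j))"
      by (simp add: e_def sum_distrib_left sum_distrib_right sum.swap[of _ S] mult.assoc)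
    finally show "A $$ (i,j) = lc n e g T $$ (i,j)" using ij by simp
  qed (simp_all add: Ac)
  thus ?thesis by (auto simp: lspan_def)
qed

lemma lspan_base: assumes "finite S" "x \<in> S" "f x \<in> carrier_mat n n"
  shows "f x \<in> lspan n f S"
proof -
  have "f x = lc n (\<lambda>y. if y = x then 1 else 0) f S"
  proof (rule eq_matI)
    fix i j assume "i < dim_row (lc n (\<lambda>y. if y = x then 1 else 0) f S)" "j < dim_col (lc n (\<lambda>y. if y = x then 1 else 0) f S)"
    hence ij: "i < n" "j < n" by auto
    show "f x $$ (i,j) = lc n (\<lambda>y. if y = x then 1 else 0) f S $$ (i,j)"
    proof -
      have "(\<Sum>y\<in>S. (if y = x then 1 else 0) * f y $$ (i,j)) = (\<Sum>y\<in>S. if y = x then f y $$ (i,j) else 0)"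
        by (rule sum.cong) auto
      also have "\<dots> = f x $$ (i,j)" using assms(1,2) by (simp add: sum.delta)
      finally show ?thesis using ij by simp
    qed
  qed (insert assms(3), auto)
  thus ?thesis by (auto simp: lspan_def)
qed

lemma lspan_smult: "A \<in> lspan n f S \<Longrightarrow> a \<cdot>\<^sub>m A \<in> lspan n f S"
proof -
  assume "A \<in> lspan n f S"
  then obtain c where Ac: "A = lc n c f S" by (auto simp: lspan_def)
  have "a \<cdot>\<^sub>m A = lc n (\<lambda>x. a * c x) f S"
    by (rule eq_matI, simp_all add: Ac sum_distrib_left mult.assoc)
  thus ?thesis by (auto simp: lspan_def)
qed

lemma lspan_zero: assumes "\<And>x. x \<in> S \<Longrightarrow> f x = 0\<^sub>m n n" "A \<in> lspan n f S"
  shows "A = 0\<^sub>m n n"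
proof -
  from assms obtain c where Ac: "A = lc n c f S" by (auto simp: lspan_def)
  show ?thesis by (rule eq_matI, simp_all add: Ac assms)
qed

lemma lspan_reindex: assumes "inj_on h A" shows "lspan n f (h ` A) = lspan n (\<lambda>x. f (h x)) A"
proof
  show "lspan n f (h ` A) \<subseteq> lspan n (\<lambda>x. f (h x)) A"
  proof
    fix B assume "B \<in> lspan n f (h ` A)"
    then obtain c where Bc: "B = lc n c f (h ` A)" by (auto simp: lspan_def)
    hence "B = lc n (\<lambda>x. c (h x)) (\<lambda>x. f (h x)) A"
      by (simp add: lc_def sum.reindex[OF assms])
    thus "B \<in> lspan n (\<lambda>x. f (h x)) A" by (auto simp: lspan_def)
  qed
next
  show "lspan n (\<lambda>x. f (h x)) A \<subseteq> lspan n f (h ` A)"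
  proof
    fix B assume "B \<in> lspan n (\<lambda>x. f (h x)) A"
    then obtain c where Bc: "B = lc n c (\<lambda>x. f (h x)) A" by (auto simp: lspan_def)
    define c' where "c' = (\<lambda>y. c (the_inv_into A h y))"
    have "lc n c' f (h ` A) = lc n (\<lambda>x. c' (h x)) (\<lambda>x. f (h x)) A"
      by (simp add: lc_def sum.reindex[OF assms])
    also have "\<dots> = B" unfolding Bc c'_def lc_def
      by (rule cong_mat[OF refl refl], rule sum.cong, simp_all add: the_inv_into_f_f[OF assms])
    finally show "B \<in> lspan n f (h ` A)" by (auto simp: lspan_def)
  qed
qed

lemma lspan_adj: assumes f: "\<And>x. x \<in> S \<Longrightarrow> f x \<in> carrier_mat n n" and A: "A \<in> lspan n f S"
  shows "mat_adjoint A \<in> lspan n (\<lambda>x. mat_adjoint (f x)) S"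
proof -
  from A obtain c where Ac: "A = lc n c f S" by (auto simp: lspan_def)
  have "mat_adjoint A = lc n (\<lambda>x. cnj (c x)) (\<lambda>x. mat_adjoint (f x)) S"
  proof (rule eq_matI)
    fix i j assume "i < dim_row (lc n (\<lambda>x. cnj (c x)) (\<lambda>x. mat_adjoint (f x)) S)"
      "j < dim_col (lc n (\<lambda>x. cnj (c x)) (\<lambda>x. mat_adjoint (f x)) S)"
    hence ij: "i < n" "j < n" by simp_all
    have "mat_adjoint A $$ (i,j) = cnj (\<Sum>x\<in>S. c x * f x $$ (j,i))" using ij by (simp add: Ac)
    also have "\<dots> = (\<Sum>x\<in>S. cnj (c x) * mat_adjoint (f x) $$ (i,j))" unfolding cnj_sum
    proof (rule sum.cong[OF refl])
      fix x assume "x \<in> S"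
      from f[OF this] have "dim_row (f x) = n" "dim_col (f x) = n" by auto
      thus "cnj (c x * f x $$ (j, i)) = cnj (c x) * mat_adjoint (f x) $$ (i, j)" using ij by simp
    qed
    finally show "mat_adjoint A $$ (i,j) = lc n (\<lambda>x. cnj (c x)) (\<lambda>x. mat_adjoint (f x)) S $$ (i,j)"
      using ij by simp
  qed (simp_all add: Ac)
  thus ?thesis by (auto simp: lspan_def)
qed

lemma lspan_mult: assumes fin: "finite S" "finite T"
  and cf: "\<And>x. x \<in> S \<Longrightarrow> f x \<in> carrier_mat n n"
  and cg: "\<And>y. y \<in> T \<Longrightarrow> g y \<in> carrier_mat n n"
  and A: "A \<in> lspan n f S" and B: "B \<in> lspan n g T"
shows "A * B \<in> lspan n (\<lambda>p. f (fst p) * g (snd p)) (S \<times> T)"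
proof -
  from A obtain c where Ac: "A = lc n c f S" by (auto simp: lspan_def)
  from B obtain d where Bd: "B = lc n d g T" by (auto simp: lspan_def)
  have "A * B = lc n (\<lambda>p. c (fst p) * d (snd p)) (\<lambda>p. f (fst p) * g (snd p)) (S \<times> T)"
  proof (rule eq_matI)
    fix i j assume "i < dim_row (lc n (\<lambda>p. c (fst p) * d (snd p)) (\<lambda>p. f (fst p) * g (snd p)) (S \<times> T))"
      "j < dim_col (lc n (\<lambda>p. c (fst p) * d (snd p)) (\<lambda>p. f (fst p) * g (snd p)) (S \<times> T))"
    hence ij: "i < n" "j < n" by auto
    have "(A * B) $$ (i,j) = (\<Sum>l<n. A $$ (i,l) * B $$ (l,j))"
      by (rule mult_index_sq, simp_all add: Ac Bd ij)
    also have "\<dots> = (\<Sum>l<n. (\<Sum>x\<in>S. c x * f x $$ (i,l)) * (\<Sum>y\<in>T. d y * g y $$ (l,j)))"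
      using ij by (simp add: Ac Bd)
    also have "\<dots> = (\<Sum>l<n. \<Sum>x\<in>S. \<Sum>y\<in>T. c x * d y * (f x $$ (i,l) * g y $$ (l,j)))"
      by (simp add: sum_product mult_ac)
    also have "\<dots> = (\<Sum>x\<in>S. \<Sum>l<n. \<Sum>y\<in>T. c x * d y * (f x $$ (i,l) * g y $$ (l,j)))"
      by (rule sum.swap)
    also have "\<dots> = (\<Sum>x\<in>S. \<Sum>y\<in>T. \<Sum>l<n. c x * d y * (f x $$ (i,l) * g y $$ (l,j)))"
      by (rule sum.cong[OF refl], rule sum.swap)
    also have "\<dots> = (\<Sum>x\<in>S. \<Sum>y\<in>T. c x * d y * (\<Sum>l<n. f x $$ (i,l) * g y $$ (l,j)))"
      by (simp add: sum_distrib_left)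
    also have "\<dots> = (\<Sum>x\<in>S. \<Sum>y\<in>T. c x * d y * (f x * g y) $$ (i,j))"
      by (rule sum.cong[OF refl], rule sum.cong[OF refl], simp add: mult_index_sq[OF cf cg ij])
    also have "\<dots> = (\<Sum>p\<in>S \<times> T. c (fst p) * d (snd p) * (f (fst p) * g (snd p)) $$ (i,j))"
      by (simp add: sum.cartesian_product case_prod_beta)
    finally show "(A * B) $$ (i,j) = lc n (\<lambda>p. c (fst p) * d (snd p)) (\<lambda>p. f (fst p) * g (snd p)) (S \<times> T) $$ (i,j)"
      using ij by simp
  qed (simp_all add: Ac Bd)
  thus ?thesis unfolding lspan_def by blast
qed



fun gprod :: "nat \<Rightarrow> (nat \<Rightarrow> 'i \<Rightarrow> complex mat) \<Rightarrow> 'i list \<Rightarrow> complex mat" where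
  "gprod n F [] = 1\<^sub>m n"
| "gprod n F (x # xs) = F 0 x * gprod n (\<lambda>j. F (Suc j)) xs"

definition wsetF :: "(nat \<Rightarrow> 'i set) \<Rightarrow> nat \<Rightarrow> 'i list set" where
  "wsetF I m = {ws. length ws = m \<and> (\<forall>k<m. ws ! k \<in> I k)}"

lemma wsetF_0[simp]: "wsetF I 0 = {[]}"
  by (auto simp: wsetF_def)

lemma wsetF_Suc: "wsetF I (Suc m) = (\<lambda>p. fst p # snd p) ` (I 0 \<times> wsetF (\<lambda>j. I (Suc j)) m)"
proof (rule equalityI; rule subsetI)
  fix ws assume "ws \<in> wsetF I (Suc m)"
  hence len: "length ws = Suc m" and mem: "\<And>k. k < Suc m \<Longrightarrow> ws ! k \<in> I k" by (auto simp: wsetF_def)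
  then obtain x xs where ws: "ws = x # xs" by (cases ws, auto)
  have "x \<in> I 0" using mem[of 0] ws by simp
  moreover have "xs \<in> wsetF (\<lambda>j. I (Suc j)) m" unfolding wsetF_def
  proof (intro CollectI conjI allI impI)
    show "length xs = m" using len ws by simp
    fix k assume "k < m" thus "xs ! k \<in> I (Suc k)" using mem[of "Suc k"] ws by simp
  qed
  ultimately show "ws \<in> (\<lambda>p. fst p # snd p) ` (I 0 \<times> wsetF (\<lambda>j. I (Suc j)) m)"
    using ws by force
next
  fix ws assume "ws \<in> (\<lambda>p. fst p # snd p) ` (I 0 \<times> wsetF (\<lambda>j. I (Suc j)) m)"
  then obtain x xs where ws: "ws = x # xs" and x: "x \<in> I 0" and xs: "xs \<in> wsetF (\<lambda>j. I (Suc j)) m"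
    by auto
  show "ws \<in> wsetF I (Suc m)" unfolding wsetF_def
  proof (intro CollectI conjI allI impI)
    show "length ws = Suc m" using xs ws by (simp add: wsetF_def)
    fix k assume "k < Suc m"
    thus "ws ! k \<in> I k" using x xs ws by (cases k, auto simp: wsetF_def)
  qed
qed

lemma inj_Cons_pair: "inj_on (\<lambda>p. fst p # snd p) A"
  by (auto simp: inj_on_def prod_eq_iff)

lemma finite_wsetF: "(\<And>j. j < m \<Longrightarrow> finite (I j)) \<Longrightarrow> finite (wsetF I m)"
proof (induct m arbitrary: I)
  case 0 thus ?case by simp
next
  case (Suc m)
  have "finite (wsetF (\<lambda>j. I (Suc j)) m)" by (rule Suc(1), rule Suc(2), simp)
  moreover have "finite (I 0)" by (rule Suc(2), simp)
  ultimately show ?case unfolding wsetF_Suc by simp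
qed

lemma wsetF_Cons: "x # xs \<in> wsetF I (Suc m) \<longleftrightarrow> x \<in> I 0 \<and> xs \<in> wsetF (\<lambda>j. I (Suc j)) m"
  unfolding wsetF_Suc by force

lemma wsetF_length: "ws \<in> wsetF I m \<Longrightarrow> length ws = m"
  by (simp add: wsetF_def)

lemma gprod_carrier: "(\<And>j x. j < m \<Longrightarrow> x \<in> I j \<Longrightarrow> F j x \<in> carrier_mat n n) \<Longrightarrow> ws \<in> wsetF I m \<Longrightarrow>
  gprod n F ws \<in> carrier_mat n n"
proof (induct ws arbitrary: m F I)
  case Nil thus ?case by simp
next
  case (Cons x xs)
  from Cons(3) obtain m' where m: "m = Suc m'" by (cases m, auto simp: wsetF_def)
  from Cons(3)[unfolded m wsetF_Cons] have x: "x \<in> I 0" and xs: "xs \<in> wsetF (\<lambda>j. I (Suc j)) m'" by auto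
  have "gprod n (\<lambda>j. F (Suc j)) xs \<in> carrier_mat n n"
    by (rule Cons(1)[OF _ xs], rule Cons(2), auto simp: m)
  moreover have "F 0 x \<in> carrier_mat n n" using Cons(2)[of 0 x] x m by simp
  ultimately show ?case by simp
qed

lemma gprod_span:
  assumes "\<And>j x. j < m \<Longrightarrow> x \<in> I j \<Longrightarrow> F j x \<in> lspan n (G j) (J j)"
    and "\<And>j. j < m \<Longrightarrow> finite (J j)"
    and "\<And>j y. j < m \<Longrightarrow> y \<in> J j \<Longrightarrow> G j y \<in> carrier_mat n n"
    and "ws \<in> wsetF I m"
  shows "gprod n F ws \<in> lspan n (gprod n G) (wsetF J m)"
  using assms
proof (induct m arbitrary: F G I J ws)
  case 0
  hence ws: "ws = []" by simp
  show ?case unfolding ws using lspan_base[of "{[]}" "[]" "gprod n G" n] by simp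
next
  case (Suc m)
  from Suc(5) obtain x xs where ws: "ws = x # xs" by (cases ws, auto simp: wsetF_def)
  from Suc(5)[unfolded ws wsetF_Cons] have x: "x \<in> I 0" and xs: "xs \<in> wsetF (\<lambda>j. I (Suc j)) m" by auto
  have IH: "gprod n (\<lambda>j. F (Suc j)) xs \<in> lspan n (gprod n (\<lambda>j. G (Suc j))) (wsetF (\<lambda>j. J (Suc j)) m)"
    by (rule Suc(1)[OF _ _ _ xs], rule Suc(2), simp_all add: Suc(3,4))
  have F0: "F 0 x \<in> lspan n (G 0) (J 0)" by (rule Suc(2), simp_all add: x)
  have finW: "finite (wsetF (\<lambda>j. J (Suc j)) m)" by (rule finite_wsetF, simp add: Suc(3))
  have "F 0 x * gprod n (\<lambda>j. F (Suc j)) xs \<in>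
    lspan n (\<lambda>p. G 0 (fst p) * gprod n (\<lambda>j. G (Suc j)) (snd p)) (J 0 \<times> wsetF (\<lambda>j. J (Suc j)) m)"
    by (rule lspan_mult[OF _ finW _ _ F0 IH], simp add: Suc(3), simp add: Suc(4),
        rule gprod_carrier[of m "\<lambda>j. J (Suc j)"], simp_all add: Suc(4))
  also have "\<dots> = lspan n (gprod n G) (wsetF J (Suc m))"
    unfolding wsetF_Suc lspan_reindex[OF inj_Cons_pair] by simp
  finally show ?case unfolding ws by simp
qed

lemma gprod_cong: "(\<And>j. j < length ws \<Longrightarrow> F j (ws ! j) = G j (ws ! j)) \<Longrightarrow> gprod n F ws = gprod n G ws"
proof (induct ws arbitrary: F G)
  case Nil thus ?case by simp
next
  case (Cons x xs)
  have "gprod n (\<lambda>j. F (Suc j)) xs = gprod n (\<lambda>j. G (Suc j)) xs"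
    by (rule Cons(1), insert Cons(2), force)
  moreover have "F 0 x = G 0 x" using Cons(2)[of 0] by simp
  ultimately show ?case by simp
qed

lemma gprod_snoc: "(\<And>j. j < length ws \<Longrightarrow> F j (ws ! j) \<in> carrier_mat n n) \<Longrightarrow> F (length ws) x \<in> carrier_mat n n \<Longrightarrow>
  gprod n F (ws @ [x]) = gprod n F ws * F (length ws) x"
proof (induct ws arbitrary: F)
  case Nil thus ?case by simp
next
  case (Cons y ys)
  have IH: "gprod n (\<lambda>j. F (Suc j)) (ys @ [x]) = gprod n (\<lambda>j. F (Suc j)) ys * F (Suc (length ys)) x"
    by (rule Cons(1), insert Cons(2,3), force, simp)
  have cy: "F 0 y \<in> carrier_mat n n" using Cons(2)[of 0] by simp
  have cys: "gprod n (\<lambda>j. F (Suc j)) ys \<in> carrier_mat n n"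
    by (rule gprod_carrier[of "length ys" "\<lambda>j. {ys ! j}"], insert Cons(2), force, simp add: wsetF_def)
  have cx: "F (Suc (length ys)) x \<in> carrier_mat n n" using Cons(3) by simp
  show ?case by (simp add: IH assoc_mult_mat[OF cy cys cx])
qed

lemma gprod_carrier': "(\<And>j. j < length ws \<Longrightarrow> F j (ws ! j) \<in> carrier_mat n n) \<Longrightarrow> gprod n F ws \<in> carrier_mat n n"
  by (rule gprod_carrier[of "length ws" "\<lambda>j. {ws ! j}"], auto simp: wsetF_def)

lemma gprod_adj: "(\<And>j. j < length ws \<Longrightarrow> F j (ws ! j) \<in> carrier_mat n n) \<Longrightarrow>
  mat_adjoint (gprod n F ws) = gprod n (\<lambda>j x. mat_adjoint (F (length ws - 1 - j) x)) (rev ws)"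
proof (induct ws arbitrary: F)
  case Nil thus ?case by simp
next
  case (Cons x xs)
  let ?G = "\<lambda>j y. mat_adjoint (F (length (x # xs) - 1 - j) y)"
  have c0: "F 0 x \<in> carrier_mat n n" using Cons(2)[of 0] by simp
  have cxs: "\<And>j. j < length xs \<Longrightarrow> F (Suc j) (xs ! j) \<in> carrier_mat n n" using Cons(2) by force
  have IH: "mat_adjoint (gprod n (\<lambda>j. F (Suc j)) xs) = gprod n (\<lambda>j y. mat_adjoint (F (Suc (length xs - 1 - j)) y)) (rev xs)"
    by (rule Cons(1), rule cxs)
  have cg: "gprod n (\<lambda>j. F (Suc j)) xs \<in> carrier_mat n n" by (rule gprod_carrier', rule cxs)
  have eq: "gprod n (\<lambda>j y. mat_adjoint (F (Suc (length xs - 1 - j)) y)) (rev xs) = gprod n ?G (rev xs)"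
    by (rule gprod_cong, simp add: Suc_diff_Suc)
  have "gprod n ?G (rev xs @ [x]) = gprod n ?G (rev xs) * ?G (length (rev xs)) x"
  proof (rule gprod_snoc)
    fix j assume j: "j < length (rev xs)"
    have "?G j (rev xs ! j) = mat_adjoint (F (length xs - j) (xs ! (length xs - Suc j)))"
      using j by (simp add: rev_nth)
    moreover have "F (length xs - j) (xs ! (length xs - Suc j)) \<in> carrier_mat n n"
      using cxs[of "length xs - Suc j"] j by (simp add: Suc_diff_Suc)
    ultimately show "?G j (rev xs ! j) \<in> carrier_mat n n" by simp
  qed (simp add: c0)
  thus ?case using IH eq by (simp add: adj_mult[OF c0 cg])
qed

section \<open>Kraus families\<close>

definition kraus :: "nat \<Rightarrow> (complex mat \<Rightarrow> complex mat) \<Rightarrow> ('i \<Rightarrow> complex mat) \<Rightarrow> 'i set \<Rightarrow> bool" where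
  "kraus n L f S \<longleftrightarrow> finite S \<and> (\<forall>x\<in>S. f x \<in> carrier_mat n n) \<and>
     (\<forall>X\<in>carrier_mat n n. L X = msum n (\<lambda>x. f x * X * mat_adjoint (f x)) S)"

definition spanning :: "nat \<Rightarrow> ('i \<Rightarrow> complex mat) \<Rightarrow> 'i set \<Rightarrow> nat \<Rightarrow> bool" where
  "spanning n f S m \<longleftrightarrow> carrier_mat n n \<subseteq> lspan n (gprod n (\<lambda>_. f)) (wsetF (\<lambda>_. S) m)"

lemma kraus_carrier: "kraus n L f S \<Longrightarrow> X \<in> carrier_mat n n \<Longrightarrow> L X \<in> carrier_mat n n"
  by (simp add: kraus_def)

lemma comp_down_Suc': "comp_down g (Suc m) = g 0 \<circ> comp_down (\<lambda>j. g (Suc j)) m"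
  by (induct m arbitrary: g, simp_all add: comp_assoc)

lemma kraus_comp_down:
  assumes "\<And>j. j < m \<Longrightarrow> kraus n (g j) (F j) (I j)"
  shows "kraus n (comp_down g m) (gprod n F) (wsetF I m)"
  using assms
proof (induct m arbitrary: g F I)
  case 0
  show ?case unfolding kraus_def
    by (simp, intro ballI, rule eq_matI, auto)
next
  case (Suc m)
  have IH: "kraus n (comp_down (\<lambda>j. g (Suc j)) m) (gprod n (\<lambda>j. F (Suc j))) (wsetF (\<lambda>j. I (Suc j)) m)"
    by (rule Suc(1), rule Suc(2), simp)
  have K0: "kraus n (g 0) (F 0) (I 0)" by (rule Suc(2), simp)
  let ?W = "wsetF (\<lambda>j. I (Suc j)) m"
  let ?P = "gprod n (\<lambda>j. F (Suc j))"
  have finI: "finite (I 0)" and cF: "\<And>x. x \<in> I 0 \<Longrightarrow> F 0 x \<in> carrier_mat n n" using K0 by (auto simp: kraus_def)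
  have finW: "finite ?W" and cP: "\<And>w. w \<in> ?W \<Longrightarrow> ?P w \<in> carrier_mat n n" using IH by (auto simp: kraus_def)
  have cFall: "\<And>j x. j < Suc m \<Longrightarrow> x \<in> I j \<Longrightarrow> F j x \<in> carrier_mat n n"
    using Suc(2) by (auto simp: kraus_def)
  show ?case unfolding kraus_def
  proof (intro conjI ballI)
    show "finite (wsetF I (Suc m))" by (rule finite_wsetF, insert Suc(2), auto simp: kraus_def)
    fix w assume "w \<in> wsetF I (Suc m)"
    from gprod_carrier[OF cFall this] show "gprod n F w \<in> carrier_mat n n" .
  next
    fix X :: "complex mat" assume X: "X \<in> carrier_mat n n"
    have Y: "comp_down (\<lambda>j. g (Suc j)) m X = msum n (\<lambda>w. ?P w * X * mat_adjoint (?P w)) ?W"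
      using IH X by (simp add: kraus_def)
    have cY: "\<And>w. w \<in> ?W \<Longrightarrow> ?P w * X * mat_adjoint (?P w) \<in> carrier_mat n n"
    proof -
      fix w assume "w \<in> ?W" from cP[OF this] X show "?P w * X * mat_adjoint (?P w) \<in> carrier_mat n n"
        by (meson adj_carrier mult_carrier_mat)
    qed
    have "comp_down g (Suc m) X = g 0 (comp_down (\<lambda>j. g (Suc j)) m X)"
      by (simp only: comp_down_Suc' o_apply)
    also have "\<dots> = msum n (\<lambda>x. F 0 x * msum n (\<lambda>w. ?P w * X * mat_adjoint (?P w)) ?W * mat_adjoint (F 0 x)) (I 0)"
      using K0 by (simp add: kraus_def Y)
    also have "\<dots> = msum n (\<lambda>x. msum n (\<lambda>w. (F 0 x * ?P w) * X * mat_adjoint (F 0 x * ?P w)) ?W) (I 0)"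
    proof (rule msum_cong)
      fix x i j assume x: "x \<in> I 0" and ij: "i < n" "j < n"
      have "F 0 x * msum n (\<lambda>w. ?P w * X * mat_adjoint (?P w)) ?W * mat_adjoint (F 0 x)
        = msum n (\<lambda>w. F 0 x * (?P w * X * mat_adjoint (?P w)) * mat_adjoint (F 0 x)) ?W"
      proof -
        have cZ: "\<And>w. w \<in> ?W \<Longrightarrow> F 0 x * (?P w * X * mat_adjoint (?P w)) \<in> carrier_mat n n"
          using cF[OF x] cY by (meson mult_carrier_mat)
        show ?thesis
          by (simp only: msum_mult_left[OF cF[OF x] cY] msum_mult_right[OF adj_carrier[OF cF[OF x]] cZ])
      qed
      also have "\<dots> = msum n (\<lambda>w. (F 0 x * ?P w) * X * mat_adjoint (F 0 x * ?P w)) ?W"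
      proof (rule msum_cong)
        fix w i j assume w: "w \<in> ?W"
        have a: "F 0 x \<in> carrier_mat n n" "?P w \<in> carrier_mat n n" "mat_adjoint (?P w) \<in> carrier_mat n n"
          "mat_adjoint (F 0 x) \<in> carrier_mat n n" using cF[OF x] cP[OF w] by auto
        show "(F 0 x * (?P w * X * mat_adjoint (?P w)) * mat_adjoint (F 0 x)) $$ (i,j) =
           (F 0 x * ?P w * X * mat_adjoint (F 0 x * ?P w)) $$ (i,j)"
          by (simp add: adj_mult[OF a(1,2)] assoc_mult_mat[of _ n n _ n _ n] a X mult_carrier_mat[of _ n n _ n])
      qed
      finally show "(F 0 x * msum n (\<lambda>w. ?P w * X * mat_adjoint (?P w)) ?W * mat_adjoint (F 0 x)) $$ (i,j)
        = msum n (\<lambda>w. (F 0 x * ?P w) * X * mat_adjoint (F 0 x * ?P w)) ?W $$ (i,j)" by simp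
    qed
    also have "\<dots> = msum n (\<lambda>p. (F 0 (fst p) * ?P (snd p)) * X * mat_adjoint (F 0 (fst p) * ?P (snd p))) (I 0 \<times> ?W)"
      by (rule msum_msum[OF finI finW])
    also have "\<dots> = msum n (\<lambda>w. gprod n F w * X * mat_adjoint (gprod n F w)) (wsetF I (Suc m))"
      unfolding wsetF_Suc msum_reindex[OF inj_Cons_pair] by simp
    finally show "comp_down g (Suc m) X = msum n (\<lambda>w. gprod n F w * X * mat_adjoint (gprod n F w)) (wsetF I (Suc m))" .
  qed
qed



lemma gprod_const_Cons[simp]: "gprod n (\<lambda>_. f) (x # xs) = f x * gprod n (\<lambda>_. f) xs"
  by simp

lemma wsetF_const: "wsetF (\<lambda>_. S) m = {ws. length ws = m \<and> set ws \<subseteq> S}"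
proof (rule equalityI; rule subsetI)
  fix ws assume "ws \<in> wsetF (\<lambda>_. S) m" thus "ws \<in> {ws. length ws = m \<and> set ws \<subseteq> S}"
    by (auto simp: wsetF_def in_set_conv_nth)
next
  fix ws assume "ws \<in> {ws. length ws = m \<and> set ws \<subseteq> S}"
  hence "length ws = m" "set ws \<subseteq> S" by auto
  thus "ws \<in> wsetF (\<lambda>_. S) m" unfolding wsetF_def using nth_mem by blast
qed

lemma spanning_mono: assumes "finite S" "finite T" "\<And>x. x \<in> S \<Longrightarrow> f x \<in> lspan n g T"
  "\<And>y. y \<in> T \<Longrightarrow> g y \<in> carrier_mat n n" and sp: "spanning n f S m"
shows "spanning n g T m"
  unfolding spanning_def
proof
  fix A :: "complex mat" assume "A \<in> carrier_mat n n"
  with sp have A: "A \<in> lspan n (gprod n (\<lambda>_. f)) (wsetF (\<lambda>_. S) m)" by (auto simp: spanning_def)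
  show "A \<in> lspan n (gprod n (\<lambda>_. g)) (wsetF (\<lambda>_. T) m)"
  proof (rule lspan_trans[OF _ _ _ A])
    show "finite (wsetF (\<lambda>_. S) m)" by (rule finite_wsetF, simp add: assms)
    show "finite (wsetF (\<lambda>_. T) m)" by (rule finite_wsetF, simp add: assms)
    fix ws assume "ws \<in> wsetF (\<lambda>_. S) m"
    thus "gprod n (\<lambda>_. f) ws \<in> lspan n (gprod n (\<lambda>_. g)) (wsetF (\<lambda>_. T) m)"
      by (intro gprod_span, auto simp: assms)
  qed
qed

lemma spanning_adj: assumes fin: "finite S" and c: "\<And>x. x \<in> S \<Longrightarrow> f x \<in> carrier_mat n n"
  and sp: "spanning n f S m"
shows "spanning n (\<lambda>x. mat_adjoint (f x)) S m"
  unfolding spanning_def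
proof
  fix A :: "complex mat" assume A: "A \<in> carrier_mat n n"
  let ?W = "wsetF (\<lambda>_. S) m"
  have finW: "finite ?W" by (rule finite_wsetF, simp add: fin)
  have cW: "\<And>w. w \<in> ?W \<Longrightarrow> gprod n (\<lambda>_. f) w \<in> carrier_mat n n"
    by (rule gprod_carrier, auto simp: c)
  from sp adj_carrier[OF A] have "mat_adjoint A \<in> lspan n (gprod n (\<lambda>_. f)) ?W" by (auto simp: spanning_def)
  from lspan_adj[OF cW this] have A': "A \<in> lspan n (\<lambda>w. mat_adjoint (gprod n (\<lambda>_. f) w)) ?W" by simp
  show "A \<in> lspan n (gprod n (\<lambda>_ x. mat_adjoint (f x))) ?W"
  proof (rule lspan_trans[OF finW finW _ A'])
    fix w assume w: "w \<in> ?W"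
    have cw: "\<And>j. j < length w \<Longrightarrow> f (w ! j) \<in> carrier_mat n n"
      using w c by (auto simp: wsetF_def)
    have "mat_adjoint (gprod n (\<lambda>_. f) w) = gprod n (\<lambda>_ x. mat_adjoint (f x)) (rev w)"
      by (subst gprod_adj, simp add: cw, simp)
    moreover have "rev w \<in> ?W" using w by (simp add: wsetF_const)
    moreover have "gprod n (\<lambda>_ x. mat_adjoint (f x)) (rev w) \<in> carrier_mat n n"
      by (rule gprod_carrier[OF _ \<open>rev w \<in> ?W\<close>], simp add: c)
    ultimately show "mat_adjoint (gprod n (\<lambda>_. f) w) \<in> lspan n (gprod n (\<lambda>_ x. mat_adjoint (f x))) ?W"
      using lspan_base[OF finW, of "rev w" "gprod n (\<lambda>_ x. mat_adjoint (f x))" n] by simp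
  qed
qed

lemma comp_up_Suc': "comp_up f (Suc m) = comp_up (\<lambda>j. f (Suc j)) m \<circ> f 0"
  by (induct m arbitrary: f, simp_all add: comp_assoc)

lemma comp_down_cong: "(\<And>j. j < m \<Longrightarrow> g j = g' j) \<Longrightarrow> comp_down g m = comp_down g' m"
  by (induct m, simp_all)

lemma comp_up_down: "comp_up f m = comp_down (\<lambda>j. f (m - 1 - j)) m"
proof (induct m arbitrary: f)
  case 0 thus ?case by simp
next
  case (Suc m)
  have "comp_up f (Suc m) = comp_up (\<lambda>j. f (Suc j)) m \<circ> f 0" by (rule comp_up_Suc')
  also have "\<dots> = comp_down (\<lambda>j. f (Suc (m - 1 - j))) m \<circ> f 0" by (simp only: Suc)
  also have "comp_down (\<lambda>j. f (Suc (m - 1 - j))) m = comp_down (\<lambda>j. f (Suc m - 1 - j)) m"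
    by (rule comp_down_cong, simp add: Suc_diff_Suc)
  finally show ?case by simp
qed

lemma smult_smult_m: "a \<cdot>\<^sub>m (b \<cdot>\<^sub>m (A :: complex mat)) = (a * b) \<cdot>\<^sub>m A"
  by (rule eq_matI, simp_all)

lemma smult_sandwich: assumes A: "A \<in> carrier_mat n n" and X: "X \<in> carrier_mat n n"
  shows "(c \<cdot>\<^sub>m A) * X * mat_adjoint (c \<cdot>\<^sub>m A) = (c * cnj c) \<cdot>\<^sub>m (A * X * mat_adjoint (A::complex mat))"
proof -
  have AX: "A * X \<in> carrier_mat n n" using A X by simp
  have "(c \<cdot>\<^sub>m A) * X * mat_adjoint (c \<cdot>\<^sub>m A) = (c \<cdot>\<^sub>m (A * X)) * (cnj c \<cdot>\<^sub>m mat_adjoint A)"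
    by (simp add: adj_smult mult_smult_assoc_mat[OF A X])
  also have "\<dots> = c \<cdot>\<^sub>m ((A * X) * (cnj c \<cdot>\<^sub>m mat_adjoint A))"
    using mult_smult_assoc_mat[OF AX smult_carrier_mat[OF adj_carrier[OF A]]] by simp
  also have "(A * X) * (cnj c \<cdot>\<^sub>m mat_adjoint A) = cnj c \<cdot>\<^sub>m (A * X * mat_adjoint A)"
    by (rule mult_smult_distrib[OF AX adj_carrier[OF A]])
  finally show ?thesis by (simp add: smult_smult_m)
qed

lemma kraus_avg: assumes M: "M \<ge> 1" and K: "\<And>j. j < M \<Longrightarrow> kraus n (g j) (F j) (I j)"
  shows "kraus n (avg_map n M g) (\<lambda>p. complex_of_real (1 / sqrt (real M)) \<cdot>\<^sub>m F (fst p) (snd p)) (Sigma {..<M} I)"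
  unfolding kraus_def
proof (intro conjI ballI)
  show "finite (Sigma {..<M} I)" using K by (auto simp: kraus_def)
  fix p assume "p \<in> Sigma {..<M} I"
  thus "complex_of_real (1 / sqrt (real M)) \<cdot>\<^sub>m F (fst p) (snd p) \<in> carrier_mat n n"
    using K by (auto simp: kraus_def)
next
  fix X :: "complex mat" assume X: "X \<in> carrier_mat n n"
  let ?c = "complex_of_real (1 / sqrt (real M))"
  have cc: "?c * cnj ?c = 1 / of_nat M"
  proof -
    have "?c * cnj ?c = complex_of_real ((1 / sqrt (real M)) * (1 / sqrt (real M)))"
      by (simp only: Complex.complex_cnj_complex_of_real of_real_mult)
    also have "(1 / sqrt (real M)) * (1 / sqrt (real M)) = 1 / real M" using M
      by (simp add: real_sqrt_mult[symmetric])
    finally show ?thesis by (metis of_real_divide of_real_1 of_real_of_nat_eq)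
  qed
  have gX: "\<And>j. j < M \<Longrightarrow> g j X = msum n (\<lambda>x. F j x * X * mat_adjoint (F j x)) (I j)"
    using K X by (auto simp: kraus_def)
  have cF: "\<And>j x. j < M \<Longrightarrow> x \<in> I j \<Longrightarrow> F j x \<in> carrier_mat n n" using K by (auto simp: kraus_def)
  have fin: "\<And>j. j < M \<Longrightarrow> finite (I j)" using K by (auto simp: kraus_def)
  show "avg_map n M g X = msum n (\<lambda>p. (?c \<cdot>\<^sub>m F (fst p) (snd p)) * X * mat_adjoint (?c \<cdot>\<^sub>m F (fst p) (snd p))) (Sigma {..<M} I)"
  proof (rule eq_matI)
    fix i k assume "i < dim_row (msum n (\<lambda>p. (?c \<cdot>\<^sub>m F (fst p) (snd p)) * X * mat_adjoint (?c \<cdot>\<^sub>m F (fst p) (snd p))) (Sigma {..<M} I))"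
      "k < dim_col (msum n (\<lambda>p. (?c \<cdot>\<^sub>m F (fst p) (snd p)) * X * mat_adjoint (?c \<cdot>\<^sub>m F (fst p) (snd p))) (Sigma {..<M} I))"
    hence ik: "i < n" "k < n" by auto
    have "avg_map n M g X $$ (i,k) = 1 / of_nat M * (\<Sum>j<M. g j X $$ (i,k))"
      using ik by (simp add: avg_map_def)
    also have "\<dots> = 1 / of_nat M * (\<Sum>j<M. \<Sum>x\<in>I j. (F j x * X * mat_adjoint (F j x)) $$ (i,k))"
      using ik by (simp add: gX)
    also have "\<dots> = (\<Sum>j<M. \<Sum>x\<in>I j. ((?c \<cdot>\<^sub>m F j x) * X * mat_adjoint (?c \<cdot>\<^sub>m F j x)) $$ (i,k))"
      unfolding sum_distrib_left
    proof (rule sum.cong[OF refl], rule sum.cong[OF refl])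
      fix j x assume j: "j \<in> {..<M}" and x: "x \<in> I j"
      have c: "F j x \<in> carrier_mat n n" using cF j x by simp
      have "(?c \<cdot>\<^sub>m F j x) * X * mat_adjoint (?c \<cdot>\<^sub>m F j x) = (1 / of_nat M) \<cdot>\<^sub>m (F j x * X * mat_adjoint (F j x))"
        by (simp only: smult_sandwich[OF c X] cc)
      moreover have "F j x * X * mat_adjoint (F j x) \<in> carrier_mat n n" using c X by (meson adj_carrier mult_carrier_mat)
      hence "dim_row (F j x * X * mat_adjoint (F j x)) = n" "dim_col (F j x * X * mat_adjoint (F j x)) = n" by auto
      ultimately show "1 / of_nat M * (F j x * X * mat_adjoint (F j x)) $$ (i, k) = ((?c \<cdot>\<^sub>m F j x) * X * mat_adjoint (?c \<cdot>\<^sub>m F j x)) $$ (i, k)"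
        using ik by (simp only: index_smult_mat)
    qed
    also have "\<dots> = msum n (\<lambda>p. (?c \<cdot>\<^sub>m F (fst p) (snd p)) * X * mat_adjoint (?c \<cdot>\<^sub>m F (fst p) (snd p))) (Sigma {..<M} I) $$ (i,k)"
      using ik fin by (simp add: sum.Sigma case_prod_beta)
    finally show "avg_map n M g X $$ (i,k) = msum n (\<lambda>p. (?c \<cdot>\<^sub>m F (fst p) (snd p)) * X * mat_adjoint (?c \<cdot>\<^sub>m F (fst p) (snd p))) (Sigma {..<M} I) $$ (i,k)" .
  qed (simp_all add: avg_map_def)
qed

lemma msum_smult_lc: assumes c: "\<And>x. x \<in> S \<Longrightarrow> f x \<in> carrier_mat n n"
  shows "msum n (\<lambda>x. c x \<cdot>\<^sub>m f x) S = lc n c f S"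
proof (rule eq_matI)
  fix i j assume "i < dim_row (lc n c f S)" "j < dim_col (lc n c f S)"
  hence ij: "i < n" "j < n" by auto
  show "msum n (\<lambda>x. c x \<cdot>\<^sub>m f x) S $$ (i, j) = lc n c f S $$ (i, j)"
    using ij
  proof (simp, intro sum.cong refl)
    fix x assume "x \<in> S" from c[OF this] ij show "(c x \<cdot>\<^sub>m f x) $$ (i, j) = c x * f x $$ (i, j)" by simp
  qed
qed simp_all

lemma word_prod_gprod: "word_prod n Ks w = gprod n (\<lambda>_ i. Ks ! i) w"
  by (induct w, simp_all add: word_prod_def)

lemma words_wsetF: "words k m = wsetF (\<lambda>_. {..<k}) m"
  by (auto simp: words_def wsetF_const)

lemma prim_to_kraus: assumes "primitive_cp n L"
  shows "\<exists>Ks m. kraus n L (\<lambda>i. Ks ! i) {..<length Ks} \<and> spanning n (\<lambda>i. Ks ! i) {..<length Ks} m"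
proof -
  from assms obtain Ks m where c: "\<forall>K\<in>set Ks. K \<in> carrier_mat n n"
    and L: "\<forall>X\<in>carrier_mat n n. L X = msum n (\<lambda>i. Ks ! i * X * mat_adjoint (Ks ! i)) {..<length Ks}"
    and sp: "\<forall>A\<in>carrier_mat n n. \<exists>c. A = msum n (\<lambda>w. c w \<cdot>\<^sub>m word_prod n Ks w) (words (length Ks) m)"
    unfolding primitive_cp_def by blast
  have k: "kraus n L (\<lambda>i. Ks ! i) {..<length Ks}" unfolding kraus_def using c L by auto
  have "spanning n (\<lambda>i. Ks ! i) {..<length Ks} m" unfolding spanning_def
  proof
    fix A :: "complex mat" assume "A \<in> carrier_mat n n"
    with sp obtain c where A: "A = msum n (\<lambda>w. c w \<cdot>\<^sub>m word_prod n Ks w) (words (length Ks) m)" by blast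
    have "A = lc n c (gprod n (\<lambda>_ i. Ks ! i)) (wsetF (\<lambda>_. {..<length Ks}) m)"
      unfolding A word_prod_gprod words_wsetF
      by (rule msum_smult_lc, rule gprod_carrier, insert c, auto)
    thus "A \<in> lspan n (gprod n (\<lambda>_ i. Ks ! i)) (wsetF (\<lambda>_. {..<length Ks}) m)"
      by (auto simp: lspan_def)
  qed
  with k show ?thesis by blast
qed

lemma prim_of_kraus: assumes k: "kraus n L f S" and sp: "spanning n f S m"
  shows "primitive_cp n L"
proof -
  from k have fin: "finite S" and c: "\<And>x. x \<in> S \<Longrightarrow> f x \<in> carrier_mat n n"
    and L: "\<And>X. X \<in> carrier_mat n n \<Longrightarrow> L X = msum n (\<lambda>x. f x * X * mat_adjoint (f x)) S"
    by (auto simp: kraus_def)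
  from finite_distinct_list[OF fin] obtain xs where xs: "set xs = S" "distinct xs" by blast
  define Ks where "Ks = map f xs"
  have len: "length Ks = length xs" by (simp add: Ks_def)
  have inj: "inj_on (\<lambda>i. xs ! i) {..<length xs}" using xs(2) by (simp add: inj_on_def nth_eq_iff_index_eq)
  have Simg: "S = (\<lambda>i. xs ! i) ` {..<length xs}" using xs(1) by (auto simp: in_set_conv_nth)
  have cK: "\<forall>K\<in>set Ks. K \<in> carrier_mat n n" using c xs(1) by (auto simp: Ks_def)
  have LK: "\<forall>X\<in>carrier_mat n n. L X = msum n (\<lambda>i. Ks ! i * X * mat_adjoint (Ks ! i)) {..<length Ks}"
  proof
    fix X :: "complex mat" assume X: "X \<in> carrier_mat n n"
    have "L X = msum n (\<lambda>x. f x * X * mat_adjoint (f x)) ((\<lambda>i. xs ! i) ` {..<length xs})"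
      using L[OF X] Simg by simp
    also have "\<dots> = msum n (\<lambda>i. f (xs ! i) * X * mat_adjoint (f (xs ! i))) {..<length xs}"
      by (rule msum_reindex[OF inj])
    also have "\<dots> = msum n (\<lambda>i. Ks ! i * X * mat_adjoint (Ks ! i)) {..<length Ks}"
      unfolding len by (rule msum_cong, simp_all add: Ks_def)
    finally show "L X = msum n (\<lambda>i. Ks ! i * X * mat_adjoint (Ks ! i)) {..<length Ks}" .
  qed
  have W: "wsetF (\<lambda>_. S) m = map (\<lambda>i. xs ! i) ` words (length Ks) m"
  proof (rule equalityI; rule subsetI)
    fix ws assume "ws \<in> wsetF (\<lambda>_. S) m"
    hence ws: "length ws = m" "set ws \<subseteq> S" by (auto simp: wsetF_const)
    define idx where "idx y = (SOME i. i < length xs \<and> xs ! i = y)" for y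
    have idx: "idx y < length xs \<and> xs ! idx y = y" if "y \<in> S" for y
    proof -
      from that xs(1) have "\<exists>i. i < length xs \<and> xs ! i = y" by (auto simp: in_set_conv_nth)
      thus ?thesis unfolding idx_def by (rule someI_ex)
    qed
    have "\<forall>i<length ws. xs ! idx (ws ! i) = ws ! i" using ws(2) idx nth_mem by blast
    hence "ws = map (\<lambda>i. xs ! i) (map idx ws)"
      by (intro nth_equalityI, simp_all)
    moreover have "map idx ws \<in> words (length Ks) m"
      using ws idx len by (auto simp: words_def)
    ultimately show "ws \<in> map (\<lambda>i. xs ! i) ` words (length Ks) m" by blast
  next
    fix ws assume "ws \<in> map (\<lambda>i. xs ! i) ` words (length Ks) m"
    thus "ws \<in> wsetF (\<lambda>_. S) m" using xs(1) len by (auto simp: words_def wsetF_const subset_iff intro!: nth_mem)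
  qed
  have injW: "inj_on (map (\<lambda>i. xs ! i)) (words (length Ks) m)"
  proof (rule inj_on_mapI)
    show "inj_on (\<lambda>i. xs ! i) (\<Union> (set ` words (length Ks) m))"
      by (rule inj_on_subset[OF inj], auto simp: words_def len)
  qed
  have gw: "\<And>w. w \<in> words (length Ks) m \<Longrightarrow> gprod n (\<lambda>_. f) (map (\<lambda>i. xs ! i) w) = word_prod n Ks w"
  proof -
    fix w assume "w \<in> words (length Ks) m"
    hence "set w \<subseteq> {..<length xs}" by (auto simp: words_def len)
    thus "gprod n (\<lambda>_. f) (map (\<lambda>i. xs ! i) w) = word_prod n Ks w"
      by (induct w, simp_all add: word_prod_def Ks_def)
  qed
  have cw: "\<And>w. w \<in> words (length Ks) m \<Longrightarrow> word_prod n Ks w \<in> carrier_mat n n"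
    unfolding word_prod_gprod words_wsetF by (rule gprod_carrier, insert cK, auto)
  have spK: "\<forall>A\<in>carrier_mat n n. \<exists>c. A = msum n (\<lambda>w. c w \<cdot>\<^sub>m word_prod n Ks w) (words (length Ks) m)"
  proof
    fix A :: "complex mat" assume "A \<in> carrier_mat n n"
    with sp have "A \<in> lspan n (gprod n (\<lambda>_. f)) (wsetF (\<lambda>_. S) m)" by (auto simp: spanning_def)
    also have "\<dots> = lspan n (\<lambda>w. gprod n (\<lambda>_. f) (map (\<lambda>i. xs ! i) w)) (words (length Ks) m)"
      unfolding W by (rule lspan_reindex[OF injW])
    finally obtain c where "A = lc n c (\<lambda>w. gprod n (\<lambda>_. f) (map (\<lambda>i. xs ! i) w)) (words (length Ks) m)"
      by (auto simp: lspan_def)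
    also have "\<dots> = lc n c (word_prod n Ks) (words (length Ks) m)"
      unfolding lc_def by (rule cong_mat[OF refl refl], rule sum.cong, simp_all add: gw)
    also have "\<dots> = msum n (\<lambda>w. c w \<cdot>\<^sub>m word_prod n Ks w) (words (length Ks) m)"
      by (rule msum_smult_lc[symmetric], rule cw)
    finally show "\<exists>c. A = msum n (\<lambda>w. c w \<cdot>\<^sub>m word_prod n Ks w) (words (length Ks) m)" by blast
  qed
  show ?thesis unfolding primitive_cp_def using cK LK spK by blast
qed



section \<open>Hilbert-Schmidt inner product and uniqueness of Kraus spans\<close>

lemma diff_zero_eq: assumes A: "(A::complex mat) \<in> carrier_mat n n" and B: "B \<in> carrier_mat n n" and z: "A - B = 0\<^sub>m n n"
  shows "A = B"
proof (rule eq_matI)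
  fix i j assume "i < dim_row B" "j < dim_col B"
  hence ij: "i < n" "j < n" using B by auto
  have "(A - B) $$ (i,j) = 0" using z ij by simp
  hence "A $$ (i,j) - B $$ (i,j) = 0" using A B ij by simp
  thus "A $$ (i,j) = B $$ (i,j)" by simp
qed (insert A B, auto)

definition ip :: "nat \<Rightarrow> complex mat \<Rightarrow> complex mat \<Rightarrow> complex" where
  "ip n A B = (\<Sum>i<n. \<Sum>j<n. cnj (A $$ (i,j)) * B $$ (i,j))"

lemma ip_lc_right: "ip n A (lc n c g T) = (\<Sum>y\<in>T. c y * ip n A (g y))"
proof -
  have "ip n A (lc n c g T) = (\<Sum>i<n. \<Sum>j<n. \<Sum>y\<in>T. c y * (cnj (A $$ (i,j)) * g y $$ (i,j)))"
    unfolding ip_def by (intro sum.cong refl, simp add: sum_distrib_left mult_ac)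
  also have "\<dots> = (\<Sum>i<n. \<Sum>y\<in>T. \<Sum>j<n. c y * (cnj (A $$ (i,j)) * g y $$ (i,j)))"
    by (intro sum.cong refl, rule sum.swap)
  also have "\<dots> = (\<Sum>y\<in>T. \<Sum>i<n. \<Sum>j<n. c y * (cnj (A $$ (i,j)) * g y $$ (i,j)))"
    by (rule sum.swap)
  also have "\<dots> = (\<Sum>y\<in>T. c y * ip n A (g y))"
    unfolding ip_def by (simp add: sum_distrib_left)
  finally show ?thesis .
qed

lemma ip_cnj: "ip n A B = cnj (ip n B A)"
  unfolding ip_def cnj_sum by (intro sum.cong refl, simp add: mult.commute)

lemma ip_diff_right: assumes "B \<in> carrier_mat n n" "C \<in> carrier_mat n n"
  shows "ip n A (B - C) = ip n A B - ip n A C"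
  unfolding ip_def sum_subtractf[symmetric]
  by (intro sum.cong refl, insert assms, simp add: algebra_simps)

lemma ip_add_left: assumes "A \<in> carrier_mat n n" "B \<in> carrier_mat n n"
  shows "ip n (A + B) C = ip n A C + ip n B C"
  unfolding ip_def sum.distrib[symmetric]
  by (intro sum.cong refl, insert assms, simp add: algebra_simps)

lemma ip_smult_right: assumes "B \<in> carrier_mat n n"
  shows "ip n A (a \<cdot>\<^sub>m B) = a * ip n A B"
  unfolding ip_def sum_distrib_left
  by (intro sum.cong refl, insert assms, simp add: algebra_simps)

lemma ip_self_zero: assumes R: "R \<in> carrier_mat n n" and z: "ip n R R = 0"
  shows "R = 0\<^sub>m n n"
proof -
  have "ip n R R = complex_of_real (\<Sum>i<n. \<Sum>j<n. (cmod (R $$ (i,j)))\<^sup>2)"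
    unfolding ip_def of_real_sum complex_norm_square by (simp add: mult.commute)
  with z have "(\<Sum>i<n. \<Sum>j<n. (cmod (R $$ (i,j)))\<^sup>2) = 0" by (simp only: of_real_eq_0_iff)
  hence "\<forall>i\<in>{..<n}. (\<Sum>j<n. (cmod (R $$ (i,j)))\<^sup>2) = 0"
    by (subst (asm) sum_nonneg_eq_0_iff, auto intro: sum_nonneg)
  hence "\<forall>i<n. \<forall>j<n. (cmod (R $$ (i,j)))\<^sup>2 = 0"
    by (auto simp: sum_nonneg_eq_0_iff)
  thus ?thesis using R by (intro eq_matI, auto)
qed

lemma ip_orth_span: assumes "\<And>y. y \<in> T \<Longrightarrow> ip n (g y) R = 0" and "P \<in> lspan n g T"
  shows "ip n P R = 0"
proof -
  from assms(2) obtain c where P: "P = lc n c g T" by (auto simp: lspan_def)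
  have "ip n R P = (\<Sum>y\<in>T. c y * ip n R (g y))" unfolding P by (rule ip_lc_right)
  also have "\<dots> = 0" by (rule sum.neutral, auto simp: ip_cnj[of n R] assms(1))
  finally show ?thesis by (subst ip_cnj, simp)
qed

lemma lspan_0: "0\<^sub>m n n \<in> lspan n g T"
proof -
  have "0\<^sub>m n n = lc n (\<lambda>_. 0) g T" by (rule eq_matI, simp_all)
  thus ?thesis by (auto simp: lspan_def)
qed

lemma lspan_add: assumes "A \<in> lspan n g T" "B \<in> lspan n g T" shows "A + B \<in> lspan n g T"
proof -
  from assms obtain c d where A: "A = lc n c g T" and B: "B = lc n d g T" by (auto simp: lspan_def)
  have "A + B = lc n (\<lambda>y. c y + d y) g T"
    by (rule eq_matI, simp_all add: A B sum.distrib distrib_right)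
  thus ?thesis by (auto simp: lspan_def)
qed

lemma lspan_diff: assumes "A \<in> lspan n g T" "B \<in> lspan n g T" shows "A - B \<in> lspan n g T"
proof -
  from assms obtain c d where A: "A = lc n c g T" and B: "B = lc n d g T" by (auto simp: lspan_def)
  have "A - B = lc n (\<lambda>y. c y - d y) g T"
    by (rule eq_matI, simp_all add: A B sum_subtractf left_diff_distrib)
  thus ?thesis by (auto simp: lspan_def)
qed

lemma lspan_insert_mono: assumes "finite T" "\<And>y. y \<in> insert t T \<Longrightarrow> g y \<in> carrier_mat n n"
  "A \<in> lspan n g T" shows "A \<in> lspan n g (insert t T)"
  by (rule lspan_trans[OF assms(1) _ _ assms(3)], simp add: assms(1), rule lspan_base, simp_all add: assms)

lemma proj_exists: assumes "finite T"
  shows "(\<And>y. y \<in> T \<Longrightarrow> g y \<in> carrier_mat n n) \<Longrightarrow> K \<in> carrier_mat n n \<Longrightarrow>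
    \<exists>P\<in>lspan n g T. \<forall>y\<in>T. ip n (g y) (K - P) = 0"
  using assms
proof (induct T arbitrary: K rule: finite_induct)
  case empty
  show ?case using lspan_0 by blast
next
  case (insert t T)
  have cg: "\<And>y. y \<in> T \<Longrightarrow> g y \<in> carrier_mat n n" using insert(4) by simp
  have ct: "g t \<in> carrier_mat n n" using insert(4) by simp
  from insert(3)[OF cg insert(5)] obtain P1 where P1: "P1 \<in> lspan n g T"
    and o1: "\<And>y. y \<in> T \<Longrightarrow> ip n (g y) (K - P1) = 0" by blast
  from insert(3)[OF cg ct] obtain P2 where P2: "P2 \<in> lspan n g T"
    and o2: "\<And>y. y \<in> T \<Longrightarrow> ip n (g y) (g t - P2) = 0" by blast
  have cP1: "P1 \<in> carrier_mat n n" using P1 by (rule lspan_carrier)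
  have cP2: "P2 \<in> carrier_mat n n" using P2 by (rule lspan_carrier)
  have mono: "\<And>A. A \<in> lspan n g T \<Longrightarrow> A \<in> lspan n g (insert t T)"
    by (rule lspan_insert_mono[OF insert(1) insert(4)])
  define r where "r = g t - P2"
  have cr: "r \<in> carrier_mat n n" unfolding r_def by (rule minus_carrier_mat[OF cP2])
  have cK1: "K - P1 \<in> carrier_mat n n" by (rule minus_carrier_mat[OF cP1])
  show ?case
  proof (cases "r = 0\<^sub>m n n")
    case True
    hence gt: "g t = P2" unfolding r_def by (rule diff_zero_eq[OF ct cP2])
    have "ip n (g t) (K - P1) = 0" unfolding gt by (rule ip_orth_span[OF o1 P2])
    with o1 mono[OF P1] show ?thesis by auto
  next
    case False
    have rr: "ip n r r \<noteq> 0" using ip_self_zero[OF cr] False by blast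
    define lam where "lam = ip n r (K - P1) / ip n r r"
    define P where "P = P1 + lam \<cdot>\<^sub>m r"
    have rspan: "r \<in> lspan n g (insert t T)" unfolding r_def
      by (rule lspan_diff, rule lspan_base, simp_all add: insert(1) ct mono[OF P2])
    have Pspan: "P \<in> lspan n g (insert t T)" unfolding P_def
      by (rule lspan_add[OF mono[OF P1] lspan_smult[OF rspan]])
    have KP: "K - P = (K - P1) - lam \<cdot>\<^sub>m r" unfolding P_def
      using insert(5) cP1 cr by (intro eq_matI, auto)
    have or: "\<And>y. y \<in> T \<Longrightarrow> ip n (g y) r = 0" unfolding r_def by (rule o2)
    have oT: "\<And>y. y \<in> T \<Longrightarrow> ip n (g y) (K - P) = 0"
      unfolding KP by (simp add: ip_diff_right[OF cK1] cr ip_smult_right o1 or)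
    have "ip n (g t) (K - P) = ip n r (K - P) + ip n P2 (K - P)"
    proof -
      have "g t = r + P2" unfolding r_def using ct cP2 by (intro eq_matI, auto)
      thus ?thesis by (simp add: ip_add_left[OF cr cP2])
    qed
    also have "ip n P2 (K - P) = 0" by (rule ip_orth_span[OF oT P2])
    also have "ip n r (K - P) = ip n r (K - P1) - lam * ip n r r"
      unfolding KP by (simp add: ip_diff_right[OF cK1] cr ip_smult_right)
    also have "\<dots> = 0" using rr by (simp add: lam_def)
    finally have "ip n (g t) (K - P) = 0" by simp
    with oT Pspan show ?thesis by auto
  qed
qed

definition unitE :: "nat \<Rightarrow> nat \<Rightarrow> nat \<Rightarrow> complex mat" where
  "unitE n q s = mat n n (\<lambda>(a,b). if a = q \<and> b = s then 1 else 0)"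

lemma sandwich_unit: assumes A: "A \<in> carrier_mat n n" and "p < n" "q < n" "r < n" "s < n"
  shows "(A * unitE n q s * mat_adjoint A) $$ (p,r) = A $$ (p,q) * cnj (A $$ (r,s))"
proof -
  have E: "unitE n q s \<in> carrier_mat n n" by (simp add: unitE_def)
  have AE: "A * unitE n q s = mat n n (\<lambda>(p,l). if l = s then A $$ (p,q) else 0)"
  proof (rule eq_matI)
    fix i j assume ij: "i < dim_row (mat n n (\<lambda>(p,l). if l = s then A $$ (p,q) else 0))"
      "j < dim_col (mat n n (\<lambda>(p,l). if l = s then A $$ (p,q) else 0))"
    hence ij: "i < n" "j < n" by auto
    have "(A * unitE n q s) $$ (i,j) = (\<Sum>l<n. A $$ (i,l) * unitE n q s $$ (l,j))"
      by (rule mult_index_sq[OF A E ij])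
    also have "\<dots> = (\<Sum>l<n. if l = q then (if j = s then A $$ (i,q) else 0) else 0)"
      by (intro sum.cong refl, simp add: unitE_def ij)
    also have "\<dots> = (if j = s then A $$ (i,q) else 0)" using assms by simp
    finally show "(A * unitE n q s) $$ (i,j) = mat n n (\<lambda>(p,l). if l = s then A $$ (p,q) else 0) $$ (i,j)"
      using ij by simp
  qed (insert A, auto simp: unitE_def)
  have cAE: "mat n n (\<lambda>(p,l). if l = s then A $$ (p,q) else 0) \<in> carrier_mat n n" by simp
  have "(A * unitE n q s * mat_adjoint A) $$ (p,r) = (\<Sum>l<n. (if l = s then A $$ (p,q) else 0) * mat_adjoint A $$ (l,r))"
    unfolding AE by (subst mult_index_sq[OF cAE adj_carrier[OF A]], insert assms, auto intro!: sum.cong)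
  also have "\<dots> = (\<Sum>l<n. if l = s then A $$ (p,q) * mat_adjoint A $$ (s,r) else 0)"
    by (rule sum.cong, auto)
  also have "\<dots> = A $$ (p,q) * mat_adjoint A $$ (s,r)" using assms by simp
  also have "\<dots> = A $$ (p,q) * cnj (A $$ (r,s))" using assms A by simp
  finally show ?thesis .
qed

definition choi_form :: "nat \<Rightarrow> (complex mat \<Rightarrow> complex mat) \<Rightarrow> complex mat \<Rightarrow> complex" where
  "choi_form n L W = (\<Sum>p<n. \<Sum>q<n. \<Sum>r<n. \<Sum>s<n. cnj (W $$ (p,q)) * W $$ (r,s) * L (unitE n q s) $$ (p,r))"

lemma ip_sq_expand: "ip n W A * cnj (ip n W A) =
  (\<Sum>p<n. \<Sum>q<n. \<Sum>r<n. \<Sum>s<n. cnj (W $$ (p,q)) * W $$ (r,s) * (A $$ (p,q) * cnj (A $$ (r,s))))"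
  unfolding ip_def cnj_sum
  apply (simp only: sum_distrib_right)
  apply (simp only: sum_distrib_left)
  apply (intro sum.cong refl)
  apply (simp add: mult_ac)
  done

lemma choi: assumes k: "kraus n L f S"
  shows "(\<Sum>x\<in>S. ip n W (f x) * cnj (ip n W (f x))) = choi_form n L W"
proof -
  from k have fin: "finite S" and c: "\<And>x. x \<in> S \<Longrightarrow> f x \<in> carrier_mat n n"
    and L: "\<And>X. X \<in> carrier_mat n n \<Longrightarrow> L X = msum n (\<lambda>x. f x * X * mat_adjoint (f x)) S"
    by (auto simp: kraus_def)
  let ?h = "\<lambda>x p q r s. cnj (W $$ (p,q)) * W $$ (r,s) * (f x $$ (p,q) * cnj (f x $$ (r,s)))"
  have "(\<Sum>x\<in>S. ip n W (f x) * cnj (ip n W (f x))) = (\<Sum>x\<in>S. \<Sum>p<n. \<Sum>q<n. \<Sum>r<n. \<Sum>s<n. ?h x p q r s)"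
    by (simp only: ip_sq_expand)
  also have "\<dots> = (\<Sum>p<n. \<Sum>x\<in>S. \<Sum>q<n. \<Sum>r<n. \<Sum>s<n. ?h x p q r s)" by (rule sum.swap)
  also have "\<dots> = (\<Sum>p<n. \<Sum>q<n. \<Sum>x\<in>S. \<Sum>r<n. \<Sum>s<n. ?h x p q r s)" by (intro sum.cong refl, rule sum.swap)
  also have "\<dots> = (\<Sum>p<n. \<Sum>q<n. \<Sum>r<n. \<Sum>x\<in>S. \<Sum>s<n. ?h x p q r s)" by (intro sum.cong refl, rule sum.swap)
  also have "\<dots> = (\<Sum>p<n. \<Sum>q<n. \<Sum>r<n. \<Sum>s<n. \<Sum>x\<in>S. ?h x p q r s)" by (intro sum.cong refl, rule sum.swap)
  also have "\<dots> = choi_form n L W" unfolding choi_form_def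
  proof (intro sum.cong refl)
    fix p q r s assume "p \<in> {..<n}" "q \<in> {..<n}" "r \<in> {..<n}" "s \<in> {..<n}"
    hence pqrs: "p < n" "q < n" "r < n" "s < n" by auto
    have "L (unitE n q s) $$ (p,r) = (\<Sum>x\<in>S. (f x * unitE n q s * mat_adjoint (f x)) $$ (p,r))"
      using pqrs by (simp add: L unitE_def)
    also have "\<dots> = (\<Sum>x\<in>S. f x $$ (p,q) * cnj (f x $$ (r,s)))"
      by (intro sum.cong refl, rule sandwich_unit[OF c], simp_all add: pqrs)
    finally show "(\<Sum>x\<in>S. ?h x p q r s) = cnj (W $$ (p,q)) * W $$ (r,s) * L (unitE n q s) $$ (p,r)"
      by (simp add: sum_distrib_left)
  qed
  finally show ?thesis .
qed

lemma sum_sq_zero: assumes "finite S" "(\<Sum>x\<in>S. z x * cnj (z x)) = 0" "x \<in> S" shows "z x = 0"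
proof -
  have "(\<Sum>x\<in>S. z x * cnj (z x)) = complex_of_real (\<Sum>x\<in>S. (cmod (z x))\<^sup>2)"
    unfolding of_real_sum complex_norm_square by simp
  with assms(2) have "(\<Sum>x\<in>S. (cmod (z x))\<^sup>2) = 0" by (simp only: of_real_eq_0_iff)
  with assms(1,3) have "(cmod (z x))\<^sup>2 = 0" by (subst (asm) sum_nonneg_eq_0_iff, auto)
  thus ?thesis by simp
qed

lemma kraus_unique: assumes kf: "kraus n L f S" and kg: "kraus n L g T" and x: "x \<in> S"
  shows "f x \<in> lspan n g T"
proof -
  from kf have finS: "finite S" and cf: "\<And>x. x \<in> S \<Longrightarrow> f x \<in> carrier_mat n n" by (auto simp: kraus_def)
  from kg have finT: "finite T" and cg: "\<And>y. y \<in> T \<Longrightarrow> g y \<in> carrier_mat n n" by (auto simp: kraus_def)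
  have "\<exists>P\<in>lspan n g T. \<forall>y\<in>T. ip n (g y) (f x - P) = 0"
    by (rule proj_exists[OF finT], simp_all add: cg cf x)
  then obtain P where P: "P \<in> lspan n g T"
    and o: "\<And>y. y \<in> T \<Longrightarrow> ip n (g y) (f x - P) = 0" by blast
  define R where "R = f x - P"
  have cP: "P \<in> carrier_mat n n" by (rule lspan_carrier[OF P])
  have cR: "R \<in> carrier_mat n n" unfolding R_def by (rule minus_carrier_mat[OF cP])
  have oR: "\<And>y. y \<in> T \<Longrightarrow> ip n R (g y) = 0" using o by (subst ip_cnj, simp add: R_def)
  have "(\<Sum>y\<in>T. ip n R (g y) * cnj (ip n R (g y))) = 0" by (simp add: oR)
  hence "(\<Sum>z\<in>S. ip n R (f z) * cnj (ip n R (f z))) = 0" using choi[OF kf, of R] choi[OF kg, of R] by simp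
  from sum_sq_zero[OF finS this x] have a: "ip n R (f x) = 0" .
  have b: "ip n R P = 0"
  proof -
    have "ip n P R = 0" by (rule ip_orth_span[OF _ P], simp add: o R_def)
    thus ?thesis by (subst ip_cnj, simp)
  qed
  have "ip n R R = ip n R (f x) - ip n R P" unfolding R_def by (rule ip_diff_right[OF cf[OF x] cP])
  hence "ip n R R = 0" using a b by simp
  from ip_self_zero[OF cR this] have "f x = P" unfolding R_def by (rule diff_zero_eq[OF cf[OF x] cP])
  with P show ?thesis by simp
qed



section \<open>Spectral radius zero implies nilpotent\<close>

lemma jordan_block_zero_pow_big: assumes "na \<le> k"
  shows "jordan_block na (0::complex) ^\<^sub>m k = 0\<^sub>m na na"
  unfolding jordan_block_zero_pow using assms by (intro eq_matI, auto)

lemma sr0_nilpotent: fixes A :: "complex mat"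
  assumes A: "A \<in> carrier_mat N N" and N: "N > 0" and sr: "spectral_radius A \<le> 0" and k: "N \<le> k"
  shows "A ^\<^sub>m k = 0\<^sub>m N N"
proof -
  from char_poly_factorized[OF A] obtain as where cp: "char_poly A = (\<Prod>a\<leftarrow>as. [:- a, 1:])" by blast
  from jordan_nf_exists[OF A cp] obtain n_as where jnf: "jordan_nf A n_as" by blast
  from jordan_nf_powE[OF A jnf] obtain P Q where P: "P \<in> carrier_mat N N" and Q: "Q \<in> carrier_mat N N"
    and cp2: "char_poly A = (\<Prod>(na, a)\<leftarrow>n_as. [:- a, 1:] ^ na)"
    and pow: "\<And>k. A ^\<^sub>m k = P * (jordan_matrix n_as) ^\<^sub>m k * Q" by blast
  from jnf have pos: "0 \<notin> fst ` set n_as" and sim: "similar_mat A (jordan_matrix n_as)"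
    by (auto simp: jordan_nf_def)
  from similar_matD[OF sim] obtain N' where "{A, jordan_matrix n_as} \<subseteq> carrier_mat N' N'" by blast
  hence "dim_row A = N'" "dim_row (jordan_matrix n_as) = N'" by auto
  moreover have "dim_row A = N" using A by auto
  ultimately have dimJ: "sum_list (map fst n_as) = N" by simp
  have blocks: "\<And>na a. (na, a) \<in> set n_as \<Longrightarrow> a = 0 \<and> na \<le> N"
  proof -
    fix na a assume mem: "(na, a) \<in> set n_as"
    have na0: "na \<noteq> 0" using pos mem by force
    have "poly (char_poly A) a = (\<Prod>p\<leftarrow>n_as. poly (case p of (na, b) \<Rightarrow> [:- b, 1:] ^ na) a)"
      unfolding cp2 poly_prod_list map_map by (simp add: o_def)
    also have "\<dots> = 0"
    proof (rule prod_list_zero_iff[THEN iffD2])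
      have "poly (case (na, a) of (na, b) \<Rightarrow> [:- b, 1:] ^ na) a = 0" using na0 by simp
      thus "0 \<in> set (map (\<lambda>p. poly (case p of (na, b) \<Rightarrow> [:- b, 1:] ^ na) a) n_as)"
        using mem by force
    qed
    finally have "eigenvalue A a" using eigenvalue_root_char_poly[OF A] by simp
    hence "norm a \<in> norm ` spectrum A" by (auto simp: spectrum_def)
    from spectral_radius_mem_max(2)[OF A N this] sr have "norm a \<le> 0" by linarith
    hence "a = 0" by simp
    moreover have "na \<in> set (map fst n_as)" using mem by force
    hence "na \<le> N" unfolding dimJ[symmetric] by (rule member_le_sum_list, simp)
    ultimately show "a = 0 \<and> na \<le> N" by simp
  qed
  let ?J = "jordan_matrix n_as"
  have Jc: "?J \<in> carrier_mat N N" using dimJ by (metis jordan_matrix_carrier)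
  have "?J ^\<^sub>m k = 0\<^sub>m N N"
  proof (rule eq_matI)
    fix i j assume ij: "i < dim_row (0\<^sub>m N N :: complex mat)" "j < dim_col (0\<^sub>m N N :: complex mat)"
    have "(?J ^\<^sub>m k) $$ (i,j) \<in> elements_mat (?J ^\<^sub>m k)"
      by (rule elements_matI[OF pow_carrier_mat[OF Jc]], insert ij, auto)
    also have "?J ^\<^sub>m k = diag_block_mat (map (\<lambda>(n,a). jordan_block n a ^\<^sub>m k) n_as)"
      by (rule jordan_matrix_pow)
    also have "elements_mat \<dots> \<subseteq> {0} \<union> \<Union> (set (map elements_mat (map (\<lambda>(n,a). jordan_block n a ^\<^sub>m k) n_as)))"
      by (rule elements_diag_block_mat)
    also have "\<dots> \<subseteq> {0}"
    proof -
      {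
        fix na a assume mem: "(na, a) \<in> set n_as"
        from blocks[OF mem] k have "jordan_block na a ^\<^sub>m k = 0\<^sub>m na na"
          by (simp add: jordan_block_zero_pow_big)
        hence "elements_mat (jordan_block na a ^\<^sub>m k) \<subseteq> {0}" by auto
      }
      thus ?thesis by auto
    qed
    finally show "(?J ^\<^sub>m k) $$ (i,j) = 0\<^sub>m N N $$ (i,j)" using ij by (simp add: jordan_matrix_pow)
  qed (insert Jc, auto)
  thus ?thesis unfolding pow using P Q by simp
qed



lemma idx_div_mod: "j < n \<Longrightarrow> (i * n + j) div n = (i::nat)" "j < n \<Longrightarrow> (i * n + j) mod n = (j::nat)"
  by (simp_all add: add.commute[of "i * n"])

lemma idx_lt: "i < a \<Longrightarrow> j < n \<Longrightarrow> i * n + j < a * (n::nat)"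
proof -
  assume "i < a" "j < n"
  hence "i * n + j < i * n + n" by simp
  also have "\<dots> = Suc i * n" by simp
  also have "\<dots> \<le> a * n" using \<open>i < a\<close> by (intro mult_le_mono1, simp)
  finally show ?thesis .
qed

lemma sum_split: "(\<Sum>q<a * n. g q) = (\<Sum>i<a. \<Sum>j<n. g (i * n + (j::nat)))"
proof (induct a)
  case 0 thus ?case by simp
next
  case (Suc a)
  have "(\<Sum>q<Suc a * n. g q) = (\<Sum>q\<in>{0..<a * n}. g q) + (\<Sum>q\<in>{a * n..<a * n + n}. g q)"
    by (subst sum.atLeastLessThan_concat, auto simp: lessThan_atLeast0 add.commute)
  also have "(\<Sum>q\<in>{a * n..<a * n + n}. g q) = (\<Sum>j<n. g (a * n + j))"
  proof -
    have "(\<Sum>q\<in>{a * n..<a * n + n}. g q) = (\<Sum>q\<in>{0 + a * n..<n + a * n}. g q)" by (simp add: add.commute)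
    also have "\<dots> = (\<Sum>j\<in>{0..<n}. g (j + a * n))" by (rule sum.shift_bounds_nat_ivl)
    finally show ?thesis by (simp add: lessThan_atLeast0 add.commute)
  qed
  finally show ?case using Suc by (simp add: lessThan_atLeast0)
qed

lemma ip_self_real: "ip n R R = complex_of_real (\<Sum>i<n. \<Sum>j<n. (cmod (R $$ (i,j)))\<^sup>2)"
  unfolding ip_def of_real_sum complex_norm_square by (simp add: mult.commute)

definition vecm :: "nat \<Rightarrow> complex mat \<Rightarrow> complex vec" where
  "vecm n X = vec (n * n) (\<lambda>p. X $$ (p div n, p mod n))"

lemma unit_mat_unitE: "unit_mat n q = unitE n (q div n) (q mod n)"
  unfolding unit_mat_def unitE_def by (rule cong_mat, auto)

lemma kraus_linear: assumes k: "kraus n L f S" and X: "X \<in> carrier_mat n n" and ab: "a < n" "b < n"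
  shows "L X $$ (a,b) = (\<Sum>q<n * n. X $$ (q div n, q mod n) * L (unit_mat n q) $$ (a,b))"
proof -
  from k have fin: "finite S" and c: "\<And>x. x \<in> S \<Longrightarrow> f x \<in> carrier_mat n n"
    and L: "\<And>X. X \<in> carrier_mat n n \<Longrightarrow> L X = msum n (\<lambda>x. f x * X * mat_adjoint (f x)) S"
    by (auto simp: kraus_def)
  have "L X $$ (a,b) = (\<Sum>x\<in>S. (f x * X * mat_adjoint (f x)) $$ (a,b))" using ab by (simp add: L[OF X])
  also have "\<dots> = (\<Sum>x\<in>S. \<Sum>i<n. \<Sum>j<n. X $$ (i,j) * (f x $$ (a,i) * cnj (f x $$ (b,j))))"
  proof (rule sum.cong[OF refl])
    fix x assume x: "x \<in> S"
    have fX: "f x * X \<in> carrier_mat n n" using c[OF x] X by simp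
    have "(f x * X * mat_adjoint (f x)) $$ (a,b) = (\<Sum>l<n. (f x * X) $$ (a,l) * mat_adjoint (f x) $$ (l,b))"
      by (rule mult_index_sq[OF fX adj_carrier[OF c[OF x]] ab])
    also have "\<dots> = (\<Sum>l<n. (\<Sum>i<n. f x $$ (a,i) * X $$ (i,l)) * cnj (f x $$ (b,l)))"
      by (intro sum.cong refl, simp add: mult_index_sq[OF c[OF x] X] ab, insert c[OF x] ab, simp)
    also have "\<dots> = (\<Sum>l<n. \<Sum>i<n. X $$ (i,l) * (f x $$ (a,i) * cnj (f x $$ (b,l))))"
      by (intro sum.cong refl, simp add: sum_distrib_left sum_distrib_right mult_ac)
    also have "\<dots> = (\<Sum>i<n. \<Sum>l<n. X $$ (i,l) * (f x $$ (a,i) * cnj (f x $$ (b,l))))"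
      by (rule sum.swap)
    finally show "(f x * X * mat_adjoint (f x)) $$ (a,b) = (\<Sum>i<n. \<Sum>j<n. X $$ (i,j) * (f x $$ (a,i) * cnj (f x $$ (b,j))))" .
  qed
  also have "\<dots> = (\<Sum>i<n. \<Sum>x\<in>S. \<Sum>j<n. X $$ (i,j) * (f x $$ (a,i) * cnj (f x $$ (b,j))))" by (rule sum.swap)
  also have "\<dots> = (\<Sum>i<n. \<Sum>j<n. \<Sum>x\<in>S. X $$ (i,j) * (f x $$ (a,i) * cnj (f x $$ (b,j))))"
    by (intro sum.cong refl, rule sum.swap)
  also have "\<dots> = (\<Sum>i<n. \<Sum>j<n. X $$ (i,j) * L (unitE n i j) $$ (a,b))"
  proof (intro sum.cong refl)
    fix i j assume "i \<in> {..<n}" "j \<in> {..<n}"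
    hence ij: "i < n" "j < n" by auto
    have "L (unitE n i j) $$ (a,b) = (\<Sum>x\<in>S. (f x * unitE n i j * mat_adjoint (f x)) $$ (a,b))"
      using ab by (simp add: L unitE_def)
    also have "\<dots> = (\<Sum>x\<in>S. f x $$ (a,i) * cnj (f x $$ (b,j)))"
      by (intro sum.cong refl, rule sandwich_unit[OF c], simp_all add: ij ab)
    finally show "(\<Sum>x\<in>S. X $$ (i,j) * (f x $$ (a,i) * cnj (f x $$ (b,j)))) = X $$ (i,j) * L (unitE n i j) $$ (a,b)"
      by (simp add: sum_distrib_left)
  qed
  also have "\<dots> = (\<Sum>q<n * n. X $$ (q div n, q mod n) * L (unit_mat n q) $$ (a,b))"
    unfolding sum_split by (intro sum.cong refl, simp add: idx_div_mod unit_mat_unitE)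
  finally show ?thesis .
qed

lemma superop_vecm: assumes k: "kraus n L f S" and X: "X \<in> carrier_mat n n"
  shows "superop_mat n L *\<^sub>v vecm n X = vecm n (L X)"
proof (rule eq_vecI)
  fix p assume "p < dim_vec (vecm n (L X))"
  hence p: "p < n * n" by (simp add: vecm_def)
  hence n: "n > 0" by (cases n, auto)
  have pd: "p div n < n" "p mod n < n" using p n by (auto simp: less_mult_imp_div_less)
  have "(superop_mat n L *\<^sub>v vecm n X) $ p = (\<Sum>q<n * n. L (unit_mat n q) $$ (p div n, p mod n) * X $$ (q div n, q mod n))"
    using p unfolding mult_mat_vec_def scalar_prod_def
    by (simp add: superop_mat_def vecm_def lessThan_atLeast0[symmetric] atLeast0LessThan)
  also have "\<dots> = L X $$ (p div n, p mod n)"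
    by (subst kraus_linear[OF k X pd], simp add: mult.commute)
  finally show "(superop_mat n L *\<^sub>v vecm n X) $ p = vecm n (L X) $ p" using p by (simp add: vecm_def)
qed (simp add: vecm_def superop_mat_def)

lemma superop_pow_vecm: assumes k: "kraus n L f S" and X: "X \<in> carrier_mat n n"
  shows "(superop_mat n L ^\<^sub>m j) *\<^sub>v vecm n X = vecm n (comp_down (\<lambda>_. L) j X)"
  using X
proof (induct j arbitrary: X)
  case 0
  have "vecm n X \<in> carrier_vec (n * n)" by (simp add: vecm_def)
  thus ?case by (simp add: superop_mat_def)
next
  case (Suc j)
  have A: "superop_mat n L \<in> carrier_mat (n*n) (n*n)" by (simp add: superop_mat_def)
  have v: "vecm n X \<in> carrier_vec (n * n)" by (simp add: vecm_def)
  have LX: "L X \<in> carrier_mat n n" by (rule kraus_carrier[OF k Suc(2)])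
  have "(superop_mat n L ^\<^sub>m Suc j) *\<^sub>v vecm n X = (superop_mat n L ^\<^sub>m j) *\<^sub>v (superop_mat n L *\<^sub>v vecm n X)"
    by (simp add: assoc_mult_mat_vec[OF pow_carrier_mat[OF A] A v])
  also have "\<dots> = vecm n (comp_down (\<lambda>_. L) j (L X))" by (simp add: superop_vecm[OF k Suc(2)] Suc(1)[OF LX])
  finally show ?case by simp
qed

lemma gprod_append_const: assumes "set u \<subseteq> S" "set v \<subseteq> S" "\<And>x. x \<in> S \<Longrightarrow> f x \<in> carrier_mat n n"
  shows "gprod n (\<lambda>_. f) (u @ v) = gprod n (\<lambda>_. f) u * gprod n (\<lambda>_. f) v"
  using assms(1)
proof (induct u)
  case Nil
  have "gprod n (\<lambda>_. f) v \<in> carrier_mat n n"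
    by (rule gprod_carrier[of "length v" "\<lambda>_. S"], insert assms, auto simp: wsetF_const)
  thus ?case by simp
next
  case (Cons x u)
  have cu: "gprod n (\<lambda>_. f) u \<in> carrier_mat n n"
    by (rule gprod_carrier[of "length u" "\<lambda>_. S"], insert assms Cons, auto simp: wsetF_const)
  have cv: "gprod n (\<lambda>_. f) v \<in> carrier_mat n n"
    by (rule gprod_carrier[of "length v" "\<lambda>_. S"], insert assms, auto simp: wsetF_const)
  have cx: "f x \<in> carrier_mat n n" using Cons assms by auto
  show ?case using Cons by (simp add: assoc_mult_mat[OF cx cu cv])
qed

lemma one_in_span: assumes fin: "finite S" and c: "\<And>x. x \<in> S \<Longrightarrow> f x \<in> carrier_mat n n"
  and sp: "spanning n f S m"
shows "1\<^sub>m n \<in> lspan n (gprod n (\<lambda>_. f)) (wsetF (\<lambda>_. S) (m * k))"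
proof (induct k)
  case 0
  show ?case using lspan_base[of "{[]}" "[]" "gprod n (\<lambda>_. f)" n] by simp
next
  case (Suc k)
  let ?g = "gprod n (\<lambda>_. f)"
  have fW: "\<And>j. finite (wsetF (\<lambda>_. S) j)" by (rule finite_wsetF, simp add: fin)
  have cW: "\<And>j w. w \<in> wsetF (\<lambda>_. S) j \<Longrightarrow> ?g w \<in> carrier_mat n n"
  proof -
    fix j w assume "w \<in> wsetF (\<lambda>_. S) j"
    from gprod_carrier[of j "\<lambda>_. S" "\<lambda>_. f" n, OF _ this] c show "?g w \<in> carrier_mat n n" by blast
  qed
  have one: "1\<^sub>m n \<in> lspan n ?g (wsetF (\<lambda>_. S) m)" using sp by (auto simp: spanning_def)
  have "1\<^sub>m n * 1\<^sub>m n \<in> lspan n (\<lambda>p. ?g (fst p) * ?g (snd p)) (wsetF (\<lambda>_. S) m \<times> wsetF (\<lambda>_. S) (m * k))"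
    by (rule lspan_mult[OF fW fW cW cW one Suc])
  hence "1\<^sub>m n \<in> lspan n (\<lambda>p. ?g (fst p) * ?g (snd p)) (wsetF (\<lambda>_. S) m \<times> wsetF (\<lambda>_. S) (m * k))" by simp
  thus ?case
  proof (rule lspan_trans[rotated 3])
    fix p assume p: "p \<in> wsetF (\<lambda>_. S) m \<times> wsetF (\<lambda>_. S) (m * k)"
    hence uv: "fst p @ snd p \<in> wsetF (\<lambda>_. S) (m * Suc k)" by (auto simp: wsetF_const)
    have "?g (fst p) * ?g (snd p) = ?g (fst p @ snd p)"
      by (rule gprod_append_const[where S=S, symmetric], insert p, auto simp: wsetF_const c)
    thus "?g (fst p) * ?g (snd p) \<in> lspan n ?g (wsetF (\<lambda>_. S) (m * Suc k))"
      using lspan_base[OF fW uv, of ?g n] cW[OF uv] by simp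
  qed (simp_all add: fW)
qed

lemma words_zero: assumes k: "kraus n L f S" and z: "comp_down (\<lambda>_. L) K (1\<^sub>m n) = 0\<^sub>m n n"
  and w: "w \<in> wsetF (\<lambda>_. S) K"
  shows "gprod n (\<lambda>_. f) w = 0\<^sub>m n n"
proof -
  let ?g = "gprod n (\<lambda>_. f)"
  let ?W = "wsetF (\<lambda>_. S) K"
  have kK: "kraus n (comp_down (\<lambda>_. L) K) ?g ?W" by (rule kraus_comp_down, simp add: k)
  hence fin: "finite ?W" and c: "\<And>w. w \<in> ?W \<Longrightarrow> ?g w \<in> carrier_mat n n" by (auto simp: kraus_def)
  have eq: "comp_down (\<lambda>_. L) K (1\<^sub>m n) = msum n (\<lambda>w. ?g w * 1\<^sub>m n * mat_adjoint (?g w)) ?W"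
    using kK by (simp add: kraus_def)
  have "0 = (\<Sum>i<n. comp_down (\<lambda>_. L) K (1\<^sub>m n) $$ (i,i))" by (simp add: z)
  also have "\<dots> = (\<Sum>i<n. \<Sum>w\<in>?W. (?g w * 1\<^sub>m n * mat_adjoint (?g w)) $$ (i,i))"
    by (intro sum.cong refl, simp add: eq)
  also have "\<dots> = (\<Sum>w\<in>?W. \<Sum>i<n. (?g w * 1\<^sub>m n * mat_adjoint (?g w)) $$ (i,i))" by (rule sum.swap)
  also have "\<dots> = (\<Sum>w\<in>?W. ip n (?g w) (?g w))"
  proof (intro sum.cong refl)
    fix w assume w: "w \<in> ?W"
    have cw: "?g w \<in> carrier_mat n n" by (rule c[OF w])
    have e: "?g w * 1\<^sub>m n * mat_adjoint (?g w) = ?g w * mat_adjoint (?g w)" using cw by simp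
    show "(\<Sum>i<n. (?g w * 1\<^sub>m n * mat_adjoint (?g w)) $$ (i,i)) = ip n (?g w) (?g w)"
      unfolding ip_def e
    proof (intro sum.cong refl)
      fix i assume "i \<in> {..<n}" hence i: "i < n" by simp
      have "(?g w * mat_adjoint (?g w)) $$ (i,i) = (\<Sum>l<n. ?g w $$ (i,l) * mat_adjoint (?g w) $$ (l,i))"
        by (rule mult_index_sq[OF cw adj_carrier[OF cw] i i])
      also have "\<dots> = (\<Sum>l<n. cnj (?g w $$ (i,l)) * ?g w $$ (i,l))"
        using cw i by (intro sum.cong refl, simp add: mult.commute)
      finally show "(?g w * mat_adjoint (?g w)) $$ (i,i) = (\<Sum>l<n. cnj (?g w $$ (i,l)) * ?g w $$ (i,l))" .
    qed
  qed
  also have "\<dots> = complex_of_real (\<Sum>w\<in>?W. \<Sum>i<n. \<Sum>j<n. (cmod (?g w $$ (i,j)))\<^sup>2)"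
    by (simp only: ip_self_real of_real_sum)
  finally have "0 = complex_of_real (\<Sum>w\<in>?W. \<Sum>i<n. \<Sum>j<n. (cmod (?g w $$ (i,j)))\<^sup>2)" .
  hence "complex_of_real (\<Sum>w\<in>?W. \<Sum>i<n. \<Sum>j<n. (cmod (?g w $$ (i,j)))\<^sup>2) = 0"
    by (rule sym)
  hence "(\<Sum>w\<in>?W. \<Sum>i<n. \<Sum>j<n. (cmod (?g w $$ (i,j)))\<^sup>2) = 0"
    by (simp only: of_real_eq_0_iff)
  hence "(\<Sum>i<n. \<Sum>j<n. (cmod (?g w $$ (i,j)))\<^sup>2) = 0"
    using fin w by (subst (asm) sum_nonneg_eq_0_iff, auto intro!: sum_nonneg)
  hence "ip n (?g w) (?g w) = 0" by (simp add: ip_self_real)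
  thus ?thesis by (rule ip_self_zero[OF c[OF w]])
qed

lemma spec_pos_m: assumes k: "kraus n L f S" and sp: "spanning n f S m" and m: "m \<ge> 1" and n: "n > 0"
  shows "map_spectral_radius n L > 0"
proof (rule ccontr)
  assume "\<not> map_spectral_radius n L > 0"
  hence sr: "spectral_radius (superop_mat n L) \<le> 0" by (simp add: map_spectral_radius_def)
  from k have fin: "finite S" and c: "\<And>x. x \<in> S \<Longrightarrow> f x \<in> carrier_mat n n" by (auto simp: kraus_def)
  let ?N = "n * n"
  let ?K = "m * ?N"
  have A: "superop_mat n L \<in> carrier_mat ?N ?N" by (simp add: superop_mat_def)
  have N: "?N > 0" using n by simp
  have KN: "?N \<le> ?K" using m by simp
  have nil: "superop_mat n L ^\<^sub>m ?K = 0\<^sub>m ?N ?N" by (rule sr0_nilpotent[OF A N sr KN])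
  have z0: "0\<^sub>m ?N ?N *\<^sub>v vecm n (1\<^sub>m n) = 0\<^sub>v ?N"
    by (rule eq_vecI, simp_all add: vecm_def scalar_prod_def)
  have "vecm n (comp_down (\<lambda>_. L) ?K (1\<^sub>m n)) = 0\<^sub>v ?N"
    using superop_pow_vecm[OF k one_carrier_mat, of ?K] nil z0 by simp
  hence z: "comp_down (\<lambda>_. L) ?K (1\<^sub>m n) = 0\<^sub>m n n"
  proof -
    assume v: "vecm n (comp_down (\<lambda>_. L) ?K (1\<^sub>m n)) = 0\<^sub>v ?N"
    have cK: "comp_down (\<lambda>_. L) ?K (1\<^sub>m n) \<in> carrier_mat n n"
      using kraus_comp_down[where m="?K" and g="\<lambda>_. L" and F="\<lambda>_. f" and I="\<lambda>_. S"] k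
      by (auto simp: kraus_def)
    show ?thesis
    proof (rule eq_matI)
      fix i j assume "i < dim_row (0\<^sub>m n n :: complex mat)" "j < dim_col (0\<^sub>m n n :: complex mat)"
      hence ij: "i < n" "j < n" by auto
      have lt: "i * n + j < ?N" by (rule idx_lt[OF ij])
      from arg_cong[OF v, of "\<lambda>v. v $ (i * n + j)"] lt ij
      show "comp_down (\<lambda>_. L) ?K (1\<^sub>m n) $$ (i,j) = 0\<^sub>m n n $$ (i,j)"
        by (simp add: vecm_def idx_div_mod)
    qed (insert cK, auto)
  qed
  have "1\<^sub>m n \<in> lspan n (gprod n (\<lambda>_. f)) (wsetF (\<lambda>_. S) ?K)" by (rule one_in_span[OF fin c sp])
  from lspan_zero[OF words_zero[OF k z] this] have "1\<^sub>m n = (0\<^sub>m n n :: complex mat)" .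
  from arg_cong[OF this, of "\<lambda>A. A $$ (0,0)"] n show False by simp
qed

lemma spanning_0_big: assumes "n \<ge> 2" shows "\<not> spanning n f S 0"
proof
  assume "spanning n f S 0"
  hence "unitE n 0 1 \<in> lspan n (gprod n (\<lambda>_. f)) {[]}" by (auto simp: spanning_def unitE_def)
  then obtain c where "unitE n 0 1 = lc n c (gprod n (\<lambda>_. f)) {[]}" by (auto simp: lspan_def)
  from arg_cong[OF this, of "\<lambda>A. A $$ (0,1)"] assms show False by (simp add: unitE_def)
qed

lemma spanning_one: assumes fin: "finite S" and x: "x \<in> S" and c: "f x \<in> carrier_mat 1 1" and nz: "f x \<noteq> 0\<^sub>m 1 1"
  shows "spanning 1 f S 1"
  unfolding spanning_def
proof
  fix A :: "complex mat" assume A: "A \<in> carrier_mat 1 1"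
  have fx0: "f x $$ (0,0) \<noteq> 0"
  proof
    assume "f x $$ (0,0) = 0"
    hence "f x = 0\<^sub>m 1 1" using c by (intro eq_matI, auto)
    with nz show False by simp
  qed
  let ?c = "\<lambda>w. if w = [x] then A $$ (0,0) / f x $$ (0,0) else 0"
  have W: "[x] \<in> wsetF (\<lambda>_. S) 1" using x by (simp add: wsetF_const)
  have fW: "finite (wsetF (\<lambda>_. S) 1)" by (rule finite_wsetF, simp add: fin)
  have "A = lc 1 ?c (gprod 1 (\<lambda>_. f)) (wsetF (\<lambda>_. S) 1)"
  proof (rule eq_matI)
    fix i j assume "i < dim_row (lc 1 ?c (gprod 1 (\<lambda>_. f)) (wsetF (\<lambda>_. S) 1))" "j < dim_col (lc 1 ?c (gprod 1 (\<lambda>_. f)) (wsetF (\<lambda>_. S) 1))"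
    hence ij: "i = 0" "j = 0" by auto
    have "(\<Sum>w\<in>wsetF (\<lambda>_. S) 1. ?c w * gprod 1 (\<lambda>_. f) w $$ (0,0)) = ?c [x] * gprod 1 (\<lambda>_. f) [x] $$ (0,0)"
      by (rule sum.remove[OF fW W, THEN trans], simp)
    also have "\<dots> = A $$ (0,0)" using c fx0 by simp
    finally show "A $$ (i,j) = lc 1 ?c (gprod 1 (\<lambda>_. f)) (wsetF (\<lambda>_. S) 1) $$ (i,j)" using ij by simp
  qed (insert A, auto)
  thus "A \<in> lspan 1 (gprod 1 (\<lambda>_. f)) (wsetF (\<lambda>_. S) 1)" by (auto simp: lspan_def)
qed

lemma spec_pos: assumes k: "kraus n L f S" and sp: "spanning n f S m" and n: "n > 0"
  and nz: "n = 1 \<Longrightarrow> \<exists>x\<in>S. f x \<noteq> 0\<^sub>m 1 1"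
shows "map_spectral_radius n L > 0"
proof (cases "m \<ge> 1")
  case True thus ?thesis by (rule spec_pos_m[OF k sp _ n])
next
  case False
  hence m0: "m = 0" by simp
  show ?thesis
  proof (cases "n = 1")
    case True
    from nz[OF True] obtain x where x: "x \<in> S" "f x \<noteq> 0\<^sub>m 1 1" by blast
    from k x True have "finite S" "f x \<in> carrier_mat 1 1" by (auto simp: kraus_def)
    from spanning_one[of S x f, OF this(1) x(1) this(2) x(2)] True
    have "spanning n f S 1" by simp
    thus ?thesis by (rule spec_pos_m[OF k _ _ n], simp)
  next
    case False
    with n have "n \<ge> 2" by simp
    with sp m0 spanning_0_big[OF this] show ?thesis by blast
  qed
qed



section \<open>Matrix exponential\<close>

lemma pow_mat_add: assumes A: "A \<in> carrier_mat N N"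
  shows "A ^\<^sub>m (p + q) = A ^\<^sub>m p * A ^\<^sub>m q"
proof (induct q)
  case 0 thus ?case using A by simp
next
  case (Suc q)
  have "A ^\<^sub>m (p + Suc q) = A ^\<^sub>m (p + q) * A" by simp
  also have "\<dots> = A ^\<^sub>m p * A ^\<^sub>m q * A" by (simp add: Suc)
  also have "\<dots> = A ^\<^sub>m p * (A ^\<^sub>m q * A)" using A by (simp add: assoc_mult_mat[of _ N N _ N _ N])
  finally show ?case by simp
qed

lemma pow_mat_comm: assumes A: "A \<in> carrier_mat N N"
  shows "A * A ^\<^sub>m k = A ^\<^sub>m k * A"
proof -
  have "A ^\<^sub>m (1 + k) = A ^\<^sub>m (k + 1)" by (simp add: add.commute)
  thus ?thesis using pow_mat_add[OF A, of 1 k] pow_mat_add[OF A, of k 1] A by simp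
qed

lemma smult_pow_mat: assumes A: "A \<in> carrier_mat N N"
  shows "(z \<cdot>\<^sub>m A) ^\<^sub>m k = z ^ k \<cdot>\<^sub>m (A ^\<^sub>m k :: complex mat)"
proof (induct k)
  case 0 show ?case using A by (intro eq_matI, auto)
next
  case (Suc k)
  have "(z \<cdot>\<^sub>m A) ^\<^sub>m Suc k = (z ^ k \<cdot>\<^sub>m A ^\<^sub>m k) * (z \<cdot>\<^sub>m A)" by (simp add: Suc)
  also have "\<dots> = z ^ Suc k \<cdot>\<^sub>m (A ^\<^sub>m Suc k)"
    using A by (simp add: mult_smult_assoc_mat[of _ N N _ N] mult_smult_distrib[of _ N N _ N] smult_smult_m mult.commute)
  finally show ?case .
qed

lemma adj_pow_herm: assumes A: "(A::complex mat) \<in> carrier_mat N N" and h: "mat_adjoint A = A"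
  shows "mat_adjoint (A ^\<^sub>m k) = A ^\<^sub>m k"
proof (induct k)
  case 0 show ?case using A by simp
next
  case (Suc k)
  have "mat_adjoint (A ^\<^sub>m Suc k) = mat_adjoint A * mat_adjoint (A ^\<^sub>m k)"
    using A by (simp add: adj_mult[of _ N N _ N])
  also have "\<dots> = A * A ^\<^sub>m k" by (simp add: h Suc)
  finally show ?case using pow_mat_comm[OF A] by simp
qed

definition mabs :: "complex mat \<Rightarrow> real" where
  "mabs A = (\<Sum>i<dim_row A. \<Sum>j<dim_col A. cmod (A $$ (i,j)))"

lemma mabs_nonneg: "mabs A \<ge> 0" unfolding mabs_def by (intro sum_nonneg, simp)

lemma mabs_entry: "i < dim_row A \<Longrightarrow> j < dim_col A \<Longrightarrow> cmod (A $$ (i,j)) \<le> mabs A"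
proof -
  assume ij: "i < dim_row A" "j < dim_col A"
  have "cmod (A $$ (i,j)) \<le> (\<Sum>j<dim_col A. cmod (A $$ (i,j)))"
    by (rule member_le_sum[of j _ "\<lambda>j. cmod (A $$ (i,j))"], insert ij, auto)
  also have "\<dots> \<le> mabs A" unfolding mabs_def
    by (rule member_le_sum[of i _ "\<lambda>i. \<Sum>j<dim_col A. cmod (A $$ (i,j))"], insert ij, auto intro: sum_nonneg)
  finally show ?thesis .
qed

lemma mabs_col: assumes "j < dim_col A" shows "(\<Sum>l<dim_row A. cmod (A $$ (l,j))) \<le> mabs A"
proof -
  have "(\<Sum>l<dim_row A. cmod (A $$ (l,j))) \<le> (\<Sum>l<dim_row A. \<Sum>j<dim_col A. cmod (A $$ (l,j)))"
    by (intro sum_mono member_le_sum[of j _ "\<lambda>j. cmod (A $$ (_,j))"], insert assms, auto)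
  thus ?thesis by (simp add: mabs_def)
qed

lemma pow_entry_bound: assumes A: "A \<in> carrier_mat N N" and ij: "i < N" "j < N"
  shows "cmod ((A ^\<^sub>m k) $$ (i,j)) \<le> mabs A ^ k"
  using ij
proof (induct k arbitrary: j)
  case 0 thus ?case using A by simp
next
  case (Suc k)
  have "(A ^\<^sub>m Suc k) $$ (i,j) = (\<Sum>l<N. (A ^\<^sub>m k) $$ (i,l) * A $$ (l,j))"
    by (simp only: pow_mat.simps, rule mult_index_sq[OF pow_carrier_mat[OF A] A Suc(2,3)])
  hence "cmod ((A ^\<^sub>m Suc k) $$ (i,j)) \<le> (\<Sum>l<N. cmod ((A ^\<^sub>m k) $$ (i,l) * A $$ (l,j)))"
    by (simp only: norm_sum)
  also have "\<dots> = (\<Sum>l<N. cmod ((A ^\<^sub>m k) $$ (i,l)) * cmod (A $$ (l,j)))"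
    by (simp only: norm_mult)
  also have "\<dots> \<le> (\<Sum>l<N. mabs A ^ k * cmod (A $$ (l,j)))"
    by (intro sum_mono mult_right_mono, rule Suc(1), insert Suc(2), auto)
  also have "\<dots> = mabs A ^ k * (\<Sum>l<N. cmod (A $$ (l,j)))" by (simp add: sum_distrib_left)
  also have "\<dots> \<le> mabs A ^ k * mabs A"
    by (intro mult_left_mono, insert mabs_col[of j A] A Suc(3), auto simp: mabs_nonneg)
  finally show ?case by (simp add: mult.commute)
qed

lemma mexp_carrier[simp]: assumes "A \<in> carrier_mat N N" shows "mexp A \<in> carrier_mat N N"
proof -
  have "dim_row A = N" "dim_col A = N" using assms by auto
  thus ?thesis unfolding mexp_def by simp
qed

lemma mexp_index: "i < dim_row A \<Longrightarrow> j < dim_col A \<Longrightarrow> mexp A $$ (i,j) = (\<Sum>k. (A ^\<^sub>m k) $$ (i,j) / of_nat (fact k))"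
  by (simp add: mexp_def)

definition eterm :: "complex \<Rightarrow> complex mat \<Rightarrow> nat \<Rightarrow> nat \<Rightarrow> nat \<Rightarrow> complex" where
  "eterm z A i j k = z ^ k * (A ^\<^sub>m k) $$ (i,j) / of_nat (fact k)"

lemma eterm_summable: assumes A: "A \<in> carrier_mat N N" and ij: "i < N" "j < N"
  shows "summable (\<lambda>k. norm (eterm z A i j k))"
proof (rule summable_comparison_test[OF _ summable_exp[of "cmod z * mabs A"]])
  show "\<exists>M. \<forall>k\<ge>M. norm (norm (eterm z A i j k)) \<le> inverse (fact k) * (cmod z * mabs A) ^ k"
  proof (intro exI allI impI)
    fix k :: nat
    have "norm (norm (eterm z A i j k)) = cmod z ^ k * cmod ((A ^\<^sub>m k) $$ (i,j)) / fact k"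
      by (simp add: eterm_def norm_mult norm_divide norm_power)
    also have "\<dots> \<le> cmod z ^ k * mabs A ^ k / fact k"
      by (intro divide_right_mono mult_left_mono pow_entry_bound[OF A ij], auto)
    also have "\<dots> = inverse (fact k) * (cmod z * mabs A) ^ k" by (simp add: power_mult_distrib field_simps)
    finally show "norm (norm (eterm z A i j k)) \<le> inverse (fact k) * (cmod z * mabs A) ^ k" .
  qed
qed

lemma mexp_smult_index: assumes A: "A \<in> carrier_mat N N" and ij: "i < N" "j < N"
  shows "mexp (z \<cdot>\<^sub>m A) $$ (i,j) = (\<Sum>k. eterm z A i j k)"
proof -
  have "mexp (z \<cdot>\<^sub>m A) $$ (i,j) = (\<Sum>k. ((z \<cdot>\<^sub>m A) ^\<^sub>m k) $$ (i,j) / of_nat (fact k))"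
    using A ij by (simp add: mexp_index)
  also have "\<dots> = (\<Sum>k. eterm z A i j k)"
    by (rule arg_cong[of _ _ suminf], rule ext, insert A ij, simp add: smult_pow_mat[OF A] eterm_def)
  finally show ?thesis .
qed

lemma mexp_add: assumes A: "A \<in> carrier_mat N N"
  shows "mexp (a \<cdot>\<^sub>m A) * mexp (b \<cdot>\<^sub>m A) = mexp ((a + b) \<cdot>\<^sub>m A)"
proof (rule eq_matI)
  fix i j assume "i < dim_row (mexp ((a + b) \<cdot>\<^sub>m A))" "j < dim_col (mexp ((a + b) \<cdot>\<^sub>m A))"
  hence ij: "i < N" "j < N" using A by (auto simp: mexp_def)
  have cA: "mexp (a \<cdot>\<^sub>m A) \<in> carrier_mat N N" "mexp (b \<cdot>\<^sub>m A) \<in> carrier_mat N N" using A by simp_all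
  have "\<And>l. l < N \<Longrightarrow> (\<lambda>k. \<Sum>p\<le>k. eterm a A i l p * eterm b A l j (k - p)) sums
      (mexp (a \<cdot>\<^sub>m A) $$ (i,l) * mexp (b \<cdot>\<^sub>m A) $$ (l,j))"
    by (simp add: mexp_smult_index[OF A] ij, rule Cauchy_product_sums, auto intro: eterm_summable[OF A] ij)
  hence "(\<lambda>k. \<Sum>l<N. \<Sum>p\<le>k. eterm a A i l p * eterm b A l j (k - p)) sums
      (\<Sum>l<N. mexp (a \<cdot>\<^sub>m A) $$ (i,l) * mexp (b \<cdot>\<^sub>m A) $$ (l,j))"
    by (intro sums_sum, simp)
  also have "(\<Sum>l<N. mexp (a \<cdot>\<^sub>m A) $$ (i,l) * mexp (b \<cdot>\<^sub>m A) $$ (l,j)) = (mexp (a \<cdot>\<^sub>m A) * mexp (b \<cdot>\<^sub>m A)) $$ (i,j)"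
    by (rule mult_index_sq[OF cA ij, symmetric])
  also have "(\<lambda>k. \<Sum>l<N. \<Sum>p\<le>k. eterm a A i l p * eterm b A l j (k - p)) = (\<lambda>k. eterm (a + b) A i j k)"
  proof
    fix k
    have "(\<Sum>l<N. \<Sum>p\<le>k. eterm a A i l p * eterm b A l j (k - p))
      = (\<Sum>p\<le>k. \<Sum>l<N. (a ^ p * b ^ (k - p) / (of_nat (fact p) * of_nat (fact (k - p)))) * ((A ^\<^sub>m p) $$ (i,l) * (A ^\<^sub>m (k - p)) $$ (l,j)))"
      unfolding eterm_def by (subst sum.swap, intro sum.cong refl, simp add: field_simps)
    also have "\<dots> = (\<Sum>p\<le>k. (a ^ p * b ^ (k - p) / (of_nat (fact p) * of_nat (fact (k - p)))) * (A ^\<^sub>m k) $$ (i,j))"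
    proof (intro sum.cong refl)
      fix p assume "p \<in> {..k}"
      hence pk: "p + (k - p) = k" by simp
      have "(A ^\<^sub>m k) $$ (i,j) = (A ^\<^sub>m p * A ^\<^sub>m (k - p)) $$ (i,j)"
        using pow_mat_add[OF A, of p "k - p"] pk by simp
      also have "\<dots> = (\<Sum>l<N. (A ^\<^sub>m p) $$ (i,l) * (A ^\<^sub>m (k - p)) $$ (l,j))"
        by (rule mult_index_sq[OF pow_carrier_mat[OF A] pow_carrier_mat[OF A] ij])
      finally show "(\<Sum>l<N. (a ^ p * b ^ (k - p) / (of_nat (fact p) * of_nat (fact (k - p)))) * ((A ^\<^sub>m p) $$ (i,l) * (A ^\<^sub>m (k - p)) $$ (l,j)))
         = (a ^ p * b ^ (k - p) / (of_nat (fact p) * of_nat (fact (k - p)))) * (A ^\<^sub>m k) $$ (i,j)"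
        by (simp add: sum_distrib_left)
    qed
    also have "\<dots> = (\<Sum>p\<le>k. of_nat (k choose p) * a ^ p * b ^ (k - p)) * (A ^\<^sub>m k) $$ (i,j) / of_nat (fact k)"
    proof -
      have "\<And>p. p \<in> {..k} \<Longrightarrow> a ^ p * b ^ (k - p) / (of_nat (fact p) * of_nat (fact (k - p))) =
        of_nat (k choose p) * a ^ p * b ^ (k - p) / of_nat (fact k)"
      proof -
        fix p assume "p \<in> {..k}" hence pk: "p \<le> k" by simp
        have "(of_nat (k choose p) :: complex) = fact k / (fact p * fact (k - p))" by (rule binomial_fact[OF pk])
        thus "a ^ p * b ^ (k - p) / (of_nat (fact p) * of_nat (fact (k - p))) =
          of_nat (k choose p) * a ^ p * b ^ (k - p) / of_nat (fact k)"
          by (simp add: field_simps)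
      qed
      hence "(\<Sum>p\<le>k. (a ^ p * b ^ (k - p) / (of_nat (fact p) * of_nat (fact (k - p)))) * (A ^\<^sub>m k) $$ (i,j))
        = (\<Sum>p\<le>k. of_nat (k choose p) * a ^ p * b ^ (k - p) / of_nat (fact k) * (A ^\<^sub>m k) $$ (i,j))"
        by (intro sum.cong refl, simp)
      thus ?thesis by (simp add: sum_distrib_right sum_divide_distrib)
    qed
    also have "\<dots> = eterm (a + b) A i j k" by (simp add: binomial_ring eterm_def)
    finally show "(\<Sum>l<N. \<Sum>p\<le>k. eterm a A i l p * eterm b A l j (k - p)) = eterm (a + b) A i j k" .
  qed
  finally have "(\<lambda>k. eterm (a + b) A i j k) sums (mexp (a \<cdot>\<^sub>m A) * mexp (b \<cdot>\<^sub>m A)) $$ (i,j)" .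
  from sums_unique[OF this] show "(mexp (a \<cdot>\<^sub>m A) * mexp (b \<cdot>\<^sub>m A)) $$ (i,j) = mexp ((a + b) \<cdot>\<^sub>m A) $$ (i,j)"
    by (simp add: mexp_smult_index[OF A ij])
qed (insert A, auto simp: mexp_def)

lemma mexp_zero: assumes A: "A \<in> carrier_mat N N"
  shows "mexp (0 \<cdot>\<^sub>m A) = 1\<^sub>m N"
proof (rule eq_matI)
  fix i j assume "i < dim_row (1\<^sub>m N :: complex mat)" "j < dim_col (1\<^sub>m N :: complex mat)"
  hence ij: "i < N" "j < N" by auto
  have "mexp (0 \<cdot>\<^sub>m A) $$ (i,j) = (\<Sum>k. ((A ^\<^sub>m k) $$ (i,j) / of_nat (fact k)) * 0 ^ k)"
    unfolding mexp_smult_index[OF A ij] eterm_def by (simp add: mult.commute)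
  also have "\<dots> = (A ^\<^sub>m 0) $$ (i,j) / of_nat (fact 0)" by (rule powser_zero)
  finally show "mexp (0 \<cdot>\<^sub>m A) $$ (i,j) = 1\<^sub>m N $$ (i,j)" using A ij by simp
qed (insert A, auto simp: mexp_def)

lemma mexp_inv: assumes A: "A \<in> carrier_mat N N"
  shows "mexp (a \<cdot>\<^sub>m A) * mexp ((- a) \<cdot>\<^sub>m A) = 1\<^sub>m N"
  using mexp_add[OF A, of a "- a"] mexp_zero[OF A] by simp

lemma mexp_adj_herm: assumes A: "A \<in> carrier_mat N N" and h: "mat_adjoint A = A"
  shows "mat_adjoint (mexp (complex_of_real t \<cdot>\<^sub>m A)) = mexp (complex_of_real t \<cdot>\<^sub>m A)"
proof (rule eq_matI)
  fix i j assume "i < dim_row (mexp (complex_of_real t \<cdot>\<^sub>m A))" "j < dim_col (mexp (complex_of_real t \<cdot>\<^sub>m A))"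
  hence ij: "i < N" "j < N" using A by (auto simp: mexp_def)
  have d: "dim_row (mexp (complex_of_real t \<cdot>\<^sub>m A)) = N" "dim_col (mexp (complex_of_real t \<cdot>\<^sub>m A)) = N"
  proof -
    have "complex_of_real t \<cdot>\<^sub>m A \<in> carrier_mat N N" using A by simp
    from mexp_carrier[OF this] show "dim_row (mexp (complex_of_real t \<cdot>\<^sub>m A)) = N" "dim_col (mexp (complex_of_real t \<cdot>\<^sub>m A)) = N"
      by auto
  qed
  have "mat_adjoint (mexp (complex_of_real t \<cdot>\<^sub>m A)) $$ (i,j) = cnj (mexp (complex_of_real t \<cdot>\<^sub>m A) $$ (j,i))"
    using d ij by simp
  also have "\<dots> = cnj (\<Sum>k. eterm (complex_of_real t) A j i k)"
    by (simp add: mexp_smult_index[OF A ij(2,1)])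
  also have "\<dots> = (\<Sum>k. cnj (eterm (complex_of_real t) A j i k))"
  proof -
    have S: "summable (eterm (complex_of_real t) A j i)"
      by (rule summable_norm_cancel, rule eterm_summable[OF A ij(2,1)])
    have "(\<lambda>k. cnj (eterm (complex_of_real t) A j i k)) sums cnj (\<Sum>k. eterm (complex_of_real t) A j i k)"
      unfolding sums_cnj by (rule summable_sums[OF S])
    thus ?thesis by (rule sums_unique)
  qed
  also have "\<dots> = (\<Sum>k. eterm (complex_of_real t) A i j k)"
  proof (rule arg_cong[of _ _ suminf], rule ext)
    fix k
    have "cnj ((A ^\<^sub>m k) $$ (j,i)) = mat_adjoint (A ^\<^sub>m k) $$ (i,j)" using A ij by simp
    also have "\<dots> = (A ^\<^sub>m k) $$ (i,j)" by (simp add: adj_pow_herm[OF A h])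
    finally show "cnj (eterm (complex_of_real t) A j i k) = eterm (complex_of_real t) A i j k"
      by (simp add: eterm_def)
  qed
  finally show "mat_adjoint (mexp (complex_of_real t \<cdot>\<^sub>m A)) $$ (i,j) = mexp (complex_of_real t \<cdot>\<^sub>m A) $$ (i,j)"
    by (simp add: mexp_smult_index[OF A ij])
qed (insert A, auto simp: mexp_def)



lemma smult_mult_smult: assumes "A \<in> carrier_mat N N" "B \<in> carrier_mat N N"
  shows "(a \<cdot>\<^sub>m A) * (b \<cdot>\<^sub>m B) = (a * b) \<cdot>\<^sub>m (A * (B :: complex mat))"
  using assms by (simp add: mult_smult_assoc_mat[of _ N N _ N] mult_smult_distrib[of _ N N _ N] smult_smult_m mult.commute)

lemma trace_self_adj: assumes E: "E \<in> carrier_mat d d"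
  shows "mtrace (E * mat_adjoint E) = complex_of_real (\<Sum>i<d. \<Sum>j<d. (cmod (E $$ (i,j)))\<^sup>2)"
proof -
  have "mtrace (E * mat_adjoint E) = (\<Sum>i<d. (E * mat_adjoint E) $$ (i,i))"
    using E by (simp add: mtrace_def)
  also have "\<dots> = (\<Sum>i<d. \<Sum>j<d. cnj (E $$ (i,j)) * E $$ (i,j))"
  proof (intro sum.cong refl)
    fix i assume "i \<in> {..<d}" hence i: "i < d" by simp
    have "(E * mat_adjoint E) $$ (i,i) = (\<Sum>l<d. E $$ (i,l) * mat_adjoint E $$ (l,i))"
      by (rule mult_index_sq[OF E adj_carrier[OF E] i i])
    also have "\<dots> = (\<Sum>l<d. cnj (E $$ (i,l)) * E $$ (i,l))"
      using E i by (intro sum.cong refl, simp add: mult.commute)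
    finally show "(E * mat_adjoint E) $$ (i,i) = (\<Sum>j<d. cnj (E $$ (i,j)) * E $$ (i,j))" .
  qed
  also have "\<dots> = ip d E E" by (simp add: ip_def)
  finally show ?thesis by (simp add: ip_self_real)
qed

lemma gibbs_factor: assumes H: "H \<in> carrier_mat d d" and h: "mat_adjoint H = H" and d: "d > 0"
  shows "\<exists>Q Qi. Q \<in> carrier_mat d d \<and> Qi \<in> carrier_mat d d \<and> Q * Qi = 1\<^sub>m d \<and> gibbs_pow H b s = Q * mat_adjoint Q"
proof -
  define E where "E t = mexp (complex_of_real t \<cdot>\<^sub>m H)" for t
  have cE: "\<And>t. E t \<in> carrier_mat d d" unfolding E_def using H by simp
  have aE: "\<And>t. mat_adjoint (E t) = E t" unfolding E_def by (rule mexp_adj_herm[OF H h])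
  have addE: "\<And>x y. E x * E y = E (x + y)" unfolding E_def using mexp_add[OF H] by (simp add: of_real_add)
  have E0: "E 0 = 1\<^sub>m d" unfolding E_def using mexp_zero[OF H] by simp
  have Enz: "\<And>t. E t \<noteq> 0\<^sub>m d d"
  proof
    fix t assume "E t = 0\<^sub>m d d"
    hence "E t * E (- t) = 0\<^sub>m d d" using left_mult_zero_mat[OF cE[of "- t"], of d] by simp
    hence "(1\<^sub>m d :: complex mat) = 0\<^sub>m d d" using addE[of t "- t"] E0 by simp
    from arg_cong[OF this, of "\<lambda>A. A $$ (0,0)"] d show False by simp
  qed
  define Z where "Z = Re (mtrace (mexp ((- complex_of_real b) \<cdot>\<^sub>m H)))"
  have "mexp ((- complex_of_real b) \<cdot>\<^sub>m H) = E (- b)" by (simp add: E_def)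
  also have "\<dots> = E (- b / 2) * mat_adjoint (E (- b / 2))" by (simp add: aE addE)
  finally have "Z = (\<Sum>i<d. \<Sum>j<d. (cmod (E (- b / 2) $$ (i,j)))\<^sup>2)"
    unfolding Z_def by (simp add: trace_self_adj[OF cE])
  moreover have "(\<Sum>i<d. \<Sum>j<d. (cmod (E (- b / 2) $$ (i,j)))\<^sup>2) \<noteq> 0"
  proof
    assume "(\<Sum>i<d. \<Sum>j<d. (cmod (E (- b / 2) $$ (i,j)))\<^sup>2) = 0"
    hence "ip d (E (- b / 2)) (E (- b / 2)) = 0" by (simp add: ip_self_real)
    from ip_self_zero[OF cE this] Enz show False by blast
  qed
  ultimately have Z0: "Z \<noteq> 0" by simp
  define c where "c = 1 / (Z powr s)"
  have c: "c > 0" unfolding c_def using Z0 by simp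
  define u where "u = - (s * b) / 2"
  define Q where "Q = complex_of_real (sqrt c) \<cdot>\<^sub>m E u"
  define Qi where "Qi = complex_of_real (1 / sqrt c) \<cdot>\<^sub>m E (- u)"
  have cQ: "Q \<in> carrier_mat d d" "Qi \<in> carrier_mat d d" unfolding Q_def Qi_def using cE by simp_all
  have "Q * Qi = complex_of_real (sqrt c * (1 / sqrt c)) \<cdot>\<^sub>m (E u * E (- u))"
    unfolding Q_def Qi_def by (simp add: smult_mult_smult[OF cE cE])
  also have "\<dots> = 1\<^sub>m d" using c by (simp add: addE E0, intro eq_matI, auto)
  finally have QQi: "Q * Qi = 1\<^sub>m d" .
  have sc: "complex_of_real (sqrt c) * complex_of_real (sqrt c) = complex_of_real c" using c by (simp flip: of_real_mult)
  have "Q * mat_adjoint Q = (complex_of_real (sqrt c) * complex_of_real (sqrt c)) \<cdot>\<^sub>m (E u * E u)"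
    unfolding Q_def by (simp add: adj_smult aE smult_mult_smult[OF cE cE])
  also have "\<dots> = complex_of_real c \<cdot>\<^sub>m E (- (s * b))" unfolding sc by (simp add: addE u_def mult.commute)
  also have "\<dots> = gibbs_pow H b s" unfolding gibbs_pow_def E_def c_def Z_def by (simp only: of_real_minus)
  finally have "gibbs_pow H b s = Q * mat_adjoint Q" by simp
  with cQ QQi show ?thesis by blast
qed

lemma mexp_nonzero: assumes A: "A \<in> carrier_mat N N" and N: "N > 0"
  shows "mexp (a \<cdot>\<^sub>m A) \<noteq> 0\<^sub>m N N"
proof
  assume z: "mexp (a \<cdot>\<^sub>m A) = 0\<^sub>m N N"
  have "mexp (a \<cdot>\<^sub>m A) * mexp ((- a) \<cdot>\<^sub>m A) = 1\<^sub>m N" by (rule mexp_inv[OF A])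
  moreover have "mexp ((- a) \<cdot>\<^sub>m A) \<in> carrier_mat N N" using A by simp
  ultimately have "(1\<^sub>m N :: complex mat) = 0\<^sub>m N N" using z by simp
  from arg_cong[OF this, of "\<lambda>A. A $$ (0,0)"] N show False by simp
qed



section \<open>Partial trace computations\<close>

lemma triple_index: assumes A: "A \<in> carrier_mat N N" and B: "B \<in> carrier_mat N N" and C: "C \<in> carrier_mat N N"
  and ab: "a < N" "b < N"
  shows "(A * B * mat_adjoint C) $$ (a,b) = (\<Sum>r<N. \<Sum>s<N. A $$ (a,r) * B $$ (r,s) * cnj (C $$ (b,s)))"
proof -
  have AB: "A * B \<in> carrier_mat N N" using A B by simp
  have "(A * B * mat_adjoint C) $$ (a,b) = (\<Sum>s<N. (A * B) $$ (a,s) * mat_adjoint C $$ (s,b))"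
    by (rule mult_index_sq[OF AB adj_carrier[OF C] ab])
  also have "\<dots> = (\<Sum>s<N. (\<Sum>r<N. A $$ (a,r) * B $$ (r,s)) * cnj (C $$ (b,s)))"
    using C ab by (intro sum.cong refl, simp add: mult_index_sq[OF A B])
  also have "\<dots> = (\<Sum>s<N. \<Sum>r<N. A $$ (a,r) * B $$ (r,s) * cnj (C $$ (b,s)))"
    by (simp add: sum_distrib_right)
  also have "\<dots> = (\<Sum>r<N. \<Sum>s<N. A $$ (a,r) * B $$ (r,s) * cnj (C $$ (b,s)))"
    by (rule sum.swap)
  finally show ?thesis .
qed

lemma mult_adj_index: assumes A: "A \<in> carrier_mat N N" and ab: "a < N" "b < N"
  shows "(A * mat_adjoint A) $$ (a,b) = (\<Sum>m<N. A $$ (a,m) * cnj (A $$ (b,m)))"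
proof -
  have "(A * mat_adjoint A) $$ (a,b) = (\<Sum>m<N. A $$ (a,m) * mat_adjoint A $$ (m,b))"
    by (rule mult_index_sq[OF A adj_carrier[OF A] ab])
  also have "\<dots> = (\<Sum>m<N. A $$ (a,m) * cnj (A $$ (b,m)))"
    using A ab by (intro sum.cong refl, simp)
  finally show ?thesis .
qed

lemma sum_split2: "(\<Sum>r<n * d. \<Sum>s<n * d. f r s) = (\<Sum>i1<n. \<Sum>c<d. \<Sum>j1<n. \<Sum>e<d. f (i1 * d + c) (j1 * d + (e::nat)))"
  by (simp add: sum_split)

lemma kron_index_blk: assumes A: "A \<in> carrier_mat n n" and B: "B \<in> carrier_mat d d"
  and "i < n" "k < d" "i' < n" "k' < d"
  shows "kron A B $$ (i * d + k, i' * d + k') = A $$ (i,i') * B $$ (k,k')"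
proof -
  have "i * d + k < n * d" "i' * d + k' < n * d" using assms by (auto intro: idx_lt)
  thus ?thesis using assms by (simp add: kron_def idx_div_mod)
qed

lemma kron_carrier[simp]: "A \<in> carrier_mat n n \<Longrightarrow> B \<in> carrier_mat d d \<Longrightarrow> kron A B \<in> carrier_mat (n * d) (n * d)"
  by (simp add: kron_def carrier_matD)

lemma ptrace2_index: "i < n \<Longrightarrow> j < n \<Longrightarrow> ptrace2 n d A $$ (i,j) = (\<Sum>k<d. A $$ (i * d + k, j * d + k))"
  by (simp add: ptrace2_def)

lemma ptrace2_carrier[simp]: "ptrace2 n d A \<in> carrier_mat n n"
  by (simp add: ptrace2_def)

definition Kr :: "nat \<Rightarrow> nat \<Rightarrow> complex mat \<Rightarrow> complex mat \<Rightarrow> complex mat \<Rightarrow> nat \<times> nat \<Rightarrow> complex mat" where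
  "Kr n d V Q T p = mat n n (\<lambda>(i,i1). \<Sum>k'<d. \<Sum>c<d. cnj (T $$ (k', snd p)) * Q $$ (c, fst p) * V $$ (i * d + k', i1 * d + c))"

lemma Kr_carrier[simp]: "Kr n d V Q T p \<in> carrier_mat n n"
  by (simp add: Kr_def)

lemma gen_lhs: assumes V: "V \<in> carrier_mat (n * d) (n * d)" and Q: "Q \<in> carrier_mat d d" and T: "T \<in> carrier_mat d d"
  and X: "X \<in> carrier_mat n n" and ij: "i < n" "j < n"
  shows "ptrace2 n d (kron (1\<^sub>m n) (T * mat_adjoint T) * (V * kron X (Q * mat_adjoint Q) * mat_adjoint V)) $$ (i,j)
   = (\<Sum>k<d. \<Sum>k'<d. \<Sum>i1<n. \<Sum>c<d. \<Sum>j1<n. \<Sum>e<d. \<Sum>l<d. \<Sum>m<d.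
        T $$ (k,m) * cnj (T $$ (k',m)) * Q $$ (c,l) * cnj (Q $$ (e,l)) *
        V $$ (i * d + k', i1 * d + c) * X $$ (i1,j1) * cnj (V $$ (j * d + k, j1 * d + e)))"
proof -
  let ?S = "T * mat_adjoint T"
  let ?P = "Q * mat_adjoint Q"
  let ?K = "kron X ?P"
  let ?Y = "V * ?K * mat_adjoint V"
  have cS: "?S \<in> carrier_mat d d" using T by simp
  have cP: "?P \<in> carrier_mat d d" using Q by simp
  have cK: "?K \<in> carrier_mat (n * d) (n * d)" using X cP by simp
  have cY: "?Y \<in> carrier_mat (n * d) (n * d)" using V cK by (meson adj_carrier mult_carrier_mat)
  have c1S: "kron (1\<^sub>m n) ?S \<in> carrier_mat (n * d) (n * d)" using cS by simp
  have Sidx: "\<And>k k'. k < d \<Longrightarrow> k' < d \<Longrightarrow> ?S $$ (k,k') = (\<Sum>m<d. T $$ (k,m) * cnj (T $$ (k',m)))"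
    by (rule mult_adj_index[OF T])
  have Pidx: "\<And>c e. c < d \<Longrightarrow> e < d \<Longrightarrow> ?P $$ (c,e) = (\<Sum>l<d. Q $$ (c,l) * cnj (Q $$ (e,l)))"
    by (rule mult_adj_index[OF Q])
  have L1: "\<And>k. k < d \<Longrightarrow> (kron (1\<^sub>m n) ?S * ?Y) $$ (i * d + k, j * d + k) = (\<Sum>k'<d. ?S $$ (k,k') * ?Y $$ (i * d + k', j * d + k))"
  proof -
    fix k assume k: "k < d"
    have a: "i * d + k < n * d" "j * d + k < n * d" using ij k by (auto intro: idx_lt)
    have "(kron (1\<^sub>m n) ?S * ?Y) $$ (i * d + k, j * d + k) = (\<Sum>R<n * d. kron (1\<^sub>m n) ?S $$ (i * d + k, R) * ?Y $$ (R, j * d + k))"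
      by (rule mult_index_sq[OF c1S cY a])
    also have "\<dots> = (\<Sum>i'<n. \<Sum>k'<d. kron (1\<^sub>m n) ?S $$ (i * d + k, i' * d + k') * ?Y $$ (i' * d + k', j * d + k))"
      by (rule sum_split)
    also have "\<dots> = (\<Sum>i'<n. \<Sum>k'<d. (if i = i' then ?S $$ (k,k') * ?Y $$ (i' * d + k', j * d + k) else 0))"
      using ij k by (intro sum.cong refl, simp add: kron_index_blk[OF one_carrier_mat cS])
    also have "\<dots> = (\<Sum>i'<n. if i = i' then (\<Sum>k'<d. ?S $$ (k,k') * ?Y $$ (i' * d + k', j * d + k)) else 0)"
      by (intro sum.cong refl, simp)
    also have "\<dots> = (\<Sum>k'<d. ?S $$ (k,k') * ?Y $$ (i * d + k', j * d + k))"
      using ij by simp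
    finally show "(kron (1\<^sub>m n) ?S * ?Y) $$ (i * d + k, j * d + k) = (\<Sum>k'<d. ?S $$ (k,k') * ?Y $$ (i * d + k', j * d + k))" .
  qed
  have L2: "\<And>k k'. k < d \<Longrightarrow> k' < d \<Longrightarrow> ?Y $$ (i * d + k', j * d + k) =
     (\<Sum>i1<n. \<Sum>c<d. \<Sum>j1<n. \<Sum>e<d. V $$ (i * d + k', i1 * d + c) * (X $$ (i1,j1) * ?P $$ (c,e)) * cnj (V $$ (j * d + k, j1 * d + e)))"
  proof -
    fix k k' assume k: "k < d" "k' < d"
    have a: "i * d + k' < n * d" "j * d + k < n * d" using ij k by (auto intro: idx_lt)
    have "?Y $$ (i * d + k', j * d + k) = (\<Sum>r<n * d. \<Sum>s<n * d. V $$ (i * d + k', r) * ?K $$ (r,s) * cnj (V $$ (j * d + k, s)))"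
      by (rule triple_index[OF V cK V a])
    also have "\<dots> = (\<Sum>i1<n. \<Sum>c<d. \<Sum>j1<n. \<Sum>e<d. V $$ (i * d + k', i1 * d + c) * ?K $$ (i1 * d + c, j1 * d + e) * cnj (V $$ (j * d + k, j1 * d + e)))"
      by (rule sum_split2)
    also have "\<dots> = (\<Sum>i1<n. \<Sum>c<d. \<Sum>j1<n. \<Sum>e<d. V $$ (i * d + k', i1 * d + c) * (X $$ (i1,j1) * ?P $$ (c,e)) * cnj (V $$ (j * d + k, j1 * d + e)))"
      by (intro sum.cong refl, simp add: kron_index_blk[OF X cP])
    finally show "?Y $$ (i * d + k', j * d + k) =
     (\<Sum>i1<n. \<Sum>c<d. \<Sum>j1<n. \<Sum>e<d. V $$ (i * d + k', i1 * d + c) * (X $$ (i1,j1) * ?P $$ (c,e)) * cnj (V $$ (j * d + k, j1 * d + e)))" .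
  qed
  have "ptrace2 n d (kron (1\<^sub>m n) ?S * ?Y) $$ (i,j) = (\<Sum>k<d. (kron (1\<^sub>m n) ?S * ?Y) $$ (i * d + k, j * d + k))"
    by (rule ptrace2_index[OF ij])
  also have "\<dots> = (\<Sum>k<d. \<Sum>k'<d. ?S $$ (k,k') *
     (\<Sum>i1<n. \<Sum>c<d. \<Sum>j1<n. \<Sum>e<d. V $$ (i * d + k', i1 * d + c) * (X $$ (i1,j1) * ?P $$ (c,e)) * cnj (V $$ (j * d + k, j1 * d + e))))"
    by (intro sum.cong refl, simp add: L1 L2)
  also have "\<dots> = (\<Sum>k<d. \<Sum>k'<d. \<Sum>i1<n. \<Sum>c<d. \<Sum>j1<n. \<Sum>e<d. \<Sum>l<d. \<Sum>m<d.
        T $$ (k,m) * cnj (T $$ (k',m)) * Q $$ (c,l) * cnj (Q $$ (e,l)) *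
        V $$ (i * d + k', i1 * d + c) * X $$ (i1,j1) * cnj (V $$ (j * d + k, j1 * d + e)))"
    by (intro sum.cong refl, simp add: Sidx Pidx sum_distrib_left sum_distrib_right mult_ac)
  finally show ?thesis .
qed

lemma perm8: "(\<Sum>k<d. \<Sum>k'<d. \<Sum>i1<n. \<Sum>c<d. \<Sum>j1<n. \<Sum>e<d. \<Sum>l<d. \<Sum>m<d. g k k' i1 c j1 e l m)
  = (\<Sum>l<d. \<Sum>m<d. \<Sum>i1<n. \<Sum>j1<n. \<Sum>k'<d. \<Sum>c<d. \<Sum>k<d. \<Sum>e<(d::nat). g k k' i1 c j1 e l (m::nat))"
proof -
  let ?D = "{..<d}" and ?N = "{..<n}"
  have L: "(\<Sum>k<d. \<Sum>k'<d. \<Sum>i1<n. \<Sum>c<d. \<Sum>j1<n. \<Sum>e<d. \<Sum>l<d. \<Sum>m<d. g k k' i1 c j1 e l m)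
    = (\<Sum>(k,k',i1,c,j1,e,l,m) \<in> ?D \<times> ?D \<times> ?N \<times> ?D \<times> ?N \<times> ?D \<times> ?D \<times> ?D. g k k' i1 c j1 e l m)"
    by (simp only: sum.cartesian_product split_def)
  have R: "(\<Sum>l<d. \<Sum>m<d. \<Sum>i1<n. \<Sum>j1<n. \<Sum>k'<d. \<Sum>c<d. \<Sum>k<d. \<Sum>e<d. g k k' i1 c j1 e l m)
    = (\<Sum>(l,m,i1,j1,k',c,k,e) \<in> ?D \<times> ?D \<times> ?N \<times> ?N \<times> ?D \<times> ?D \<times> ?D \<times> ?D. g k k' i1 c j1 e l m)"
    by (simp only: sum.cartesian_product split_def)
  show ?thesis unfolding L R
    by (rule sum.reindex_bij_witness[where i = "\<lambda>(l,m,i1,j1,k',c,k,e). (k,k',i1,c,j1,e,l,m)"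
         and j = "\<lambda>(k,k',i1,c,j1,e,l,m). (l,m,i1,j1,k',c,k,e)"], auto)
qed

lemma gen_rhs: assumes V: "V \<in> carrier_mat (n * d) (n * d)" and Q: "Q \<in> carrier_mat d d" and T: "T \<in> carrier_mat d d"
  and X: "X \<in> carrier_mat n n" and ij: "i < n" "j < n"
  shows "msum n (\<lambda>p. Kr n d V Q T p * X * mat_adjoint (Kr n d V Q T p)) ({..<d} \<times> {..<d}) $$ (i,j)
   = (\<Sum>l<d. \<Sum>m<d. \<Sum>i1<n. \<Sum>j1<n. \<Sum>k'<d. \<Sum>c<d. \<Sum>k<d. \<Sum>e<d.
        T $$ (k,m) * cnj (T $$ (k',m)) * Q $$ (c,l) * cnj (Q $$ (e,l)) *
        V $$ (i * d + k', i1 * d + c) * X $$ (i1,j1) * cnj (V $$ (j * d + k, j1 * d + e)))"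
proof -
  have "msum n (\<lambda>p. Kr n d V Q T p * X * mat_adjoint (Kr n d V Q T p)) ({..<d} \<times> {..<d}) $$ (i,j)
    = (\<Sum>p\<in>{..<d} \<times> {..<d}. (Kr n d V Q T p * X * mat_adjoint (Kr n d V Q T p)) $$ (i,j))"
    using ij by simp
  also have "\<dots> = (\<Sum>l<d. \<Sum>m<d. (Kr n d V Q T (l,m) * X * mat_adjoint (Kr n d V Q T (l,m))) $$ (i,j))"
    by (simp add: sum.cartesian_product)
  also have "\<dots> = (\<Sum>l<d. \<Sum>m<d. \<Sum>i1<n. \<Sum>j1<n. Kr n d V Q T (l,m) $$ (i,i1) * X $$ (i1,j1) * cnj (Kr n d V Q T (l,m) $$ (j,j1)))"
    by (intro sum.cong refl, rule triple_index[OF Kr_carrier X Kr_carrier ij])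
  also have "\<dots> = (\<Sum>l<d. \<Sum>m<d. \<Sum>i1<n. \<Sum>j1<n. \<Sum>k'<d. \<Sum>c<d. \<Sum>k<d. \<Sum>e<d.
        T $$ (k,m) * cnj (T $$ (k',m)) * Q $$ (c,l) * cnj (Q $$ (e,l)) *
        V $$ (i * d + k', i1 * d + c) * X $$ (i1,j1) * cnj (V $$ (j * d + k, j1 * d + e)))"
  proof (intro sum.cong refl)
    fix l m i1 j1 assume "l \<in> {..<d}" "m \<in> {..<d}" "i1 \<in> {..<n}" "j1 \<in> {..<n}"
    hence b: "i1 < n" "j1 < n" by auto
    show "Kr n d V Q T (l,m) $$ (i,i1) * X $$ (i1,j1) * cnj (Kr n d V Q T (l,m) $$ (j,j1)) =
      (\<Sum>k'<d. \<Sum>c<d. \<Sum>k<d. \<Sum>e<d.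
        T $$ (k,m) * cnj (T $$ (k',m)) * Q $$ (c,l) * cnj (Q $$ (e,l)) *
        V $$ (i * d + k', i1 * d + c) * X $$ (i1,j1) * cnj (V $$ (j * d + k, j1 * d + e)))"
      using ij b by (simp add: Kr_def cnj_sum sum_distrib_left sum_distrib_right mult_ac)
  qed
  finally show ?thesis .
qed

lemma gen_kraus: assumes V: "V \<in> carrier_mat (n * d) (n * d)" and Q: "Q \<in> carrier_mat d d" and T: "T \<in> carrier_mat d d"
  and X: "X \<in> carrier_mat n n"
  shows "ptrace2 n d (kron (1\<^sub>m n) (T * mat_adjoint T) * (V * kron X (Q * mat_adjoint Q) * mat_adjoint V))
    = msum n (\<lambda>p. Kr n d V Q T p * X * mat_adjoint (Kr n d V Q T p)) ({..<d} \<times> {..<d})"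
proof (rule eq_matI)
  fix i j assume "i < dim_row (msum n (\<lambda>p. Kr n d V Q T p * X * mat_adjoint (Kr n d V Q T p)) ({..<d} \<times> {..<d}))"
    "j < dim_col (msum n (\<lambda>p. Kr n d V Q T p * X * mat_adjoint (Kr n d V Q T p)) ({..<d} \<times> {..<d}))"
  hence ij: "i < n" "j < n" by auto
  show "ptrace2 n d (kron (1\<^sub>m n) (T * mat_adjoint T) * (V * kron X (Q * mat_adjoint Q) * mat_adjoint V)) $$ (i,j)
    = msum n (\<lambda>p. Kr n d V Q T p * X * mat_adjoint (Kr n d V Q T p)) ({..<d} \<times> {..<d}) $$ (i,j)"
    unfolding gen_lhs[OF V Q T X ij] gen_rhs[OF V Q T X ij] by (rule perm8)
qed (simp_all add: ptrace2_def)



definition blk :: "nat \<Rightarrow> nat \<Rightarrow> complex mat \<Rightarrow> nat \<times> nat \<Rightarrow> complex mat" where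
  "blk n d V q = mat n n (\<lambda>(i,i1). V $$ (i * d + fst q, i1 * d + snd q))"

lemma blk_carrier[simp]: "blk n d V q \<in> carrier_mat n n"
  by (simp add: blk_def)

lemma blk_dim[simp]: "dim_row (blk n d V q) = n" "dim_col (blk n d V q) = n"
  by (simp_all add: blk_def)

lemma Kr_dim[simp]: "dim_row (Kr n d V Q T p) = n" "dim_col (Kr n d V Q T p) = n"
  by (simp_all add: Kr_def)

lemma sum_prod_split: "(\<Sum>x\<in>A \<times> B. g x) = (\<Sum>a\<in>A. \<Sum>b\<in>B. g (a,b))"
  by (simp add: sum.cartesian_product)

lemma Kr_in_span: "Kr n d V Q T p \<in> lspan n (blk n d V) ({..<d} \<times> {..<d})"
proof -
  have "Kr n d V Q T p = lc n (\<lambda>q. cnj (T $$ (fst q, snd p)) * Q $$ (snd q, fst p)) (blk n d V) ({..<d} \<times> {..<d})"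
  proof (rule eq_matI)
    fix i i1 assume "i < dim_row (lc n (\<lambda>q. cnj (T $$ (fst q, snd p)) * Q $$ (snd q, fst p)) (blk n d V) ({..<d} \<times> {..<d}))"
      "i1 < dim_col (lc n (\<lambda>q. cnj (T $$ (fst q, snd p)) * Q $$ (snd q, fst p)) (blk n d V) ({..<d} \<times> {..<d}))"
    hence ii: "i < n" "i1 < n" by auto
    show "Kr n d V Q T p $$ (i,i1) = lc n (\<lambda>q. cnj (T $$ (fst q, snd p)) * Q $$ (snd q, fst p)) (blk n d V) ({..<d} \<times> {..<d}) $$ (i,i1)"
      using ii by (simp add: Kr_def blk_def sum.cartesian_product case_prod_beta)
  qed simp_all
  thus ?thesis by (auto simp: lspan_def)
qed

lemma blk_in_span: assumes Q: "Q \<in> carrier_mat d d" and Qi: "Qi \<in> carrier_mat d d" and QQ: "Q * Qi = 1\<^sub>m d"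
  and T: "T \<in> carrier_mat d d" and Ti: "Ti \<in> carrier_mat d d" and TT: "T * Ti = 1\<^sub>m d"
  and q: "fst q < d" "snd q < d"
  shows "blk n d V q \<in> lspan n (Kr n d V Q T) ({..<d} \<times> {..<d})"
proof -
  obtain k0 c0 where q0: "q = (k0, c0)" by (cases q)
  with q have k0: "k0 < d" and c0: "c0 < d" by auto
  let ?co = "\<lambda>p. Qi $$ (fst p, c0) * cnj (Ti $$ (snd p, k0))"
  have Qd: "\<And>c. c < d \<Longrightarrow> (\<Sum>l<d. Q $$ (c,l) * Qi $$ (l,c0)) = (if c = c0 then 1 else 0)"
  proof -
    fix c assume c: "c < d"
    have "(\<Sum>l<d. Q $$ (c,l) * Qi $$ (l,c0)) = (Q * Qi) $$ (c,c0)" by (rule mult_index_sq[OF Q Qi c c0, symmetric])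
    thus "(\<Sum>l<d. Q $$ (c,l) * Qi $$ (l,c0)) = (if c = c0 then 1 else 0)" using c c0 by (simp add: QQ)
  qed
  have Td: "\<And>k. k < d \<Longrightarrow> (\<Sum>m<d. cnj (T $$ (k,m)) * cnj (Ti $$ (m,k0))) = (if k = k0 then 1 else 0)"
  proof -
    fix k assume k: "k < d"
    have "(\<Sum>m<d. T $$ (k,m) * Ti $$ (m,k0)) = (T * Ti) $$ (k,k0)" by (rule mult_index_sq[OF T Ti k k0, symmetric])
    hence "(\<Sum>m<d. T $$ (k,m) * Ti $$ (m,k0)) = (if k = k0 then 1 else 0)" using k k0 by (simp add: TT)
    hence "cnj (\<Sum>m<d. T $$ (k,m) * Ti $$ (m,k0)) = (if k = k0 then 1 else 0)" by simp
    thus "(\<Sum>m<d. cnj (T $$ (k,m)) * cnj (Ti $$ (m,k0))) = (if k = k0 then 1 else 0)" by (simp add: cnj_sum)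
  qed
  have "blk n d V q = lc n ?co (Kr n d V Q T) ({..<d} \<times> {..<d})"
  proof (rule eq_matI)
    fix i i1 assume "i < dim_row (lc n ?co (Kr n d V Q T) ({..<d} \<times> {..<d}))"
      "i1 < dim_col (lc n ?co (Kr n d V Q T) ({..<d} \<times> {..<d}))"
    hence ii: "i < n" "i1 < n" by auto
    let ?v = "\<lambda>k c. V $$ (i * d + k, i1 * d + c)"
    have "lc n ?co (Kr n d V Q T) ({..<d} \<times> {..<d}) $$ (i,i1)
      = (\<Sum>x\<in>{..<d} \<times> {..<d}. ?co x * Kr n d V Q T x $$ (i,i1))" using ii by simp
    also have "\<dots> = (\<Sum>l<d. \<Sum>m<d. ?co (l,m) * Kr n d V Q T (l,m) $$ (i,i1))" by (rule sum_prod_split)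
    also have "\<dots> = (\<Sum>l<d. \<Sum>m<d. Qi $$ (l, c0) * cnj (Ti $$ (m, k0)) * (\<Sum>k<d. \<Sum>c<d. cnj (T $$ (k, m)) * Q $$ (c, l) * ?v k c))"
      using ii by (intro sum.cong refl, simp add: Kr_def)
    also have "\<dots> = (\<Sum>l<d. \<Sum>m<d. \<Sum>k<d. \<Sum>c<d. (Q $$ (c,l) * Qi $$ (l, c0)) * (cnj (T $$ (k, m)) * cnj (Ti $$ (m, k0))) * ?v k c)"
      by (simp add: sum_distrib_left mult_ac)
    also have "\<dots> = (\<Sum>k<d. \<Sum>c<d. \<Sum>m<d. \<Sum>l<d. (Q $$ (c,l) * Qi $$ (l, c0)) * (cnj (T $$ (k, m)) * cnj (Ti $$ (m, k0))) * ?v k c)"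
    proof -
      have L: "(\<Sum>l<d. \<Sum>m<d. \<Sum>k<d. \<Sum>c<d. (Q $$ (c,l) * Qi $$ (l, c0)) * (cnj (T $$ (k, m)) * cnj (Ti $$ (m, k0))) * ?v k c)
        = (\<Sum>(l,m,k,c) \<in> {..<d} \<times> {..<d} \<times> {..<d} \<times> {..<d}. (Q $$ (c,l) * Qi $$ (l, c0)) * (cnj (T $$ (k, m)) * cnj (Ti $$ (m, k0))) * ?v k c)"
        by (simp only: sum.cartesian_product split_def)
      have R: "(\<Sum>k<d. \<Sum>c<d. \<Sum>m<d. \<Sum>l<d. (Q $$ (c,l) * Qi $$ (l, c0)) * (cnj (T $$ (k, m)) * cnj (Ti $$ (m, k0))) * ?v k c)
        = (\<Sum>(k,c,m,l) \<in> {..<d} \<times> {..<d} \<times> {..<d} \<times> {..<d}. (Q $$ (c,l) * Qi $$ (l, c0)) * (cnj (T $$ (k, m)) * cnj (Ti $$ (m, k0))) * ?v k c)"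
        by (simp only: sum.cartesian_product split_def)
      show ?thesis unfolding L R
        by (rule sum.reindex_bij_witness[where i = "\<lambda>(k,c,m,l). (l,m,k,c)" and j = "\<lambda>(l,m,k,c). (k,c,m,l)"], auto)
    qed
    also have "\<dots> = (\<Sum>k<d. \<Sum>c<d. (\<Sum>l<d. Q $$ (c,l) * Qi $$ (l, c0)) * (\<Sum>m<d. cnj (T $$ (k, m)) * cnj (Ti $$ (m, k0))) * ?v k c)"
      by (simp add: sum_distrib_left sum_distrib_right sum_product mult_ac)
    also have "\<dots> = (\<Sum>k<d. \<Sum>c<d. (if c = c0 then 1 else 0) * (if k = k0 then 1 else 0) * ?v k c)"
      by (intro sum.cong refl, simp add: Qd Td)
    also have "\<dots> = (\<Sum>k<d. \<Sum>c<d. if k = k0 \<and> c = c0 then ?v k c else 0)"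
      by (intro sum.cong refl) simp
    also have "\<dots> = (\<Sum>k<d. if k = k0 then ?v k c0 else 0)"
    proof (intro sum.cong refl)
      fix k show "(\<Sum>c<d. if k = k0 \<and> c = c0 then ?v k c else 0) = (if k = k0 then ?v k c0 else 0)"
        using c0 by (cases "k = k0") simp_all
    qed
    also have "\<dots> = ?v k0 c0" using k0 by simp
    finally show "blk n d V q $$ (i,i1) = lc n ?co (Kr n d V Q T) ({..<d} \<times> {..<d}) $$ (i,i1)"
      using ii by (simp add: blk_def q0)
  qed simp_all
  thus ?thesis by (auto simp: lspan_def)
qed

lemma blk_adj: assumes U: "U \<in> carrier_mat (n * d) (n * d)" and q: "fst q < d" "snd q < d"
  shows "blk n d (mat_adjoint U) q = mat_adjoint (blk n d U (snd q, fst q))"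
proof (rule eq_matI)
  fix i i1 assume "i < dim_row (mat_adjoint (blk n d U (snd q, fst q)))" "i1 < dim_col (mat_adjoint (blk n d U (snd q, fst q)))"
  hence ii: "i < n" "i1 < n" by auto
  have a: "i * d + fst q < n * d" "i1 * d + snd q < n * d" using ii q by (auto intro: idx_lt)
  show "blk n d (mat_adjoint U) q $$ (i,i1) = mat_adjoint (blk n d U (snd q, fst q)) $$ (i,i1)"
    using ii a U by (simp add: blk_def)
qed simp_all

lemma blk_nonzero: assumes U: "U \<in> carrier_mat (n * d) (n * d)" and nz: "U \<noteq> 0\<^sub>m (n * d) (n * d)"
  shows "\<exists>q \<in> {..<d} \<times> {..<d}. blk n d U q \<noteq> 0\<^sub>m n n"
proof (rule ccontr)
  assume "\<not> ?thesis"
  hence z: "\<And>q. q \<in> {..<d} \<times> {..<d} \<Longrightarrow> blk n d U q = 0\<^sub>m n n" by blast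
  have "U = 0\<^sub>m (n * d) (n * d)"
  proof (rule eq_matI)
    fix p r assume "p < dim_row (0\<^sub>m (n * d) (n * d) :: complex mat)" "r < dim_col (0\<^sub>m (n * d) (n * d) :: complex mat)"
    hence pr: "p < n * d" "r < n * d" by auto
    hence d: "d > 0" by (cases d, auto)
    have md: "p mod d < d" "r mod d < d" using d by auto
    have dd: "p div d < n" "r div d < n" using pr by (auto simp: less_mult_imp_div_less)
    have "blk n d U (p mod d, r mod d) $$ (p div d, r div d) = 0" using z[of "(p mod d, r mod d)"] md dd by simp
    moreover have "blk n d U (p mod d, r mod d) $$ (p div d, r div d) = U $$ (p, r)"
      using dd by (simp add: blk_def)
    ultimately show "U $$ (p, r) = 0\<^sub>m (n * d) (n * d) $$ (p, r)" using pr by simp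
  qed (insert U, auto)
  with nz show False by simp
qed

lemma lspan_nonzero: assumes "A \<in> lspan n f S" "A \<noteq> 0\<^sub>m n n" shows "\<exists>x\<in>S. f x \<noteq> 0\<^sub>m n n"
  using lspan_zero[of S f n A] assms by blast

lemma one_mult_entry: assumes "A \<in> carrier_mat 1 1" "B \<in> carrier_mat 1 1"
  shows "(A * B) $$ (0,0) = A $$ (0,0) * B $$ (0,0)"
  using mult_index_sq[OF assms, of 0 0] by simp

lemma one_nonzero: assumes "A \<in> carrier_mat 1 1" shows "A \<noteq> 0\<^sub>m 1 1 \<longleftrightarrow> A $$ (0,0) \<noteq> 0"
proof
  assume "A \<noteq> 0\<^sub>m 1 1"
  thus "A $$ (0,0) \<noteq> 0" using assms by (auto intro!: eq_matI)
qed (insert assms, auto)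

lemma gprod_one_nonzero: "(\<And>j. j < length w \<Longrightarrow> F j (w ! j) \<in> carrier_mat 1 1 \<and> F j (w ! j) \<noteq> 0\<^sub>m 1 1) \<Longrightarrow>
  gprod 1 F w \<noteq> 0\<^sub>m 1 1"
proof (induct w arbitrary: F)
  case Nil thus ?case by (auto dest: arg_cong[of _ _ "\<lambda>A. A $$ (0,0)"])
next
  case (Cons x w)
  have IH: "gprod 1 (\<lambda>j. F (Suc j)) w \<noteq> 0\<^sub>m 1 1" by (rule Cons(1), insert Cons(2), force)
  have c: "gprod 1 (\<lambda>j. F (Suc j)) w \<in> carrier_mat 1 1" by (rule gprod_carrier', insert Cons(2), force)
  have x: "F 0 x \<in> carrier_mat 1 1" "F 0 x \<noteq> 0\<^sub>m 1 1" using Cons(2)[of 0] by auto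
  have a: "F 0 x $$ (0,0) \<noteq> 0" using one_nonzero[OF x(1)] x(2) by simp
  have b: "gprod 1 (\<lambda>j. F (Suc j)) w $$ (0,0) \<noteq> 0" using one_nonzero[OF c] IH by simp
  have "(F 0 x * gprod 1 (\<lambda>j. F (Suc j)) w) $$ (0,0) \<noteq> 0"
    unfolding one_mult_entry[OF x(1) c] using a b by simp
  moreover have "F 0 x * gprod 1 (\<lambda>j. F (Suc j)) w \<in> carrier_mat 1 1" using x c by simp
  ultimately have "F 0 x * gprod 1 (\<lambda>j. F (Suc j)) w \<noteq> 0\<^sub>m 1 1" using one_nonzero by blast
  thus ?case by simp
qed

lemma kron_one_one: "kron (1\<^sub>m n) (1\<^sub>m d) = (1\<^sub>m (n * d) :: complex mat)"
proof (rule eq_matI)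
  fix p r assume "p < dim_row (1\<^sub>m (n * d) :: complex mat)" "r < dim_col (1\<^sub>m (n * d) :: complex mat)"
  hence pr: "p < n * d" "r < n * d" by auto
  hence d: "d > 0" by (cases d, auto)
  have dd: "p div d < n" "r div d < n" using pr by (auto simp: less_mult_imp_div_less)
  have md: "p mod d < d" "r mod d < d" using d by auto
  have "(p div d = r div d \<and> p mod d = r mod d) = (p = r)"
    by (metis div_mult_mod_eq)
  thus "kron (1\<^sub>m n) (1\<^sub>m d) $$ (p, r) = 1\<^sub>m (n * d) $$ (p, r)"
    using pr dd md by (auto simp: kron_def)
qed (simp_all add: kron_def)



lemma G_carrier: assumes "self_adjoint dS HS" "self_adjoint d HE" "self_adjoint (dS * d) V"
  shows "kron HS (1\<^sub>m d) + kron (1\<^sub>m dS) HE + V \<in> carrier_mat (dS * d) (dS * d)"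
proof -
  have "HS \<in> carrier_mat dS dS" "HE \<in> carrier_mat d d" "V \<in> carrier_mat (dS * d) (dS * d)"
    using assms by (auto simp: self_adjoint_def)
  thus ?thesis by simp
qed

lemma Uint_carrier: assumes "self_adjoint dS HS" "self_adjoint d HE" "self_adjoint (dS * d) V"
  shows "Uint dS d HS HE V t \<in> carrier_mat (dS * d) (dS * d)"
  unfolding Uint_def by (rule mexp_carrier, simp add: G_carrier[OF assms])

lemma Uint_nonzero: assumes "self_adjoint dS HS" "self_adjoint d HE" "self_adjoint (dS * d) V"
  and "dS > 0" "d > 0"
  shows "Uint dS d HS HE V t \<noteq> 0\<^sub>m (dS * d) (dS * d)"
  unfolding Uint_def by (rule mexp_nonzero[OF G_carrier[OF assms(1-3)]], simp add: assms)

lemma Lj_kraus: assumes sa: "self_adjoint dS HS" "self_adjoint (dE j) (HE j)" "self_adjoint (dS * dE j) (V j)"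
  and pos: "dS > 0" "dE j > 0"
  shows "\<exists>Q. Q \<in> carrier_mat (dE j) (dE j) \<and>
     kraus dS (Lj dS dE HS HE V \<tau> \<beta> \<zeta> j) (Kr dS (dE j) (Uint dS (dE j) HS (HE j) (V j) (\<tau> j)) Q (1\<^sub>m (dE j)))
       ({..<dE j} \<times> {..<dE j})"
proof -
  let ?d = "dE j"
  let ?U = "Uint dS (dE j) HS (HE j) (V j) (\<tau> j)"
  have H: "HE j \<in> carrier_mat ?d ?d" "mat_adjoint (HE j) = HE j" using sa by (auto simp: self_adjoint_def)
  from gibbs_factor[OF H pos(2), of "\<beta> - \<zeta> j" 1] obtain Q Qi where Q: "Q \<in> carrier_mat ?d ?d"
    and g: "gibbs_pow (HE j) (\<beta> - \<zeta> j) 1 = Q * mat_adjoint Q" by blast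
  have U: "?U \<in> carrier_mat (dS * ?d) (dS * ?d)" by (rule Uint_carrier[OF sa])
  have "kraus dS (Lj dS dE HS HE V \<tau> \<beta> \<zeta> j) (Kr dS ?d ?U Q (1\<^sub>m ?d)) ({..<?d} \<times> {..<?d})"
    unfolding kraus_def
  proof (intro conjI ballI)
    fix X :: "complex mat" assume X: "X \<in> carrier_mat dS dS"
    have Y: "?U * kron X (Q * mat_adjoint Q) * mat_adjoint ?U \<in> carrier_mat (dS * ?d) (dS * ?d)"
      using U X Q by (meson adj_carrier kron_carrier mult_carrier_mat)
    have "Lj dS dE HS HE V \<tau> \<beta> \<zeta> j X = ptrace2 dS ?d (?U * kron X (Q * mat_adjoint Q) * mat_adjoint ?U)"
      by (simp add: Lj_def Let_def gibbs_def g)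
    also have "\<dots> = ptrace2 dS ?d (kron (1\<^sub>m dS) (1\<^sub>m ?d * mat_adjoint (1\<^sub>m ?d)) * (?U * kron X (Q * mat_adjoint Q) * mat_adjoint ?U))"
      using Y by (simp add: kron_one_one left_mult_one_mat[OF Y])
    also have "\<dots> = msum dS (\<lambda>p. Kr dS ?d ?U Q (1\<^sub>m ?d) p * X * mat_adjoint (Kr dS ?d ?U Q (1\<^sub>m ?d) p)) ({..<?d} \<times> {..<?d})"
      by (rule gen_kraus[OF U Q one_carrier_mat X])
    finally show "Lj dS dE HS HE V \<tau> \<beta> \<zeta> j X = msum dS (\<lambda>p. Kr dS ?d ?U Q (1\<^sub>m ?d) p * X * mat_adjoint (Kr dS ?d ?U Q (1\<^sub>m ?d) p)) ({..<?d} \<times> {..<?d})" .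
  qed simp_all
  with Q show ?thesis by blast
qed

lemma Ljd_kraus: assumes sa: "self_adjoint dS HS" "self_adjoint (dE j) (HE j)" "self_adjoint (dS * dE j) (V j)"
  and pos: "dS > 0" "dE j > 0"
  shows "\<exists>Q T. kraus dS (Ljd dS dE HS HE V \<tau> \<beta> \<zeta> \<alpha> j)
       (Kr dS (dE j) (mat_adjoint (Uint dS (dE j) HS (HE j) (V j) (\<tau> j))) Q T) ({..<dE j} \<times> {..<dE j})
     \<and> (\<forall>q \<in> {..<dE j} \<times> {..<dE j}. mat_adjoint (blk dS (dE j) (Uint dS (dE j) HS (HE j) (V j) (\<tau> j)) q)
          \<in> lspan dS (Kr dS (dE j) (mat_adjoint (Uint dS (dE j) HS (HE j) (V j) (\<tau> j))) Q T) ({..<dE j} \<times> {..<dE j}))"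
proof -
  let ?d = "dE j"
  let ?U = "Uint dS (dE j) HS (HE j) (V j) (\<tau> j)"
  let ?W = "mat_adjoint ?U"
  have H: "HE j \<in> carrier_mat ?d ?d" "mat_adjoint (HE j) = HE j" using sa by (auto simp: self_adjoint_def)
  from gibbs_factor[OF H pos(2), of "\<beta> - \<zeta> j" "\<alpha> j"] obtain Q Qi where Q: "Q \<in> carrier_mat ?d ?d"
    and Qi: "Qi \<in> carrier_mat ?d ?d" and QQ: "Q * Qi = 1\<^sub>m ?d"
    and gQ: "gibbs_pow (HE j) (\<beta> - \<zeta> j) (\<alpha> j) = Q * mat_adjoint Q" by blast
  from gibbs_factor[OF H pos(2), of "\<beta> - \<zeta> j" "1 - \<alpha> j"] obtain T Ti where T: "T \<in> carrier_mat ?d ?d"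
    and Ti: "Ti \<in> carrier_mat ?d ?d" and TT: "T * Ti = 1\<^sub>m ?d"
    and gT: "gibbs_pow (HE j) (\<beta> - \<zeta> j) (1 - \<alpha> j) = T * mat_adjoint T" by blast
  have U: "?U \<in> carrier_mat (dS * ?d) (dS * ?d)" by (rule Uint_carrier[OF sa])
  have W: "?W \<in> carrier_mat (dS * ?d) (dS * ?d)" using U by simp
  have k: "kraus dS (Ljd dS dE HS HE V \<tau> \<beta> \<zeta> \<alpha> j) (Kr dS ?d ?W Q T) ({..<?d} \<times> {..<?d})"
    unfolding kraus_def
  proof (intro conjI ballI)
    fix X :: "complex mat" assume X: "X \<in> carrier_mat dS dS"
    have "Ljd dS dE HS HE V \<tau> \<beta> \<zeta> \<alpha> j X = ptrace2 dS ?d (kron (1\<^sub>m dS) (T * mat_adjoint T) * (?W * kron X (Q * mat_adjoint Q) * mat_adjoint ?W))"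
      by (simp add: Ljd_def Let_def gQ gT)
    also have "\<dots> = msum dS (\<lambda>p. Kr dS ?d ?W Q T p * X * mat_adjoint (Kr dS ?d ?W Q T p)) ({..<?d} \<times> {..<?d})"
      by (rule gen_kraus[OF W Q T X])
    finally show "Ljd dS dE HS HE V \<tau> \<beta> \<zeta> \<alpha> j X = msum dS (\<lambda>p. Kr dS ?d ?W Q T p * X * mat_adjoint (Kr dS ?d ?W Q T p)) ({..<?d} \<times> {..<?d})" .
  qed simp_all
  have "\<forall>q \<in> {..<?d} \<times> {..<?d}. mat_adjoint (blk dS ?d ?U q) \<in> lspan dS (Kr dS ?d ?W Q T) ({..<?d} \<times> {..<?d})"
  proof
    fix q assume q: "q \<in> {..<?d} \<times> {..<?d}"
    obtain a b where qab: "q = (a, b)" by (cases q)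
    have "blk dS ?d ?W (b, a) = mat_adjoint (blk dS ?d ?U (a, b))"
      using blk_adj[OF U, of "(b,a)"] q qab by simp
    moreover have "blk dS ?d ?W (b, a) \<in> lspan dS (Kr dS ?d ?W Q T) ({..<?d} \<times> {..<?d})"
      by (rule blk_in_span[OF Q Qi QQ T Ti TT], insert q qab, auto)
    ultimately show "mat_adjoint (blk dS ?d ?U q) \<in> lspan dS (Kr dS ?d ?W Q T) ({..<?d} \<times> {..<?d})"
      using qab by simp
  qed
  with k show ?thesis by blast
qed



lemma adj_nonzero: assumes "(A::complex mat) \<noteq> 0\<^sub>m n n" shows "mat_adjoint A \<noteq> 0\<^sub>m n n"
proof
  assume "mat_adjoint A = 0\<^sub>m n n"
  hence "mat_adjoint (mat_adjoint A) = 0\<^sub>m n n" by simp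
  with assms show False by simp
qed

locale setting =
  fixes M dS :: nat and dE :: "nat \<Rightarrow> nat" and HS :: "complex mat" and HE V :: "nat \<Rightarrow> complex mat"
    and \<tau> :: "nat \<Rightarrow> real" and \<beta> :: real
  assumes M: "M \<ge> 1" and dS: "dS > 0" and dE: "\<And>j. j < M \<Longrightarrow> dE j > 0"
    and saS: "self_adjoint dS HS" and saE: "\<And>j. j < M \<Longrightarrow> self_adjoint (dE j) (HE j)"
    and saV: "\<And>j. j < M \<Longrightarrow> self_adjoint (dS * dE j) (V j)"
begin

definition "Uf j = Uint dS (dE j) HS (HE j) (V j) (\<tau> j)"
definition "Dj j = {..<dE j} \<times> {..<dE j}"
definition "Bf j = blk dS (dE j) (Uf j)"

lemma finD: "finite (Dj j)" by (simp add: Dj_def)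
lemma cB: "Bf j q \<in> carrier_mat dS dS" by (simp add: Bf_def)

lemma Bf_nonzero: "j < M \<Longrightarrow> \<exists>q\<in>Dj j. Bf j q \<noteq> 0\<^sub>m dS dS"
  unfolding Bf_def Dj_def Uf_def
  by (rule blk_nonzero[OF Uint_carrier[OF saS saE saV] Uint_nonzero[OF saS saE saV dS dE]])

lemma KS_exists: "\<exists>KS. \<forall>j<M. kraus dS (Lj dS dE HS HE V \<tau> \<beta> \<zeta> j) (KS j) (Dj j) \<and> (\<forall>p. KS j p \<in> lspan dS (Bf j) (Dj j))"
proof -
  have "\<forall>j. \<exists>Q. j < M \<longrightarrow> Q \<in> carrier_mat (dE j) (dE j) \<and>
     kraus dS (Lj dS dE HS HE V \<tau> \<beta> \<zeta> j) (Kr dS (dE j) (Uf j) Q (1\<^sub>m (dE j))) (Dj j)"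
  proof
    fix j show "\<exists>Q. j < M \<longrightarrow> Q \<in> carrier_mat (dE j) (dE j) \<and>
     kraus dS (Lj dS dE HS HE V \<tau> \<beta> \<zeta> j) (Kr dS (dE j) (Uf j) Q (1\<^sub>m (dE j))) (Dj j)"
    proof (cases "j < M")
      case True
      from Lj_kraus[where dE=dE and HE=HE and V=V and j=j, OF saS saE[OF True] saV[OF True] dS dE[OF True], of \<tau> \<beta> \<zeta>]
      show ?thesis unfolding Uf_def Dj_def by blast
    qed simp
  qed
  from choice[OF this] obtain Qf where Qf: "\<And>j. j < M \<Longrightarrow>
     kraus dS (Lj dS dE HS HE V \<tau> \<beta> \<zeta> j) (Kr dS (dE j) (Uf j) (Qf j) (1\<^sub>m (dE j))) (Dj j)" by blast
  show ?thesis
    by (rule exI[of _ "\<lambda>j. Kr dS (dE j) (Uf j) (Qf j) (1\<^sub>m (dE j))"], insert Qf, auto simp: Bf_def Dj_def Kr_in_span)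
qed

lemma KD_exists: "\<exists>KD. \<forall>j<M. kraus dS (Ljd dS dE HS HE V \<tau> \<beta> \<zeta> \<alpha> j) (KD j) (Dj j) \<and>
   (\<forall>q\<in>Dj j. mat_adjoint (Bf j q) \<in> lspan dS (KD j) (Dj j)) \<and> (\<forall>p. KD j p \<in> carrier_mat dS dS)"
proof -
  have "\<forall>j. \<exists>QT. j < M \<longrightarrow> kraus dS (Ljd dS dE HS HE V \<tau> \<beta> \<zeta> \<alpha> j) (Kr dS (dE j) (mat_adjoint (Uf j)) (fst QT) (snd QT)) (Dj j) \<and>
     (\<forall>q\<in>Dj j. mat_adjoint (Bf j q) \<in> lspan dS (Kr dS (dE j) (mat_adjoint (Uf j)) (fst QT) (snd QT)) (Dj j))"
  proof
    fix j show "\<exists>QT. j < M \<longrightarrow> kraus dS (Ljd dS dE HS HE V \<tau> \<beta> \<zeta> \<alpha> j) (Kr dS (dE j) (mat_adjoint (Uf j)) (fst QT) (snd QT)) (Dj j) \<and>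
     (\<forall>q\<in>Dj j. mat_adjoint (Bf j q) \<in> lspan dS (Kr dS (dE j) (mat_adjoint (Uf j)) (fst QT) (snd QT)) (Dj j))"
    proof (cases "j < M")
      case True
      from Ljd_kraus[where dE=dE and HE=HE and V=V and j=j, OF saS saE[OF True] saV[OF True] dS dE[OF True], of \<tau> \<beta> \<zeta> \<alpha>]
      obtain Q T where "kraus dS (Ljd dS dE HS HE V \<tau> \<beta> \<zeta> \<alpha> j) (Kr dS (dE j) (mat_adjoint (Uf j)) Q T) (Dj j) \<and>
        (\<forall>q\<in>Dj j. mat_adjoint (Bf j q) \<in> lspan dS (Kr dS (dE j) (mat_adjoint (Uf j)) Q T) (Dj j))"
        unfolding Uf_def Dj_def Bf_def by blast
      thus ?thesis by (intro exI[of _ "(Q,T)"], simp)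
    qed simp
  qed
  from choice[OF this] obtain QTf where QTf: "\<And>j. j < M \<Longrightarrow>
    kraus dS (Ljd dS dE HS HE V \<tau> \<beta> \<zeta> \<alpha> j) (Kr dS (dE j) (mat_adjoint (Uf j)) (fst (QTf j)) (snd (QTf j))) (Dj j) \<and>
     (\<forall>q\<in>Dj j. mat_adjoint (Bf j q) \<in> lspan dS (Kr dS (dE j) (mat_adjoint (Uf j)) (fst (QTf j)) (snd (QTf j))) (Dj j))" by blast
  show ?thesis
    by (rule exI[of _ "\<lambda>j. Kr dS (dE j) (mat_adjoint (Uf j)) (fst (QTf j)) (snd (QTf j))"], insert QTf, auto)
qed

end



context setting begin

lemma cy_case: assumes ER: "primitive_cp dS (Lsh Cy M dS dE HS HE V \<tau> \<beta> \<zeta>0)"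
  shows "primitive_cp dS (Lshd Cy M dS dE HS HE V \<tau> \<beta> \<zeta> \<alpha>) \<and> map_spectral_radius dS (Lshd Cy M dS dE HS HE V \<tau> \<beta> \<zeta> \<alpha>) > 0"
proof -
  from KS_exists[of \<zeta>0] obtain KS where KS: "\<And>j. j < M \<Longrightarrow> kraus dS (Lj dS dE HS HE V \<tau> \<beta> \<zeta>0 j) (KS j) (Dj j)"
    and KSs: "\<And>j p. j < M \<Longrightarrow> KS j p \<in> lspan dS (Bf j) (Dj j)" by blast
  from KD_exists[of \<zeta> \<alpha>] obtain KD where KD: "\<And>j. j < M \<Longrightarrow> kraus dS (Ljd dS dE HS HE V \<tau> \<beta> \<zeta> \<alpha> j) (KD j) (Dj j)"
    and adjB: "\<And>j q. j < M \<Longrightarrow> q \<in> Dj j \<Longrightarrow> mat_adjoint (Bf j q) \<in> lspan dS (KD j) (Dj j)"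
    and cKD: "\<And>j p. j < M \<Longrightarrow> KD j p \<in> carrier_mat dS dS" by blast
  let ?IS = "\<lambda>j. Dj (M - 1 - j)"
  let ?FS = "\<lambda>j. KS (M - 1 - j)"
  let ?FB = "\<lambda>j. Bf (M - 1 - j)"
  have finIS: "\<And>j. finite (?IS j)" by (simp add: finD)
  have finWS: "finite (wsetF ?IS M)" by (rule finite_wsetF, simp add: finD)
  have finWD: "finite (wsetF Dj M)" by (rule finite_wsetF, simp add: finD)
  have "Lsh Cy M dS dE HS HE V \<tau> \<beta> \<zeta>0 = comp_down (\<lambda>j. Lj dS dE HS HE V \<tau> \<beta> \<zeta>0 (M - 1 - j)) M"
    by (simp add: Lsh_def comp_up_down)
  moreover have "kraus dS (comp_down (\<lambda>j. Lj dS dE HS HE V \<tau> \<beta> \<zeta>0 (M - 1 - j)) M) (gprod dS ?FS) (wsetF ?IS M)"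
    by (rule kraus_comp_down, rule KS, simp)
  ultimately have kL: "kraus dS (Lsh Cy M dS dE HS HE V \<tau> \<beta> \<zeta>0) (gprod dS ?FS) (wsetF ?IS M)" by simp
  from prim_to_kraus[OF ER] obtain Ks m where kKs: "kraus dS (Lsh Cy M dS dE HS HE V \<tau> \<beta> \<zeta>0) (\<lambda>i. Ks ! i) {..<length Ks}"
    and spKs: "spanning dS (\<lambda>i. Ks ! i) {..<length Ks} m" by blast
  have sp1: "spanning dS (gprod dS ?FB) (wsetF ?IS M) m"
  proof (rule spanning_mono[OF _ finWS _ _ spKs])
    show "finite {..<length Ks}" by simp
    fix i assume i: "i \<in> {..<length Ks}"
    have "Ks ! i \<in> lspan dS (gprod dS ?FS) (wsetF ?IS M)" by (rule kraus_unique[OF kKs kL i])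
    thus "Ks ! i \<in> lspan dS (gprod dS ?FB) (wsetF ?IS M)"
    proof (rule lspan_trans[OF finWS finWS, rotated])
      fix w assume "w \<in> wsetF ?IS M"
      thus "gprod dS ?FS w \<in> lspan dS (gprod dS ?FB) (wsetF ?IS M)"
        by (intro gprod_span, auto simp: KSs finD cB)
    qed
  next
    fix w assume "w \<in> wsetF ?IS M"
    thus "gprod dS ?FB w \<in> carrier_mat dS dS" by (intro gprod_carrier, auto simp: cB)
  qed
  have cW: "\<And>w. w \<in> wsetF ?IS M \<Longrightarrow> gprod dS ?FB w \<in> carrier_mat dS dS"
    by (intro gprod_carrier, auto simp: cB)
  have sp2: "spanning dS (\<lambda>w. mat_adjoint (gprod dS ?FB w)) (wsetF ?IS M) m"
    by (rule spanning_adj[OF finWS cW sp1])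
  have adjw: "\<And>w. w \<in> wsetF ?IS M \<Longrightarrow> mat_adjoint (gprod dS ?FB w) = gprod dS (\<lambda>j x. mat_adjoint (Bf j x)) (rev w)"
  proof -
    fix w assume w: "w \<in> wsetF ?IS M"
    hence len: "length w = M" by (simp add: wsetF_def)
    have "mat_adjoint (gprod dS ?FB w) = gprod dS (\<lambda>j x. mat_adjoint (?FB (length w - 1 - j) x)) (rev w)"
      by (rule gprod_adj, simp add: cB)
    also have "\<dots> = gprod dS (\<lambda>j x. mat_adjoint (Bf j x)) (rev w)"
      by (rule gprod_cong, simp add: len)
    finally show "mat_adjoint (gprod dS ?FB w) = gprod dS (\<lambda>j x. mat_adjoint (Bf j x)) (rev w)" .
  qed
  have revw: "\<And>w. w \<in> wsetF ?IS M \<Longrightarrow> rev w \<in> wsetF Dj M"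
  proof -
    fix w assume w: "w \<in> wsetF ?IS M"
    hence len: "length w = M" and mem: "\<And>k. k < M \<Longrightarrow> w ! k \<in> Dj (M - 1 - k)" by (auto simp: wsetF_def)
    show "rev w \<in> wsetF Dj M" unfolding wsetF_def
    proof (intro CollectI conjI allI impI)
      show "length (rev w) = M" using len by simp
      fix k assume k: "k < M"
      have "rev w ! k = w ! (M - Suc k)" using k len by (simp add: rev_nth)
      moreover have "w ! (M - Suc k) \<in> Dj (M - 1 - (M - Suc k))" using mem[of "M - Suc k"] k by simp
      moreover have "M - 1 - (M - Suc k) = k" using k by simp
      ultimately show "rev w ! k \<in> Dj k" by simp
    qed
  qed
  have adj_in: "\<And>v. v \<in> wsetF Dj M \<Longrightarrow> gprod dS (\<lambda>j x. mat_adjoint (Bf j x)) v \<in> lspan dS (gprod dS KD) (wsetF Dj M)"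
    by (intro gprod_span, auto simp: adjB finD cKD)
  have sp3: "spanning dS (gprod dS KD) (wsetF Dj M) m"
  proof (rule spanning_mono[OF finWS finWD _ _ sp2])
    fix w assume w: "w \<in> wsetF ?IS M"
    show "mat_adjoint (gprod dS ?FB w) \<in> lspan dS (gprod dS KD) (wsetF Dj M)"
      unfolding adjw[OF w] by (rule adj_in[OF revw[OF w]])
  next
    fix w assume "w \<in> wsetF Dj M"
    thus "gprod dS KD w \<in> carrier_mat dS dS" by (intro gprod_carrier, auto simp: cKD)
  qed
  have kD: "kraus dS (Lshd Cy M dS dE HS HE V \<tau> \<beta> \<zeta> \<alpha>) (gprod dS KD) (wsetF Dj M)"
    unfolding Lshd_def by (simp, rule kraus_comp_down, rule KD)
  have prim: "primitive_cp dS (Lshd Cy M dS dE HS HE V \<tau> \<beta> \<zeta> \<alpha>)" by (rule prim_of_kraus[OF kD sp3])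
  have nz: "dS = 1 \<Longrightarrow> \<exists>w\<in>wsetF Dj M. gprod dS KD w \<noteq> 0\<^sub>m 1 1"
  proof -
    assume d1: "dS = 1"
    have "\<forall>j. \<exists>q. j < M \<longrightarrow> q \<in> Dj j \<and> Bf j q \<noteq> 0\<^sub>m dS dS" using Bf_nonzero by blast
    from choice[OF this] obtain qf where qf: "\<And>j. j < M \<Longrightarrow> qf j \<in> Dj j \<and> Bf j (qf j) \<noteq> 0\<^sub>m dS dS" by blast
    let ?w0 = "map qf [0..<M]"
    have w0: "?w0 \<in> wsetF Dj M" using qf by (simp add: wsetF_def)
    have "gprod 1 (\<lambda>j x. mat_adjoint (Bf j x)) ?w0 \<noteq> 0\<^sub>m 1 1"
    proof (rule gprod_one_nonzero)
      fix j assume "j < length ?w0"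
      hence j: "j < M" by simp
      have "mat_adjoint (Bf j (qf j)) \<in> carrier_mat 1 1" using cB d1 by simp
      moreover have "mat_adjoint (Bf j (qf j)) \<noteq> 0\<^sub>m 1 1" using adj_nonzero qf[OF j] d1 by simp
      ultimately show "mat_adjoint (Bf j (?w0 ! j)) \<in> carrier_mat 1 1 \<and> mat_adjoint (Bf j (?w0 ! j)) \<noteq> 0\<^sub>m 1 1"
        using j by simp
    qed
    moreover have "gprod 1 (\<lambda>j x. mat_adjoint (Bf j x)) ?w0 \<in> lspan 1 (gprod 1 KD) (wsetF Dj M)"
      using adj_in[OF w0] d1 by simp
    ultimately show "\<exists>w\<in>wsetF Dj M. gprod dS KD w \<noteq> 0\<^sub>m 1 1" using lspan_nonzero d1 by blast
  qed
  have "map_spectral_radius dS (Lshd Cy M dS dE HS HE V \<tau> \<beta> \<zeta> \<alpha>) > 0"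
    by (rule spec_pos[OF kD sp3 dS nz])
  with prim show ?thesis by simp
qed

lemma ra_case: assumes ER: "primitive_cp dS (Lsh Ra M dS dE HS HE V \<tau> \<beta> \<zeta>0)"
  shows "primitive_cp dS (Lshd Ra M dS dE HS HE V \<tau> \<beta> \<zeta> \<alpha>) \<and> map_spectral_radius dS (Lshd Ra M dS dE HS HE V \<tau> \<beta> \<zeta> \<alpha>) > 0"
proof -
  from KS_exists[of \<zeta>0] obtain KS where KS: "\<And>j. j < M \<Longrightarrow> kraus dS (Lj dS dE HS HE V \<tau> \<beta> \<zeta>0 j) (KS j) (Dj j)"
    and KSs: "\<And>j p. j < M \<Longrightarrow> KS j p \<in> lspan dS (Bf j) (Dj j)" by blast
  from KD_exists[of \<zeta> \<alpha>] obtain KD where KD: "\<And>j. j < M \<Longrightarrow> kraus dS (Ljd dS dE HS HE V \<tau> \<beta> \<zeta> \<alpha> j) (KD j) (Dj j)"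
    and adjB: "\<And>j q. j < M \<Longrightarrow> q \<in> Dj j \<Longrightarrow> mat_adjoint (Bf j q) \<in> lspan dS (KD j) (Dj j)"
    and cKD: "\<And>j p. j < M \<Longrightarrow> KD j p \<in> carrier_mat dS dS" by blast
  let ?c = "complex_of_real (1 / sqrt (real M))"
  let ?Sig = "Sigma {..<M} Dj"
  let ?fS = "\<lambda>p. ?c \<cdot>\<^sub>m KS (fst p) (snd p)"
  let ?fD = "\<lambda>p. ?c \<cdot>\<^sub>m KD (fst p) (snd p)"
  let ?BB = "\<lambda>p. Bf (fst p) (snd p)"
  have c0: "?c \<noteq> 0" using M by simp
  have finSig: "finite ?Sig" by (simp add: finD)
  have kL: "kraus dS (Lsh Ra M dS dE HS HE V \<tau> \<beta> \<zeta>0) ?fS ?Sig"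
    unfolding Lsh_def scheme.case by (rule kraus_avg[OF M KS])
  have kD: "kraus dS (Lshd Ra M dS dE HS HE V \<tau> \<beta> \<zeta> \<alpha>) ?fD ?Sig"
    unfolding Lshd_def scheme.case by (rule kraus_avg[OF M KD])
  from prim_to_kraus[OF ER] obtain Ks m where kKs: "kraus dS (Lsh Ra M dS dE HS HE V \<tau> \<beta> \<zeta>0) (\<lambda>i. Ks ! i) {..<length Ks}"
    and spKs: "spanning dS (\<lambda>i. Ks ! i) {..<length Ks} m" by blast
  have BBin: "\<And>j q. j < M \<Longrightarrow> q \<in> Dj j \<Longrightarrow> Bf j q \<in> lspan dS ?BB ?Sig"
  proof -
    fix j q assume j: "j < M" and q: "q \<in> Dj j"
    have "?BB (j,q) \<in> lspan dS ?BB ?Sig" by (rule lspan_base[OF finSig], insert j q cB, auto)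
    thus "Bf j q \<in> lspan dS ?BB ?Sig" by simp
  qed
  have sp1: "spanning dS ?BB ?Sig m"
  proof (rule spanning_mono[OF _ finSig _ _ spKs])
    show "finite {..<length Ks}" by simp
    fix i assume i: "i \<in> {..<length Ks}"
    have "Ks ! i \<in> lspan dS ?fS ?Sig" by (rule kraus_unique[OF kKs kL i])
    thus "Ks ! i \<in> lspan dS ?BB ?Sig"
    proof (rule lspan_trans[OF finSig finSig, rotated])
      fix p assume p: "p \<in> ?Sig"
      have "KS (fst p) (snd p) \<in> lspan dS ?BB ?Sig"
        by (rule lspan_trans[OF finD finSig _ KSs], insert p BBin, auto)
      thus "?fS p \<in> lspan dS ?BB ?Sig" by (rule lspan_smult)
    qed
  qed (simp add: cB)
  have sp2: "spanning dS (\<lambda>p. mat_adjoint (?BB p)) ?Sig m"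
    by (rule spanning_adj[OF finSig _ sp1], simp add: cB)
  have KDin: "\<And>j q. j < M \<Longrightarrow> q \<in> Dj j \<Longrightarrow> KD j q \<in> lspan dS ?fD ?Sig"
  proof -
    fix j q assume j: "j < M" and q: "q \<in> Dj j"
    have "?fD (j,q) \<in> lspan dS ?fD ?Sig" by (rule lspan_base[OF finSig], insert j q cKD, auto)
    hence "(1 / ?c) \<cdot>\<^sub>m ?fD (j,q) \<in> lspan dS ?fD ?Sig" by (rule lspan_smult)
    moreover have "(1 / ?c) \<cdot>\<^sub>m ?fD (j,q) = KD j q" using c0 cKD[OF j, of q] by (simp add: smult_smult_m, intro eq_matI, auto)
    ultimately show "KD j q \<in> lspan dS ?fD ?Sig" by simp
  qed
  have sp3: "spanning dS ?fD ?Sig m"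
  proof (rule spanning_mono[OF finSig finSig _ _ sp2])
    fix p assume p: "p \<in> ?Sig"
    show "mat_adjoint (?BB p) \<in> lspan dS ?fD ?Sig"
      by (rule lspan_trans[OF finD finSig _ adjB], insert p KDin, auto)
  next
    fix p assume p: "p \<in> ?Sig"
    thus "?fD p \<in> carrier_mat dS dS" using cKD by auto
  qed
  have prim: "primitive_cp dS (Lshd Ra M dS dE HS HE V \<tau> \<beta> \<zeta> \<alpha>)" by (rule prim_of_kraus[OF kD sp3])
  have nz: "dS = 1 \<Longrightarrow> \<exists>p\<in>?Sig. ?fD p \<noteq> 0\<^sub>m 1 1"
  proof -
    assume d1: "dS = 1"
    have M0: "0 < M" using M by simp
    from Bf_nonzero[OF M0] obtain q where q: "q \<in> Dj 0" "Bf 0 q \<noteq> 0\<^sub>m dS dS" by blast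
    have "mat_adjoint (Bf 0 q) \<in> lspan dS ?fD ?Sig"
      by (rule lspan_trans[OF finD finSig _ adjB[OF M0 q(1)]], insert KDin M0, auto)
    hence "mat_adjoint (?BB (0,q)) \<in> lspan dS ?fD ?Sig" by simp
    moreover have "mat_adjoint (?BB (0,q)) \<noteq> 0\<^sub>m dS dS" using adj_nonzero q by simp
    ultimately show "\<exists>p\<in>?Sig. ?fD p \<noteq> 0\<^sub>m 1 1" using lspan_nonzero d1 by blast
  qed
  have "map_spectral_radius dS (Lshd Ra M dS dE HS HE V \<tau> \<beta> \<zeta> \<alpha>) > 0"
    by (rule spec_pos[OF kD sp3 dS nz])
  with prim show ?thesis by simp
qed

end

theorem mainTheorem17:
  fixes M dS :: nat and dE :: "nat \<Rightarrow> nat"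
    and HS :: "complex mat" and HE V :: "nat \<Rightarrow> complex mat"
    and \<tau> :: "nat \<Rightarrow> real" and \<beta>ref :: real and sh :: scheme
  assumes "M \<ge> 1" and "dS > 0" and "\<forall>j<M. dE j > 0"
    and "self_adjoint dS HS"
    and "\<forall>j<M. self_adjoint (dE j) (HE j)"
    and "\<forall>j<M. self_adjoint (dS * dE j) (V j)"
    and "\<forall>j<M. \<tau> j > 0"
    and "\<beta>ref > 0"
    and ER: "\<exists>\<zeta>. primitive_cp dS (Lsh sh M dS dE HS HE V \<tau> \<beta>ref \<zeta>)"
  shows "\<forall>\<zeta> \<alpha>. primitive_cp dS (Lshd sh M dS dE HS HE V \<tau> \<beta>ref \<zeta> \<alpha>)
            \<and> map_spectral_radius dS (Lshd sh M dS dE HS HE V \<tau> \<beta>ref \<zeta> \<alpha>) > 0"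
proof (intro allI)
  fix \<zeta> \<alpha> :: "nat \<Rightarrow> real"
  interpret setting M dS dE HS HE V \<tau> \<beta>ref
    by (unfold_locales, insert assms(1-6), auto)
  from ER obtain \<zeta>0 where ER0: "primitive_cp dS (Lsh sh M dS dE HS HE V \<tau> \<beta>ref \<zeta>0)" by blast
  show "primitive_cp dS (Lshd sh M dS dE HS HE V \<tau> \<beta>ref \<zeta> \<alpha>)
            \<and> map_spectral_radius dS (Lshd sh M dS dE HS HE V \<tau> \<beta>ref \<zeta> \<alpha>) > 0"
  proof (cases sh)
    case Cy thus ?thesis using cy_case ER0 by simp
  next
    case Ra thus ?thesis using ra_case ER0 by simp
  qed
qed

end
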